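(* Assume the Setting and Constants below and that $(L_g,L_c)$ satisfies $(S_n)$. There exists $\varepsilon_0>0$ such that if $0<\varepsilon<\varepsilon_0$, $\|D^2g\|_0\le\varepsilon$ and $\|D^2k_c\|_0\le\varepsilon$, then there exist $r\in C^1_b(X_c,X_c)$, $k_u\in C^1_b(X_c,X_u)$, $k_s\in C^1_b(X_c,X_s)$ such that, with $K(x):=(x+k_c(x))+k_u(x)+k_s(x)$: $F\circ K=K\circ(A_c+r)$; $A_c+r$ is globally invertible with inverse $A_c^{-1}+t$ for some $t\in C^1_b(X_c,X_c)$; $r,t,k_u,k_s$ all vanish at $0$ together with their derivatives at $0$; and $\|Dr\|_0\le L_r$, $\|Dt\|_0\le L_t$, $\|Dk_u\|_0\le L_u$, $\|Dk_s\|_0\le L_s$. In particular the image $K(X_c)$ is a $C^1$ center manifold for $F$ (it is invariant under $F$ and tangent to $X_c$ at $0$).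
   Context: Notation. $C^k_b(Y,Z)$ is the Banach space of $C^k$ maps $f:Y\to Z$ between Banach spaces with $\|f\|_k:=\max_{0\le j\le k}\sup_y\|D^jf(y)\|<\infty$. Setting. Let $n\ge2$ be an integer and $X$ a Banach space with $X=X_c\oplus X_u\oplus X_s$ for closed subspaces, whose norm satisfies $\|x\|=\max\{\|x_c\|,\|x_u\|,\|x_s\|\}$. Let $A$ be a bounded linear operator on $X$ leaving $X_c,X_u,X_s$ invariant, with restrictions $A_c,A_u,A_s$; $A_c,A_u$ invertible, $\|A_c^{-1}\|^{\tilde n}\|A_s\|<1$, $\|A_u^{-1}\|\|A_c\|^{\tilde n}<1$ for $1\le\tilde n\le n$. Let $L_g,L_c\ge0$, $F=A+g$ with $g\in C^n_b(X,X)$, $g(0)=0$, $Dg(0)=0$, $\|Dg\|_0\le L_g$; $k_c\in C^n_b(X_c,X_c)$ with $k_c(0)=0$, $Dk_c(0)=0$, $\|Dk_c\|_0\le L_c$. Constants. $L_r:=\frac{L_g+L_c(2\|A_c\|+L_g)}{1-L_c}$, $L_t:=\frac{\|A_c^{-1}\|^2L_r}{1-\|A_c^{-1}\|L_r}$, $L_u:=\frac{\|A_u^{-1}\|(1+L_c)L_g}{1-L_r\|A_u^{-1}\|-\|A_c\|\|A_u^{-1}\|}$, $L_s:=\frac{\|A_c^{-1}\|(1+L_c)L_g}{1-L_r\|A_c^{-1}\|-\|A_s\|\|A_c^{-1}\|}$, $L_{-1}:=\|A_c^{-1}\|+L_t$; $\theta_{\tilde n,1}:=L_g+L_c$, $\theta_{\tilde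 n,2}:=\|A_u^{-1}\|((\|A_c\|+L_r)^{\tilde n}+L_g+L_u)$, $\theta_{\tilde n,3}:=L_{-1}^{\tilde n}(\|A_s\|(1+L_{-1}L_s)+L_g(1+L_{-1}(1+L_c)))$. $(S_N)$ means: $L_c<1$, $L_r\|A_c^{-1}\|<1$, $L_r\|A_u^{-1}\|+\|A_c\|\|A_u^{-1}\|<1$, $L_r\|A_c^{-1}\|+\|A_s\|\|A_c^{-1}\|<1$, and $\theta_{\tilde n,i}<1$ for $i=1,2,3$, $0\le\tilde n\le N$. *)

theory Defs
  imports "HOL-Analysis.Analysis"
begin

definition ml_bound :: "'a::real_normed_vector set \<Rightarrow> nat \<Rightarrow> ('a list \<Rightarrow> 'b::real_normed_vector) \<Rightarrow> real \<Rightarrow> bool" where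
  "ml_bound S j phi L \<longleftrightarrow>
     (\<forall>vs. length vs = j \<and> set vs \<subseteq> S \<longrightarrow> norm (phi vs) \<le> L * prod_list (map norm vs))"

definition mlinear_on :: "'a::real_normed_vector set \<Rightarrow> nat \<Rightarrow> ('a list \<Rightarrow> 'b::real_normed_vector) \<Rightarrow> bool" where
  "mlinear_on S j phi \<longleftrightarrow>
     (\<forall>i<j. \<forall>vs. length vs = j \<and> set vs \<subseteq> S \<longrightarrow>
        (\<forall>a\<in>S. \<forall>b\<in>S. phi (vs[i := a + b]) = phi (vs[i := a]) + phi (vs[i := b])) \<and>
        (\<forall>c. \<forall>a\<in>S. phi (vs[i := c *\<^sub>R a]) = c *\<^sub>R phi (vs[i := a])))"

text \<open>Ckb k S T f D: f is a C^k map from the subspace S into T with all derivatives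
  D^0 f = f, D^1 f, ..., D^k f bounded (i.e. f belongs to C^k_b(S,T)),
  and D j y is the j-th Frechet derivative of f at y, as a j-linear map;
  convention: D (j+1) y (h # vs) = (D (D^j f)(y) h) vs.\<close>
definition Ckb :: "nat \<Rightarrow> 'a::real_normed_vector set \<Rightarrow> 'b::real_normed_vector set \<Rightarrow> ('a \<Rightarrow> 'b)
                   \<Rightarrow> (nat \<Rightarrow> 'a \<Rightarrow> 'a list \<Rightarrow> 'b) \<Rightarrow> bool" where
  "Ckb k S T f D \<longleftrightarrow>
     (\<forall>y\<in>S. f y \<in> T \<and> D 0 y [] = f y) \<and>
     (\<forall>j\<le>k. \<forall>y\<in>S. mlinear_on S j (D j y) \<and>
                      (\<forall>vs. length vs = j \<and> set vs \<subseteq> S \<longrightarrow> D j y vs \<in> T)) \<and>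
     (\<forall>j\<le>k. \<exists>B. \<forall>y\<in>S. ml_bound S j (D j y) B) \<and>
     (\<forall>j<k. \<forall>y\<in>S. \<forall>e>0. \<exists>d>0. \<forall>h\<in>S. norm h < d \<longrightarrow>
          ml_bound S j (\<lambda>vs. D j (y + h) vs - D j y vs - D (Suc j) y (h # vs)) (e * norm h)) \<and>
     (\<forall>y\<in>S. \<forall>e>0. \<exists>d>0. \<forall>z\<in>S. norm (z - y) < d \<longrightarrow>
          ml_bound S k (\<lambda>vs. D k z vs - D k y vs) e)"

definition onorm_on :: "'a::real_normed_vector set \<Rightarrow> ('a \<Rightarrow> 'b::real_normed_vector) \<Rightarrow> real" where
  "onorm_on S f = Inf {L. 0 \<le> L \<and> (\<forall>x\<in>S. norm (f x) \<le> L * norm x)}"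

text \<open>The constants; ac = |A_c|, aci = |A_c^-1|, aui = |A_u^-1|, as = |A_s|.\<close>
definition cLr :: "real \<Rightarrow> real \<Rightarrow> real \<Rightarrow> real" where
  "cLr ac Lg Lc = (Lg + Lc * (2 * ac + Lg)) / (1 - Lc)"
definition cLt :: "real \<Rightarrow> real \<Rightarrow> real" where
  "cLt aci Lr = aci^2 * Lr / (1 - aci * Lr)"
definition cLu :: "real \<Rightarrow> real \<Rightarrow> real \<Rightarrow> real \<Rightarrow> real \<Rightarrow> real" where
  "cLu ac aui Lr Lg Lc = aui * (1 + Lc) * Lg / (1 - Lr * aui - ac * aui)"
definition cLs :: "real \<Rightarrow> real \<Rightarrow> real \<Rightarrow> real \<Rightarrow> real \<Rightarrow> real" where
  "cLs aci as Lr Lg Lc = aci * (1 + Lc) * Lg / (1 - Lr * aci - as * aci)"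

definition SN_cond :: "nat \<Rightarrow> real \<Rightarrow> real \<Rightarrow> real \<Rightarrow> real \<Rightarrow> real \<Rightarrow> real \<Rightarrow> bool" where
  "SN_cond N ac aci aui as Lg Lc \<longleftrightarrow>
     (let Lr = cLr ac Lg Lc; Lt = cLt aci Lr; Lu = cLu ac aui Lr Lg Lc;
          Ls = cLs aci as Lr Lg Lc; Lm1 = aci + Lt in
      Lc < 1 \<and> Lr * aci < 1 \<and> Lr * aui + ac * aui < 1 \<and> Lr * aci + as * aci < 1 \<and>
      (\<forall>m\<le>N. Lg + Lc < 1 \<and>
               aui * ((ac + Lr)^m + Lg + Lu) < 1 \<and>
               Lm1^m * (as * (1 + Lm1 * Ls) + Lg * (1 + Lm1 * (1 + Lc))) < 1))"

end

theory Submission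
  imports Defs "HOL-Analysis.Analysis"
begin

lemma bounded_inverse_aux:
  fixes T :: "'a::banach \<Rightarrow> 'a" and S :: "'a set"
  assumes sub: "subspace S" and cl: "closed S" and bl: "bounded_linear T" and bij: "bij_betw T S S"
  shows "\<exists>c>0. \<forall>z\<in>S. \<forall>\<eta>>0. \<exists>x\<in>S. norm x \<le> c * norm z \<and> norm (T x - z) < \<eta>"
proof -
  interpret T: bounded_linear T by fact
  define E where "E n = closure (T ` (S \<inter> cball 0 (real n)))" for n :: nat
  have TS: "T ` S \<subseteq> S" using bij bij_betw_imp_surj_on by blast
  have ES: "E n \<subseteq> S" for n
    unfolding E_def using TS cl by (meson closure_minimal image_mono inf_le1 order_trans)
  have Ecl: "closedin (top_of_set S) (E n)" for n
    using ES by (simp add: E_def closed_subset)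
  have UE: "\<Union> (range E) = S"
  proof
    show "\<Union> (range E) \<subseteq> S" using ES by auto
    show "S \<subseteq> \<Union> (range E)"
    proof
      fix y assume "y \<in> S"
      then obtain x where x: "x \<in> S" "y = T x" using bij unfolding bij_betw_def by auto
      obtain n :: nat where "norm x \<le> real n" using real_arch_simple by blast
      then have "y \<in> E n" unfolding E_def using x closure_subset by fastforce
      then show "y \<in> \<Union> (range E)" by auto
    qed
  qed
  have cms: "completely_metrizable_space (top_of_set S)"
    by (rule completely_metrizable_space_closedin[OF completely_metrizable_space_euclidean])
       (use cl closed_closedin in auto)
  have "\<exists>n. top_of_set S interior_of E n \<noteq> {}"
  proof (rule ccontr)
    assume "\<not> ?thesis"
    then have "top_of_set S interior_of \<Union> (range E) = {}"
      by (intro Baire_category_alt) (use cms Ecl in auto)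
    moreover have "top_of_set S interior_of S = S"
      by (simp add: interior_of_openin)
    moreover have "0 \<in> S" using sub subspace_0 by blast
    ultimately show False using UE by auto
  qed
  then obtain n y0 where "y0 \<in> top_of_set S interior_of E n" by blast
  then obtain U where U: "openin (top_of_set S) U" "y0 \<in> U" "U \<subseteq> E n"
    unfolding interior_of_def by blast
  then obtain V where V: "open V" "U = S \<inter> V" by (auto simp: openin_open)
  then obtain \<rho> where \<rho>: "\<rho> > 0" "ball y0 \<rho> \<subseteq> V" using U open_contains_ball by blast
  have y0S: "y0 \<in> S" using U V by auto
  have inE: "z \<in> E n" if "z \<in> S" "norm (z - y0) < \<rho>" for z
    using that \<rho> U V by (auto simp: dist_norm norm_minus_commute)
  have approx: "\<exists>x\<in>S. norm x \<le> 2 * real n \<and> norm (T x - z) < \<eta>"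
    if z: "z \<in> S" "norm z < \<rho>" and eta: "\<eta> > 0" for z \<eta>
  proof -
    have "y0 + z \<in> E n" using inE[of "y0 + z"] z y0S sub by (simp add: subspace_add)
    then obtain w1 where w1: "w1 \<in> T ` (S \<inter> cball 0 (real n))" "dist w1 (y0 + z) < \<eta>/2"
      unfolding E_def closure_approachable using eta by (meson half_gt_zero)
    have "y0 \<in> E n" using inE[of y0] y0S \<rho> by simp
    then obtain w2 where w2: "w2 \<in> T ` (S \<inter> cball 0 (real n))" "dist w2 y0 < \<eta>/2"
      unfolding E_def closure_approachable using eta by (meson half_gt_zero)
    obtain x1 where x1: "x1 \<in> S" "norm x1 \<le> n" "w1 = T x1" using w1 by auto
    obtain x2 where x2: "x2 \<in> S" "norm x2 \<le> n" "w2 = T x2" using w2 by auto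
    have "x1 - x2 \<in> S" using x1 x2 sub by (simp add: subspace_diff)
    moreover have "norm (x1 - x2) \<le> 2 * real n"
      using norm_triangle_ineq4[of x1 x2] x1 x2 by linarith
    moreover have "norm (T (x1 - x2) - z) < \<eta>"
    proof -
      have "T (x1 - x2) - z = (w1 - (y0 + z)) - (w2 - y0)" using x1 x2 T.diff by (simp add: algebra_simps)
      then have "norm (T (x1 - x2) - z) \<le> norm (w1 - (y0 + z)) + norm (w2 - y0)"
        by (metis norm_triangle_ineq4)
      then show ?thesis using w1 w2 by (simp add: dist_norm)
    qed
    ultimately show ?thesis by blast
  qed
  define c where "c = 4 * real n / \<rho> + 1"
  have c0: "c > 0" unfolding c_def using \<rho> by (simp add: add_nonneg_pos)
  show ?thesis
  proof (intro exI[of _ c] conjI c0 ballI allI impI)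
    fix z \<eta> assume z: "z \<in> S" and eta: "(\<eta>::real) > 0"
    show "\<exists>x\<in>S. norm x \<le> c * norm z \<and> norm (T x - z) < \<eta>"
    proof (cases "z = 0")
      case True then show ?thesis using eta sub subspace_0 by fastforce
    next
      case False
      define a where "a = \<rho> / (2 * norm z)"
      have a0: "a > 0" unfolding a_def using False \<rho> by simp
      have "a *\<^sub>R z \<in> S" using z sub by (simp add: subspace_scale)
      moreover have "norm (a *\<^sub>R z) < \<rho>" using a0 False \<rho> by (simp add: a_def)
      ultimately obtain x where x: "x \<in> S" "norm x \<le> 2 * real n" "norm (T x - a *\<^sub>R z) < \<eta> * a"
        using approx[of "a *\<^sub>R z" "\<eta> * a"] eta a0 by auto
      have "(1/a) *\<^sub>R x \<in> S" using x sub by (simp add: subspace_scale)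
      moreover have "norm ((1/a) *\<^sub>R x) \<le> c * norm z"
      proof -
        have "norm ((1/a) *\<^sub>R x) = norm x / a" using a0 by simp
        also have "\<dots> \<le> 2 * real n / a" using x a0 by (simp add: divide_right_mono)
        also have "\<dots> = 4 * real n / \<rho> * norm z" unfolding a_def using False \<rho> by (simp add: field_simps)
        also have "\<dots> \<le> c * norm z" unfolding c_def by (simp add: distrib_right)
        finally show ?thesis .
      qed
      moreover have "norm (T ((1/a) *\<^sub>R x) - z) < \<eta>"
      proof -
        have "T ((1/a) *\<^sub>R x) - z = (1/a) *\<^sub>R (T x - a *\<^sub>R z)" using a0 T.scale by (simp add: algebra_simps)
        then have "norm (T ((1/a) *\<^sub>R x) - z) = norm (T x - a *\<^sub>R z) / a" using a0 by simp
        also have "\<dots> < \<eta>" using x a0 by (simp add: divide_less_eq)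
        finally show ?thesis .
      qed
      ultimately show ?thesis by blast
    qed
  qed
qed

lemma bounded_inverse:
  fixes T :: "'a::banach \<Rightarrow> 'a" and S :: "'a set"
  assumes sub: "subspace S" and cl: "closed S" and bl: "bounded_linear T" and bij: "bij_betw T S S"
  shows "\<exists>C>0. \<forall>y\<in>S. norm (inv_into S T y) \<le> C * norm y"
proof -
  interpret T: bounded_linear T by fact
  obtain c where c: "c > 0" "\<And>z \<eta>. z \<in> S \<Longrightarrow> \<eta> > 0 \<Longrightarrow> \<exists>x\<in>S. norm x \<le> c * norm z \<and> norm (T x - z) < \<eta>"
    using bounded_inverse_aux[OF assms] by blast
  have TS: "T ` S \<subseteq> S" using bij bij_betw_imp_surj_on by blast
  have main: "\<exists>x\<in>S. T x = y \<and> norm x \<le> 2 * c * norm y" if y: "y \<in> S" for y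
  proof (cases "y = 0")
    case True then show ?thesis using sub subspace_0 by fastforce
  next
    case False
    define pick where "pick k w = (SOME x. x \<in> S \<and> norm x \<le> c * norm w \<and> norm (T x - w) < norm y / 2 ^ Suc k)" for k w
    have pick: "pick k w \<in> S \<and> norm (pick k w) \<le> c * norm w \<and> norm (T (pick k w) - w) < norm y / 2 ^ Suc k"
      if "w \<in> S" for k w
      unfolding pick_def by (rule someI_ex) (use c(2)[OF that, of "norm y / 2 ^ Suc k"] False in auto)
    define z where "z = rec_nat y (\<lambda>k w. w - T (pick k w))"
    have z0: "z 0 = y" and zS: "z (Suc k) = z k - T (pick k (z k))" for k by (simp_all add: z_def)
    have zb: "z k \<in> S \<and> norm (z k) \<le> norm y / 2 ^ k" for k
    proof (induction k)
      case 0 then show ?case using y z0 by simp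
    next
      case (Suc k)
      have p: "pick k (z k) \<in> S" "norm (T (pick k (z k)) - z k) < norm y / 2 ^ Suc k"
        using pick[of "z k" k] Suc by auto
      have "T (pick k (z k)) \<in> S" using TS p(1) by blast
      then have "z (Suc k) \<in> S" using Suc sub by (simp add: zS subspace_diff)
      moreover have "norm (z (Suc k)) \<le> norm y / 2 ^ Suc k"
        using p(2) by (simp add: zS norm_minus_commute)
      ultimately show ?case by simp
    qed
    define x where "x k = pick k (z k)" for k
    have xS: "x k \<in> S" for k using pick[of "z k" k] zb[of k] by (simp add: x_def)
    have xb: "norm (x k) \<le> c * norm y * (1/2) ^ k" for k
    proof -
      have "norm (x k) \<le> c * norm (z k)" using pick[of "z k" k] zb[of k] by (simp add: x_def)
      also have "\<dots> \<le> c * (norm y / 2 ^ k)" by (rule mult_left_mono) (use zb[of k] c(1) in auto)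
      also have "\<dots> = c * norm y * (1/2) ^ k" by (simp add: power_one_over)
      finally show ?thesis .
    qed
    have sg: "summable (\<lambda>k. c * norm y * (1/2::real) ^ k)"
      by (intro summable_mult summable_geometric) simp
    have sx: "summable x"
      by (rule summable_norm_cancel, rule summable_comparison_test[OF _ sg]) (use xb in auto)
    have sn: "summable (\<lambda>k. norm (x k))"
      by (rule summable_comparison_test[OF _ sg]) (use xb in auto)
    have sumS: "suminf x \<in> S"
    proof -
      have "(\<lambda>m. \<Sum>k<m. x k) \<longlonglongrightarrow> suminf x" using sx summable_LIMSEQ by blast
      moreover have "\<forall>m. (\<Sum>k<m. x k) \<in> S" using xS sub by (simp add: subspace_sum)
      ultimately show ?thesis using closed_sequentially[OF cl, of "\<lambda>m. \<Sum>k<m. x k"] by blast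
    qed
    have tel: "(\<Sum>k<m. T (x k)) = y - z m" for m
      by (induction m) (auto simp: z0 zS x_def)
    have zlim: "z \<longlonglongrightarrow> 0"
    proof -
      have "(\<lambda>k. norm y / 2 ^ k) \<longlonglongrightarrow> 0"
        by (intro LIMSEQ_divide_realpow_zero) auto
      then show ?thesis
        by (rule Lim_null_comparison[rotated]) (use zb in auto)
    qed
    have "(\<lambda>m. \<Sum>k<m. T (x k)) \<longlonglongrightarrow> y - 0"
      unfolding tel by (intro tendsto_intros zlim)
    then have "(\<lambda>k. T (x k)) sums y" by (simp add: sums_def)
    moreover have "(\<lambda>k. T (x k)) sums T (suminf x)"
      using T.sums sx summable_sums by blast
    ultimately have Tx: "T (suminf x) = y" using sums_unique2 by blast
    have "norm (suminf x) \<le> (\<Sum>k. norm (x k))" using summable_norm sn by blast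
    also have "\<dots> \<le> (\<Sum>k. c * norm y * (1/2) ^ k)"
      by (intro suminf_le sn sg) (use xb in auto)
    also have "\<dots> = c * norm y * 2"
      by (simp add: suminf_mult suminf_geometric)
    finally show ?thesis using sumS Tx by (intro bexI[of _ "suminf x"]) (auto simp: algebra_simps)
  qed
  show ?thesis
  proof (intro exI[of _ "2 * c"] conjI ballI)
    show "2 * c > 0" using c by simp
    fix y assume y: "y \<in> S"
    obtain x where x: "x \<in> S" "T x = y" "norm x \<le> 2 * c * norm y" using main[OF y] by blast
    have "inv_into S T y = x" using x bij by (metis bij_betw_def inv_into_f_f)
    then show "norm (inv_into S T y) \<le> 2 * c * norm y" using x by simp
  qed
qed

definition lin_on :: "'a::real_vector set \<Rightarrow> ('a \<Rightarrow> 'b::real_vector) \<Rightarrow> bool" where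
  "lin_on W l \<longleftrightarrow> (\<forall>a\<in>W. \<forall>b\<in>W. l (a + b) = l a + l b) \<and> (\<forall>c. \<forall>a\<in>W. l (c *\<^sub>R a) = c *\<^sub>R l a)"

lemma lin_onD:
  assumes "lin_on W l"
  shows "a \<in> W \<Longrightarrow> b \<in> W \<Longrightarrow> l (a + b) = l a + l b" "a \<in> W \<Longrightarrow> l (c *\<^sub>R a) = c *\<^sub>R l a"
  using assms unfolding lin_on_def by auto

lemma lin_on_diff:
  assumes "lin_on W l" "subspace W" "a \<in> W" "b \<in> W"
  shows "l (a - b) = l a - l b"
proof -
  have "- b \<in> W" using assms by (simp add: subspace_neg)
  have m: "l (- b) = - l b" using lin_onD(2)[OF assms(1) assms(4), of "-1"] by simp
  have "l (a - b) = l (a + - b)" by simp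
  also have "\<dots> = l a + l (- b)" using lin_onD(1)[OF assms(1) assms(3) \<open>- b \<in> W\<close>] .
  finally show ?thesis using m by simp
qed

lemma lin_on_zero:
  assumes "lin_on W l" "subspace W"
  shows "l 0 = 0"
  using lin_onD(2)[OF assms(1), of 0 0] assms(2) subspace_0 by fastforce

lemma norm_sum_le: "A = B + C \<Longrightarrow> norm B \<le> b \<Longrightarrow> norm C \<le> c \<Longrightarrow> norm A \<le> b + c"
  by (metis add_mono norm_triangle_ineq order_trans)

lemma norm_diff_le: "A = B - C \<Longrightarrow> norm B \<le> b \<Longrightarrow> norm C \<le> c \<Longrightarrow> norm A \<le> b + c"
  by (metis add_mono norm_triangle_ineq4 order_trans)

definition C11 :: "'a::real_normed_vector set \<Rightarrow> 'b::real_normed_vector set \<Rightarrow> ('a \<Rightarrow> 'b)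
    \<Rightarrow> ('a \<Rightarrow> 'a \<Rightarrow> 'b) \<Rightarrow> real \<Rightarrow> real \<Rightarrow> bool" where
  "C11 W V f Df L N \<longleftrightarrow>
     (\<forall>x\<in>W. f x \<in> V) \<and> (\<forall>x\<in>W. \<forall>h\<in>W. Df x h \<in> V) \<and> (\<forall>x\<in>W. lin_on W (Df x)) \<and>
     (\<forall>x\<in>W. \<forall>h\<in>W. norm (Df x h) \<le> L * norm h) \<and>
     (\<forall>x\<in>W. \<forall>z\<in>W. norm (f z - f x) \<le> L * norm (z - x)) \<and>
     (\<forall>x\<in>W. \<forall>h\<in>W. norm (f (x + h) - f x - Df x h) \<le> N * (norm h)\<^sup>2)"

lemma C11I:
  assumes "\<And>x. x \<in> W \<Longrightarrow> f x \<in> V" "\<And>x h. x \<in> W \<Longrightarrow> h \<in> W \<Longrightarrow> Df x h \<in> V"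
    "\<And>x. x \<in> W \<Longrightarrow> lin_on W (Df x)"
    "\<And>x h. x \<in> W \<Longrightarrow> h \<in> W \<Longrightarrow> norm (Df x h) \<le> L * norm h"
    "\<And>x z. x \<in> W \<Longrightarrow> z \<in> W \<Longrightarrow> norm (f z - f x) \<le> L * norm (z - x)"
    "\<And>x h. x \<in> W \<Longrightarrow> h \<in> W \<Longrightarrow> norm (f (x + h) - f x - Df x h) \<le> N * (norm h)\<^sup>2"
  shows "C11 W V f Df L N"
  using assms unfolding C11_def by blast

lemma C11D:
  assumes "C11 W V f Df L N"
  shows "x \<in> W \<Longrightarrow> f x \<in> V" "x \<in> W \<Longrightarrow> h \<in> W \<Longrightarrow> Df x h \<in> V"
    "x \<in> W \<Longrightarrow> lin_on W (Df x)"
    "x \<in> W \<Longrightarrow> h \<in> W \<Longrightarrow> norm (Df x h) \<le> L * norm h"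
    "x \<in> W \<Longrightarrow> z \<in> W \<Longrightarrow> norm (f z - f x) \<le> L * norm (z - x)"
    "x \<in> W \<Longrightarrow> h \<in> W \<Longrightarrow> norm (f (x + h) - f x - Df x h) \<le> N * (norm h)\<^sup>2"
  using assms unfolding C11_def by blast+

lemma C11_mono:
  assumes "C11 W V f Df L N" "L \<le> L'" "N \<le> N'"
  shows "C11 W V f Df L' N'"
proof (rule C11I)
  fix x h assume "x \<in> W" "h \<in> W"
  show "norm (Df x h) \<le> L' * norm h"
    using C11D(4)[OF assms(1) \<open>x \<in> W\<close> \<open>h \<in> W\<close>] assms(2) by (meson mult_right_mono norm_ge_zero order_trans)
  show "norm (f (x + h) - f x - Df x h) \<le> N' * (norm h)\<^sup>2"
    using C11D(6)[OF assms(1) \<open>x \<in> W\<close> \<open>h \<in> W\<close>] assms(3) by (meson mult_right_mono zero_le_power2 order_trans)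
next
  fix x z assume "x \<in> W" "z \<in> W"
  show "norm (f z - f x) \<le> L' * norm (z - x)"
    using C11D(5)[OF assms(1) \<open>x \<in> W\<close> \<open>z \<in> W\<close>] assms(2) by (meson mult_right_mono norm_ge_zero order_trans)
qed (use C11D[OF assms(1)] in auto)

lemma C11_comp:
  assumes W1: "subspace W1" and W2: "subspace W2"
    and f: "C11 W2 V f Df Lf Nf" and p: "C11 W1 W2 p Dp Lp Np"
    and Lf: "0 \<le> Lf" and Lp: "0 \<le> Lp" and Nf: "0 \<le> Nf"
  shows "C11 W1 V (\<lambda>x. f (p x)) (\<lambda>x h. Df (p x) (Dp x h)) (Lf * Lp) (Nf * Lp\<^sup>2 + Lf * Np)"
proof (rule C11I)
  fix x assume x: "x \<in> W1"
  show "f (p x) \<in> V" using x C11D(1)[OF f] C11D(1)[OF p] by blast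
  show "lin_on W1 (\<lambda>h. Df (p x) (Dp x h))"
    unfolding lin_on_def
  proof (intro conjI ballI allI)
    fix a b assume "a \<in> W1" "b \<in> W1"
    then show "Df (p x) (Dp x (a + b)) = Df (p x) (Dp x a) + Df (p x) (Dp x b)"
      using lin_onD(1)[OF C11D(3)[OF p x]] lin_onD(1)[OF C11D(3)[OF f C11D(1)[OF p x]]] C11D(2)[OF p x] by simp
  next
    fix c a assume "a \<in> W1"
    then show "Df (p x) (Dp x (c *\<^sub>R a)) = c *\<^sub>R Df (p x) (Dp x a)"
      using lin_onD(2)[OF C11D(3)[OF p x]] lin_onD(2)[OF C11D(3)[OF f C11D(1)[OF p x]]] C11D(2)[OF p x] by simp
  qed
  fix h assume h: "h \<in> W1"
  have px: "p x \<in> W2" and dp: "Dp x h \<in> W2" using C11D(1,2)[OF p] x h by auto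
  show "Df (p x) (Dp x h) \<in> V" using C11D(2)[OF f px dp] .
  have "norm (Df (p x) (Dp x h)) \<le> Lf * norm (Dp x h)" using C11D(4)[OF f px dp] .
  also have "\<dots> \<le> Lf * (Lp * norm h)" using C11D(4)[OF p x h] Lf by (simp add: mult_left_mono)
  finally show "norm (Df (p x) (Dp x h)) \<le> Lf * Lp * norm h" by (simp add: mult.assoc)
  have xh: "x + h \<in> W1" using W1 x h by (simp add: subspace_add)
  define a where "a = p (x + h) - p x"
  have pxh: "p (x + h) \<in> W2" using C11D(1)[OF p xh] .
  have aW: "a \<in> W2" unfolding a_def using W2 pxh px by (simp add: subspace_diff)
  have na: "norm a \<le> Lp * norm h" unfolding a_def using C11D(5)[OF p x xh] by simp
  have pa: "p (x + h) = p x + a" unfolding a_def by simp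
  have e1: "norm (f (p x + a) - f (p x) - Df (p x) a) \<le> Nf * (norm a)\<^sup>2" using C11D(6)[OF f px aW] .
  have "(norm a)\<^sup>2 \<le> (Lp * norm h)\<^sup>2" using na by (simp add: power_mono)
  then have e1': "norm (f (p x + a) - f (p x) - Df (p x) a) \<le> Nf * Lp\<^sup>2 * (norm h)\<^sup>2"
    using e1 Nf by (metis (no_types, opaque_lifting) mult.assoc mult_left_mono order_trans power_mult_distrib)
  have adW: "a - Dp x h \<in> W2" using aW dp W2 by (simp add: subspace_diff)
  have lin: "Df (p x) (a - Dp x h) = Df (p x) a - Df (p x) (Dp x h)"
    using lin_on_diff[OF C11D(3)[OF f px] W2 aW dp] .
  have e2: "norm (Df (p x) (a - Dp x h)) \<le> Lf * (Np * (norm h)\<^sup>2)"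
  proof -
    have "norm (Df (p x) (a - Dp x h)) \<le> Lf * norm (a - Dp x h)" using C11D(4)[OF f px adW] .
    also have "\<dots> \<le> Lf * (Np * (norm h)\<^sup>2)"
      using C11D(6)[OF p x h] Lf unfolding a_def by (simp add: mult_left_mono)
    finally show ?thesis .
  qed
  have "f (p (x + h)) - f (p x) - Df (p x) (Dp x h) = (f (p x + a) - f (p x) - Df (p x) a) + Df (p x) (a - Dp x h)"
    using pa lin by simp
  then have "norm (f (p (x + h)) - f (p x) - Df (p x) (Dp x h)) \<le> norm (f (p x + a) - f (p x) - Df (p x) a) + norm (Df (p x) (a - Dp x h))"
    by (metis norm_triangle_ineq)
  also have "\<dots> \<le> Nf * Lp\<^sup>2 * (norm h)\<^sup>2 + Lf * (Np * (norm h)\<^sup>2)" using e1' e2 by simp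
  finally show "norm (f (p (x + h)) - f (p x) - Df (p x) (Dp x h)) \<le> (Nf * Lp\<^sup>2 + Lf * Np) * (norm h)\<^sup>2"
    by (simp add: algebra_simps)
next
  fix x z assume x: "x \<in> W1" and z: "z \<in> W1"
  have "norm (f (p z) - f (p x)) \<le> Lf * norm (p z - p x)"
    using C11D(5)[OF f] C11D(1)[OF p] x z by blast
  also have "\<dots> \<le> Lf * (Lp * norm (z - x))" using C11D(5)[OF p x z] Lf by (simp add: mult_left_mono)
  finally show "norm (f (p z) - f (p x)) \<le> Lf * Lp * norm (z - x)" by (simp add: mult.assoc)
qed

lemma C11_lin:
  assumes W: "subspace W" and V: "subspace V" and l: "lin_on V l" and lV: "\<And>v. v \<in> V \<Longrightarrow> l v \<in> V'"
    and lb: "\<And>v. v \<in> V \<Longrightarrow> norm (l v) \<le> a * norm v" and a: "0 \<le> a"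
    and f: "C11 W V f Df L N"
  shows "C11 W V' (\<lambda>x. l (f x)) (\<lambda>x h. l (Df x h)) (a * L) (a * N)"
proof (rule C11I)
  fix x assume x: "x \<in> W"
  show "l (f x) \<in> V'" using lV C11D(1)[OF f x] .
  show "lin_on W (\<lambda>h. l (Df x h))"
    unfolding lin_on_def using lin_onD[OF l] lin_onD[OF C11D(3)[OF f x]] C11D(2)[OF f x] by simp
  fix h assume h: "h \<in> W"
  show "l (Df x h) \<in> V'" using lV C11D(2)[OF f x h] .
  show "norm (l (Df x h)) \<le> a * L * norm h"
    using lb[OF C11D(2)[OF f x h]] C11D(4)[OF f x h] a
    by (metis (no_types, opaque_lifting) mult.assoc mult_left_mono order_trans)
  have xh: "x + h \<in> W" using W x h by (simp add: subspace_add)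
  have in1: "f (x + h) - f x - Df x h \<in> V"
    using C11D(1)[OF f xh] C11D(1)[OF f x] C11D(2)[OF f x h] V by (simp add: subspace_diff)
  have "l (f (x + h)) - l (f x) - l (Df x h) = l (f (x + h) - f x - Df x h)"
    using lin_on_diff[OF l V] C11D(1)[OF f xh] C11D(1)[OF f x] C11D(2)[OF f x h] V
    by (simp add: subspace_diff)
  then show "norm (l (f (x + h)) - l (f x) - l (Df x h)) \<le> a * N * (norm h)\<^sup>2"
    using lb[OF in1] C11D(6)[OF f x h] a
    by (metis (no_types, opaque_lifting) mult.assoc mult_left_mono order_trans)
next
  fix x z assume x: "x \<in> W" and z: "z \<in> W"
  have "l (f z) - l (f x) = l (f z - f x)"
    using lin_on_diff[OF l V] C11D(1)[OF f] x z by simp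
  moreover have "f z - f x \<in> V" using C11D(1)[OF f] x z V by (simp add: subspace_diff)
  ultimately show "norm (l (f z) - l (f x)) \<le> a * L * norm (z - x)"
    using lb C11D(5)[OF f x z] a
    by (metis (no_types, opaque_lifting) mult.assoc mult_left_mono order_trans)
qed

lemma C11_add:
  assumes W: "subspace W" and V: "subspace V"
    and f: "C11 W V f Df L1 N1" and g: "C11 W V g Dg L2 N2"
  shows "C11 W V (\<lambda>x. f x + g x) (\<lambda>x h. Df x h + Dg x h) (L1 + L2) (N1 + N2)"
proof (rule C11I)
  fix x assume x: "x \<in> W"
  show "f x + g x \<in> V" using C11D(1)[OF f x] C11D(1)[OF g x] V by (simp add: subspace_add)
  show "lin_on W (\<lambda>h. Df x h + Dg x h)"
    unfolding lin_on_def using lin_onD[OF C11D(3)[OF f x]] lin_onD[OF C11D(3)[OF g x]]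
    by (simp add: algebra_simps scaleR_add_right)
  fix h assume h: "h \<in> W"
  show "Df x h + Dg x h \<in> V" using C11D(2)[OF f x h] C11D(2)[OF g x h] V by (simp add: subspace_add)
  show "norm (Df x h + Dg x h) \<le> (L1 + L2) * norm h"
    using C11D(4)[OF f x h] C11D(4)[OF g x h] norm_triangle_ineq[of "Df x h" "Dg x h"]
    by (simp add: distrib_right)
  have "f (x + h) + g (x + h) - (f x + g x) - (Df x h + Dg x h) = (f (x + h) - f x - Df x h) + (g (x + h) - g x - Dg x h)"
    by (simp add: algebra_simps)
  from norm_sum_le[OF this C11D(6)[OF f x h] C11D(6)[OF g x h]]
  show "norm (f (x + h) + g (x + h) - (f x + g x) - (Df x h + Dg x h)) \<le> (N1 + N2) * (norm h)\<^sup>2"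
    by (simp add: distrib_right)
next
  fix x z assume x: "x \<in> W" and z: "z \<in> W"
  have "f z + g z - (f x + g x) = (f z - f x) + (g z - g x)" by simp
  from norm_sum_le[OF this C11D(5)[OF f x z] C11D(5)[OF g x z]]
  show "norm (f z + g z - (f x + g x)) \<le> (L1 + L2) * norm (z - x)"
    by (simp add: distrib_right)
qed

lemma C11_diff:
  assumes W: "subspace W" and V: "subspace V"
    and f: "C11 W V f Df L1 N1" and g: "C11 W V g Dg L2 N2"
  shows "C11 W V (\<lambda>x. f x - g x) (\<lambda>x h. Df x h - Dg x h) (L1 + L2) (N1 + N2)"
proof (rule C11I)
  fix x assume x: "x \<in> W"
  show "f x - g x \<in> V" using C11D(1)[OF f x] C11D(1)[OF g x] V by (simp add: subspace_diff)
  show "lin_on W (\<lambda>h. Df x h - Dg x h)"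
    unfolding lin_on_def using lin_onD[OF C11D(3)[OF f x]] lin_onD[OF C11D(3)[OF g x]]
    by (simp add: algebra_simps scaleR_diff_right)
  fix h assume h: "h \<in> W"
  show "Df x h - Dg x h \<in> V" using C11D(2)[OF f x h] C11D(2)[OF g x h] V by (simp add: subspace_diff)
  show "norm (Df x h - Dg x h) \<le> (L1 + L2) * norm h"
    using C11D(4)[OF f x h] C11D(4)[OF g x h] norm_triangle_ineq4[of "Df x h" "Dg x h"]
    by (simp add: distrib_right)
  have "f (x + h) - g (x + h) - (f x - g x) - (Df x h - Dg x h) = (f (x + h) - f x - Df x h) - (g (x + h) - g x - Dg x h)"
    by (simp add: algebra_simps)
  from norm_diff_le[OF this C11D(6)[OF f x h] C11D(6)[OF g x h]]
  show "norm (f (x + h) - g (x + h) - (f x - g x) - (Df x h - Dg x h)) \<le> (N1 + N2) * (norm h)\<^sup>2"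
    by (simp add: distrib_right)
next
  fix x z assume x: "x \<in> W" and z: "z \<in> W"
  have "f z - g z - (f x - g x) = (f z - f x) - (g z - g x)" by simp
  from norm_diff_le[OF this C11D(5)[OF f x z] C11D(5)[OF g x z]]
  show "norm (f z - g z - (f x - g x)) \<le> (L1 + L2) * norm (z - x)"
    by (simp add: distrib_right)
qed

lemma C11_id:
  assumes "subspace W"
  shows "C11 W W (\<lambda>x. x) (\<lambda>x h. h) 1 0"
  by (rule C11I) (auto simp: lin_on_def)

lemma C11_linmap:
  assumes W: "subspace W" and l: "lin_on W l" and lV: "\<And>v. v \<in> W \<Longrightarrow> l v \<in> V"
    and lb: "\<And>v. v \<in> W \<Longrightarrow> norm (l v) \<le> a * norm v" and a: "0 \<le> a"
  shows "C11 W V l (\<lambda>x h. l h) a 0"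
  using C11_lin[OF W W l lV lb a C11_id[OF W]] by simp

lemma ml_bound_0: "ml_bound S 0 phi L \<longleftrightarrow> norm (phi []) \<le> L"
  unfolding ml_bound_def by auto

lemma ml_bound_1: "ml_bound S (Suc 0) phi L \<longleftrightarrow> (\<forall>v\<in>S. norm (phi [v]) \<le> L * norm v)"
  unfolding ml_bound_def
proof safe
  fix v assume "\<forall>vs. length vs = Suc 0 \<and> set vs \<subseteq> S \<longrightarrow> norm (phi vs) \<le> L * prod_list (map norm vs)" "v \<in> S"
  then show "norm (phi [v]) \<le> L * norm v" by (erule_tac x="[v]" in allE) auto
next
  fix vs :: "'a list" assume "\<forall>v\<in>S. norm (phi [v]) \<le> L * norm v" "length vs = Suc 0" "set vs \<subseteq> S"
  then show "norm (phi vs) \<le> L * prod_list (map norm vs)" by (cases vs) auto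
qed

lemma ml_bound_2: "ml_bound S 2 phi L \<Longrightarrow> u \<in> S \<Longrightarrow> v \<in> S \<Longrightarrow> norm (phi [u, v]) \<le> L * norm u * norm v"
  unfolding ml_bound_def by (erule_tac x="[u, v]" in allE) (auto simp: mult.assoc)

lemma mlinear_on_0: "mlinear_on S 0 phi"
  unfolding mlinear_on_def by auto

lemma mlinear_on_1I:
  assumes "lin_on S (\<lambda>v. phi [v])"
  shows "mlinear_on S (Suc 0) phi"
  unfolding mlinear_on_def
proof (intro allI impI conjI ballI)
  fix i vs a b c assume "i < Suc 0" "length vs = Suc 0 \<and> set vs \<subseteq> S" "a \<in> S"
  then have i: "i = 0" and vs: "\<exists>w. vs = [w]" by (auto simp: length_Suc_conv)
  then show "\<And>b. b \<in> S \<Longrightarrow> phi (vs[i := a + b]) = phi (vs[i := a]) + phi (vs[i := b])"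
    using lin_onD(1)[OF assms] \<open>a \<in> S\<close> by auto
  show "phi (vs[i := c *\<^sub>R a]) = c *\<^sub>R phi (vs[i := a])"
    using i vs lin_onD(2)[OF assms] \<open>a \<in> S\<close> by auto
qed

lemma mlinear_onD:
  assumes "mlinear_on S j phi" "i < j" "length vs = j" "set vs \<subseteq> S" "a \<in> S" "b \<in> S"
  shows "phi (vs[i := a + b]) = phi (vs[i := a]) + phi (vs[i := b])"
    "phi (vs[i := c *\<^sub>R a]) = c *\<^sub>R phi (vs[i := a])"
  using assms unfolding mlinear_on_def by blast+

lemma mlinear_on_1D:
  assumes "mlinear_on S (Suc 0) phi"
  shows "lin_on S (\<lambda>v. phi [v])"
  unfolding lin_on_def
proof (intro conjI ballI allI)
  fix a b assume "a \<in> S" "b \<in> S"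
  then show "phi [a + b] = phi [a] + phi [b]"
    using mlinear_onD(1)[OF assms, of 0 "[a]" a b] by simp
next
  fix c a assume "a \<in> S"
  then show "phi [c *\<^sub>R a] = c *\<^sub>R phi [a]"
    using mlinear_onD(2)[OF assms, of 0 "[a]" a a c] by simp
qed

lemma mlinear_on_2D:
  assumes "mlinear_on S 2 phi" "v \<in> S"
  shows "lin_on S (\<lambda>u. phi [u, v])"
  unfolding lin_on_def
proof (intro conjI ballI allI)
  fix a b assume "a \<in> S" "b \<in> S"
  then show "phi [a + b, v] = phi [a, v] + phi [b, v]"
    using mlinear_onD(1)[OF assms(1), of 0 "[a, v]" a b] assms(2) by simp
next
  fix c a assume "a \<in> S"
  then show "phi [c *\<^sub>R a, v] = c *\<^sub>R phi [a, v]"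
    using mlinear_onD(2)[OF assms(1), of 0 "[a, v]" a a c] assms(2) by simp
qed

lemma eps_delta_has_derivative:
  assumes S: "subspace S" and y: "y \<in> S" and bl: "bounded_linear l"
    and ed: "\<And>e. e > 0 \<Longrightarrow> \<exists>d>0. \<forall>h\<in>S. norm h < d \<longrightarrow> norm (f (y + h) - f y - l h) \<le> e * norm h"
  shows "(f has_derivative l) (at y within S)"
  unfolding has_derivative_within'
proof (intro conjI bl allI impI)
  fix e :: real assume e: "e > 0"
  obtain d where d: "d > 0" "\<forall>h\<in>S. norm h < d \<longrightarrow> norm (f (y + h) - f y - l h) \<le> e/2 * norm h"
    using ed[of "e/2"] e by auto
  show "\<exists>d>0. \<forall>x'\<in>S. 0 < norm (x' - y) \<and> norm (x' - y) < d \<longrightarrow> norm (f x' - f y - l (x' - y)) / norm (x' - y) < e"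
  proof (intro exI[of _ d] conjI d(1) ballI impI)
    fix x' assume x': "x' \<in> S" "0 < norm (x' - y) \<and> norm (x' - y) < d"
    have "x' - y \<in> S" using S x'(1) y by (simp add: subspace_diff)
    then have "norm (f (y + (x' - y)) - f y - l (x' - y)) \<le> e/2 * norm (x' - y)" using d x' by blast
    then have "norm (f x' - f y - l (x' - y)) \<le> e/2 * norm (x' - y)" by simp
    moreover have "e * norm (x' - y) > 0" using x' e by simp
    ultimately have "norm (f x' - f y - l (x' - y)) < e * norm (x' - y)" by linarith
    then show "norm (f x' - f y - l (x' - y)) / norm (x' - y) < e"
      using x' e by (simp add: divide_less_eq)
  qed
qed

lemma Ckb_parts:
  assumes "Ckb k S T f D"
  shows "\<forall>y\<in>S. f y \<in> T \<and> D 0 y [] = f y"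
    "\<forall>j\<le>k. \<forall>y\<in>S. mlinear_on S j (D j y) \<and>
                      (\<forall>vs. length vs = j \<and> set vs \<subseteq> S \<longrightarrow> D j y vs \<in> T)"
    "\<forall>j\<le>k. \<exists>B. \<forall>y\<in>S. ml_bound S j (D j y) B"
    "\<forall>j<k. \<forall>y\<in>S. \<forall>e>0. \<exists>d>0. \<forall>h\<in>S. norm h < d \<longrightarrow>
          ml_bound S j (\<lambda>vs. D j (y + h) vs - D j y vs - D (Suc j) y (h # vs)) (e * norm h)"
proof -
  note a = assms[unfolded Ckb_def]
  show "\<forall>y\<in>S. f y \<in> T \<and> D 0 y [] = f y" using a by (elim conjE)
  show "\<forall>j\<le>k. \<forall>y\<in>S. mlinear_on S j (D j y) \<and>
                      (\<forall>vs. length vs = j \<and> set vs \<subseteq> S \<longrightarrow> D j y vs \<in> T)" using a by (elim conjE)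
  show "\<forall>j\<le>k. \<exists>B. \<forall>y\<in>S. ml_bound S j (D j y) B" using a by (elim conjE)
  show "\<forall>j<k. \<forall>y\<in>S. \<forall>e>0. \<exists>d>0. \<forall>h\<in>S. norm h < d \<longrightarrow>
          ml_bound S j (\<lambda>vs. D j (y + h) vs - D j y vs - D (Suc j) y (h # vs)) (e * norm h)" using a by (elim conjE)
qed

lemma Ckb_basic:
  assumes "Ckb k S T f D" "y \<in> S"
  shows "D 0 y [] = f y" "f y \<in> T"
  using Ckb_parts(1)[OF assms(1)] assms(2) by auto

lemma Ckb_bound0:
  assumes "Ckb k S T f D"
  shows "\<exists>B. \<forall>y\<in>S. norm (f y) \<le> B"
proof -
  obtain B where "\<forall>y\<in>S. ml_bound S 0 (D 0 y) B" using Ckb_parts(3)[OF assms] by blast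
  then show ?thesis using Ckb_basic[OF assms] by (auto simp: ml_bound_0)
qed

lemma Ckb_mem:
  assumes "Ckb k S T f D" "j \<le> k" "y \<in> S" "length vs = j" "set vs \<subseteq> S"
  shows "D j y vs \<in> T"
  using Ckb_parts(2)[OF assms(1)] assms(2-) by blast

lemma Ckb_mlin:
  assumes "Ckb k S T f D" "j \<le> k" "y \<in> S"
  shows "mlinear_on S j (D j y)"
  using Ckb_parts(2)[OF assms(1)] assms(2-) by blast

lemma Ckb_deriv0:
  assumes "Ckb k S T f D" "0 < k" "y \<in> S" "e > 0" "subspace S"
  shows "\<exists>d>0. \<forall>h\<in>S. norm h < d \<longrightarrow> norm (f (y + h) - f y - D 1 y [h]) \<le> e * norm h"
proof -
  have "\<forall>j<k. \<forall>y\<in>S. \<forall>e>0. \<exists>d>0. \<forall>h\<in>S. norm h < d \<longrightarrow>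
          ml_bound S j (\<lambda>vs. D j (y + h) vs - D j y vs - D (Suc j) y (h # vs)) (e * norm h)"
    using Ckb_parts(4)[OF assms(1)] by blast
  then obtain d where d: "d > 0" "\<forall>h\<in>S. norm h < d \<longrightarrow>
          ml_bound S 0 (\<lambda>vs. D 0 (y + h) vs - D 0 y vs - D (Suc 0) y (h # vs)) (e * norm h)"
    using assms(2,3,4) by blast
  show ?thesis
  proof (intro exI[of _ d] conjI d(1) ballI impI)
    fix h assume h: "h \<in> S" "norm h < d"
    have yh: "y + h \<in> S" using assms(5,3) h by (simp add: subspace_add)
    show "norm (f (y + h) - f y - D 1 y [h]) \<le> e * norm h"
      using d(2) h Ckb_basic(1)[OF assms(1) yh] Ckb_basic(1)[OF assms(1) assms(3)] by (auto simp: ml_bound_0)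
  qed
qed

lemma Ckb_deriv1:
  assumes "Ckb k S T f D" "1 < k" "y \<in> S" "e > 0"
  shows "\<exists>d>0. \<forall>h\<in>S. norm h < d \<longrightarrow> (\<forall>v\<in>S. norm (D 1 (y + h) [v] - D 1 y [v] - D 2 y [h, v]) \<le> e * norm h * norm v)"
proof -
  have "\<forall>j<k. \<forall>y\<in>S. \<forall>e>0. \<exists>d>0. \<forall>h\<in>S. norm h < d \<longrightarrow>
          ml_bound S j (\<lambda>vs. D j (y + h) vs - D j y vs - D (Suc j) y (h # vs)) (e * norm h)"
    using Ckb_parts(4)[OF assms(1)] by blast
  then obtain d where d: "d > 0" "\<forall>h\<in>S. norm h < d \<longrightarrow>
          ml_bound S 1 (\<lambda>vs. D 1 (y + h) vs - D 1 y vs - D (Suc 1) y (h # vs)) (e * norm h)"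
    using assms(2,3,4) by blast
  show ?thesis
    using d by (intro exI[of _ d]) (auto simp: ml_bound_1 numeral_2_eq_2)
qed

lemma Ckb_bound_deriv:
  assumes "Ckb k S T f D" "1 \<le> k"
  shows "\<exists>B. \<forall>y\<in>S. \<forall>v\<in>S. norm (D 1 y [v]) \<le> B * norm v"
proof -
  obtain B where "\<forall>y\<in>S. ml_bound S 1 (D 1 y) B" using Ckb_parts(3)[OF assms(1)] assms(2) by blast
  then show ?thesis by (auto simp: ml_bound_1)
qed

lemma onorm_on_bound:
  assumes "0 \<le> L" "\<And>x. x \<in> S \<Longrightarrow> norm (f x) \<le> L * norm x"
  shows "\<And>x. x \<in> S \<Longrightarrow> norm (f x) \<le> onorm_on S f * norm x" "0 \<le> onorm_on S f"
proof -
  let ?M = "{L. 0 \<le> L \<and> (\<forall>x\<in>S. norm (f x) \<le> L * norm x)}"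
  have ne: "?M \<noteq> {}" using assms by blast
  show "0 \<le> onorm_on S f" unfolding onorm_on_def by (rule cInf_greatest[OF ne]) auto
  fix x assume x: "x \<in> S"
  show "norm (f x) \<le> onorm_on S f * norm x"
  proof (cases "x = 0")
    case True then show ?thesis using assms(2)[OF x] by simp
  next
    case False
    have "norm (f x) / norm x \<le> onorm_on S f"
      unfolding onorm_on_def
    proof (rule cInf_greatest[OF ne])
      fix L assume "L \<in> ?M"
      then show "norm (f x) / norm x \<le> L" using x False by (simp add: divide_le_eq)
    qed
    then show ?thesis using False by (simp add: divide_le_eq mult.commute)
  qed
qed

locale cm_setting =
  fixes A :: "'a::banach \<Rightarrow> 'a" and Xc Xu Xs :: "'a set" and n :: nat and Lg Lc :: real
  assumes n2: "n \<ge> 2"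
    and subc: "subspace Xc" and subu: "subspace Xu" and subs: "subspace Xs"
    and clc: "closed Xc" and clu: "closed Xu" and cls: "closed Xs"
    and dsum: "\<forall>x. \<exists>!(c, u, s). c \<in> Xc \<and> u \<in> Xu \<and> s \<in> Xs \<and> x = c + u + s"
    and maxnorm: "\<forall>c\<in>Xc. \<forall>u\<in>Xu. \<forall>s\<in>Xs. norm (c + u + s) = max (norm c) (max (norm u) (norm s))"
    and A_lin: "bounded_linear A"
    and A_c: "A ` Xc \<subseteq> Xc" and A_u: "A ` Xu \<subseteq> Xu" and A_s: "A ` Xs \<subseteq> Xs"
    and Ac_bij: "bij_betw A Xc Xc" and Au_bij: "bij_betw A Xu Xu"
    and Lg0: "0 \<le> Lg" and Lc0: "0 \<le> Lc"
    and SN: "SN_cond n (onorm_on Xc A) (onorm_on Xc (inv_into Xc A))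
               (onorm_on Xu (inv_into Xu A)) (onorm_on Xs A) Lg Lc"
begin

interpretation A: bounded_linear A by (rule A_lin)

definition "dec x = (THE p. case p of (c, u, s) \<Rightarrow> c \<in> Xc \<and> u \<in> Xu \<and> s \<in> Xs \<and> x = c + u + s)"
definition "pc x = fst (dec x)"
definition "pu x = fst (snd (dec x))"
definition "ps x = snd (snd (dec x))"

lemma dec_prop: "pc x \<in> Xc \<and> pu x \<in> Xu \<and> ps x \<in> Xs \<and> x = pc x + pu x + ps x"
proof -
  have "\<exists>!p. case p of (c, u, s) \<Rightarrow> c \<in> Xc \<and> u \<in> Xu \<and> s \<in> Xs \<and> x = c + u + s" using dsum by blast
  then have "case dec x of (c, u, s) \<Rightarrow> c \<in> Xc \<and> u \<in> Xu \<and> s \<in> Xs \<and> x = c + u + s"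
    unfolding dec_def by (rule theI')
  then show ?thesis unfolding pc_def pu_def ps_def by (cases "dec x") auto
qed

lemma pc_in: "pc x \<in> Xc" and pu_in: "pu x \<in> Xu" and ps_in: "ps x \<in> Xs"
  and p_sum: "pc x + pu x + ps x = x"
  using dec_prop[of x] by auto

lemma dec_unique:
  assumes "c \<in> Xc" "u \<in> Xu" "s \<in> Xs" "x = c + u + s"
  shows "pc x = c" "pu x = u" "ps x = s"
proof -
  have "\<exists>!p. case p of (c, u, s) \<Rightarrow> c \<in> Xc \<and> u \<in> Xu \<and> s \<in> Xs \<and> x = c + u + s" using dsum by blast
  moreover have "case (c, u, s) of (c, u, s) \<Rightarrow> c \<in> Xc \<and> u \<in> Xu \<and> s \<in> Xs \<and> x = c + u + s" using assms by simp
  moreover have "case (pc x, pu x, ps x) of (c, u, s) \<Rightarrow> c \<in> Xc \<and> u \<in> Xu \<and> s \<in> Xs \<and> x = c + u + s"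
    using dec_prop[of x] by simp
  ultimately have "(pc x, pu x, ps x) = (c, u, s)" by (metis (mono_tags, lifting))
  then show "pc x = c" "pu x = u" "ps x = s" by auto
qed

lemma z_c: "0 \<in> Xc" and z_u: "0 \<in> Xu" and z_s: "0 \<in> Xs"
  using subc subu subs subspace_0 by auto

lemma pc_id: "x \<in> Xc \<Longrightarrow> pc x = x" and pu_id: "x \<in> Xu \<Longrightarrow> pu x = x" and ps_id: "x \<in> Xs \<Longrightarrow> ps x = x"
  using dec_unique[of x 0 0 x] dec_unique[of 0 x 0 x] dec_unique[of 0 0 x x] z_c z_u z_s by auto

lemma pc_u: "x \<in> Xu \<Longrightarrow> pc x = 0" and pc_s: "x \<in> Xs \<Longrightarrow> pc x = 0"
  and pu_c: "x \<in> Xc \<Longrightarrow> pu x = 0" and pu_s: "x \<in> Xs \<Longrightarrow> pu x = 0"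
  and ps_c: "x \<in> Xc \<Longrightarrow> ps x = 0" and ps_u: "x \<in> Xu \<Longrightarrow> ps x = 0"
  using dec_unique[of x 0 0 x] dec_unique[of 0 x 0 x] dec_unique[of 0 0 x x] z_c z_u z_s by auto

lemma norm_c_u_s: "c \<in> Xc \<Longrightarrow> u \<in> Xu \<Longrightarrow> s \<in> Xs \<Longrightarrow> norm (c + u + s) = max (norm c) (max (norm u) (norm s))"
  using maxnorm by blast

lemma norm_pc: "norm (pc x) \<le> norm x" and norm_pu: "norm (pu x) \<le> norm x" and norm_ps: "norm (ps x) \<le> norm x"
  using norm_c_u_s[OF pc_in pu_in ps_in, of x x x] p_sum[of x] by (metis max.cobounded1 max.cobounded2 order_trans)+

lemma p_add: "pc (x + y) = pc x + pc y" "pu (x + y) = pu x + pu y" "ps (x + y) = ps x + ps y"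
proof -
  have e: "(pc x + pu x + ps x) + (pc y + pu y + ps y) = (pc x + pc y) + (pu x + pu y) + (ps x + ps y)"
    by (simp add: algebra_simps)
  then have "x + y = (pc x + pc y) + (pu x + pu y) + (ps x + ps y)" unfolding p_sum .
  then show "pc (x + y) = pc x + pc y" "pu (x + y) = pu x + pu y" "ps (x + y) = ps x + ps y"
    using dec_unique pc_in pu_in ps_in subc subu subs by (simp_all add: subspace_add)
qed

lemma p_scale: "pc (r *\<^sub>R x) = r *\<^sub>R pc x" "pu (r *\<^sub>R x) = r *\<^sub>R pu x" "ps (r *\<^sub>R x) = r *\<^sub>R ps x"
proof -
  have "r *\<^sub>R x = r *\<^sub>R pc x + r *\<^sub>R pu x + r *\<^sub>R ps x"
    using p_sum[of x] by (metis scaleR_add_right)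
  then show "pc (r *\<^sub>R x) = r *\<^sub>R pc x" "pu (r *\<^sub>R x) = r *\<^sub>R pu x" "ps (r *\<^sub>R x) = r *\<^sub>R ps x"
    using dec_unique pc_in pu_in ps_in subc subu subs by (simp_all add: subspace_scale)
qed

lemma pc_bl: "bounded_linear pc"
  by (rule bounded_linear_intro[where K=1]) (auto simp: p_add p_scale norm_pc)

lemma lin_on_pc: "lin_on UNIV pc" and lin_on_pu: "lin_on UNIV pu" and lin_on_ps: "lin_on UNIV ps"
  by (auto simp: lin_on_def p_add p_scale)

lemma lin_on_A: "lin_on W A"
  by (auto simp: lin_on_def A.add A.scale)

definition "ac = onorm_on Xc A"
definition "asn = onorm_on Xs A"
definition "Aci = inv_into Xc A"
definition "Aui = inv_into Xu A"
definition "aci = onorm_on Xc Aci"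
definition "aui = onorm_on Xu Aui"

lemma A_bound: "x \<in> Xc \<Longrightarrow> norm (A x) \<le> ac * norm x" "0 \<le> ac"
  "x \<in> Xs \<Longrightarrow> norm (A x) \<le> asn * norm x" "0 \<le> asn"
proof -
  obtain K where K: "K > 0" "\<And>x. norm (A x) \<le> norm x * K" using A.pos_bounded by blast
  have b: "\<And>x. norm (A x) \<le> K * norm x" using K by (simp add: mult.commute)
  have K0: "0 \<le> K" using K by simp
  have bc: "\<And>x. x \<in> Xc \<Longrightarrow> norm (A x) \<le> K * norm x" and bs: "\<And>x. x \<in> Xs \<Longrightarrow> norm (A x) \<le> K * norm x"
    using b by blast+
  show "x \<in> Xc \<Longrightarrow> norm (A x) \<le> ac * norm x" "0 \<le> ac"
    "x \<in> Xs \<Longrightarrow> norm (A x) \<le> asn * norm x" "0 \<le> asn"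
    unfolding ac_def asn_def using onorm_on_bound[OF K0 bc] onorm_on_bound[OF K0 bs] by auto
qed

lemma Aci_props: "x \<in> Xc \<Longrightarrow> Aci x \<in> Xc" "x \<in> Xc \<Longrightarrow> A (Aci x) = x" "x \<in> Xc \<Longrightarrow> Aci (A x) = x"
  unfolding Aci_def using Ac_bij
  by (auto simp: bij_betw_def inv_into_into f_inv_into_f inv_into_f_f)

lemma Aui_props: "x \<in> Xu \<Longrightarrow> Aui x \<in> Xu" "x \<in> Xu \<Longrightarrow> A (Aui x) = x" "x \<in> Xu \<Longrightarrow> Aui (A x) = x"
  unfolding Aui_def using Au_bij
  by (auto simp: bij_betw_def inv_into_into f_inv_into_f inv_into_f_f)

lemma inv_lin:
  assumes W: "subspace W" and bij: "bij_betw A W W" and AW: "A ` W \<subseteq> W"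
  shows "lin_on W (inv_into W A)"
  unfolding lin_on_def
proof (intro conjI ballI allI)
  have inj: "inj_on A W" using bij bij_betw_def by blast
  have pr: "x \<in> W \<Longrightarrow> inv_into W A x \<in> W \<and> A (inv_into W A x) = x" for x
    using bij by (auto simp: bij_betw_def inv_into_into f_inv_into_f)
  fix a b assume a: "a \<in> W" and b: "b \<in> W"
  have "inv_into W A a + inv_into W A b \<in> W" using pr a b W by (simp add: subspace_add)
  moreover have "A (inv_into W A a + inv_into W A b) = a + b" using pr a b by (simp add: A.add)
  ultimately show "inv_into W A (a + b) = inv_into W A a + inv_into W A b"
    using inj by (metis inv_into_f_eq)
next
  have inj: "inj_on A W" using bij bij_betw_def by blast
  have pr: "x \<in> W \<Longrightarrow> inv_into W A x \<in> W \<and> A (inv_into W A x) = x" for x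
    using bij by (auto simp: bij_betw_def inv_into_into f_inv_into_f)
  fix c a assume a: "a \<in> W"
  have "c *\<^sub>R inv_into W A a \<in> W" using pr a W by (simp add: subspace_scale)
  moreover have "A (c *\<^sub>R inv_into W A a) = c *\<^sub>R a" using pr a by (simp add: A.scale)
  ultimately show "inv_into W A (c *\<^sub>R a) = c *\<^sub>R inv_into W A a"
    using inj by (metis inv_into_f_eq)
qed

lemma lin_Aci: "lin_on Xc Aci" and lin_Aui: "lin_on Xu Aui"
  unfolding Aci_def Aui_def using inv_lin subc subu Ac_bij Au_bij A_c A_u by auto

lemma Aci_bound: "x \<in> Xc \<Longrightarrow> norm (Aci x) \<le> aci * norm x" "0 \<le> aci"
proof -
  obtain C where C: "C > 0" "\<forall>y\<in>Xc. norm (inv_into Xc A y) \<le> C * norm y"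
    using bounded_inverse[OF subc clc A_lin Ac_bij] by blast
  then show "x \<in> Xc \<Longrightarrow> norm (Aci x) \<le> aci * norm x" "0 \<le> aci"
    unfolding aci_def Aci_def using onorm_on_bound[of C Xc "inv_into Xc A"] C by auto
qed

lemma Aui_bound: "x \<in> Xu \<Longrightarrow> norm (Aui x) \<le> aui * norm x" "0 \<le> aui"
proof -
  obtain C where C: "C > 0" "\<forall>y\<in>Xu. norm (inv_into Xu A y) \<le> C * norm y"
    using bounded_inverse[OF subu clu A_lin Au_bij] by blast
  then show "x \<in> Xu \<Longrightarrow> norm (Aui x) \<le> aui * norm x" "0 \<le> aui"
    unfolding aui_def Aui_def using onorm_on_bound[of C Xu "inv_into Xu A"] C by auto
qed

lemma Aci0: "Aci 0 = 0" using lin_on_zero[OF lin_Aci subc] .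
lemma Aui0: "Aui 0 = 0" using lin_on_zero[OF lin_Aui subu] .

definition "Lr = cLr ac Lg Lc"
definition "Lt = cLt aci Lr"
definition "Lu = cLu ac aui Lr Lg Lc"
definition "Ls = cLs aci asn Lr Lg Lc"
definition "Lm1 = aci + Lt"

lemma SN_facts:
  "Lc < 1" "Lr * aci < 1" "Lr * aui + ac * aui < 1" "Lr * aci + asn * aci < 1"
  "\<And>m. m \<le> 2 \<Longrightarrow> Lg + Lc < 1"
  "\<And>m. m \<le> 2 \<Longrightarrow> aui * ((ac + Lr)^m + Lg + Lu) < 1"
  "\<And>m. m \<le> 2 \<Longrightarrow> Lm1^m * (asn * (1 + Lm1 * Ls) + Lg * (1 + Lm1 * (1 + Lc))) < 1"
  using SN n2 unfolding SN_cond_def Let_def Lr_def Lt_def Lu_def Ls_def Lm1_def ac_def aci_def aui_def asn_def Aci_def Aui_def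
  by auto

end

lemma Ckb2_to_C11:
  fixes f :: "'a::real_normed_vector \<Rightarrow> 'b::real_normed_vector"
  assumes S: "subspace S" and P: "bounded_linear P" "\<And>x. P x \<in> S" "\<And>x. x \<in> S \<Longrightarrow> P x = x"
    "\<And>x. norm (P x) \<le> norm x"
    and f: "Ckb n S T f D" and n: "2 \<le> n"
    and L: "\<And>y. y \<in> S \<Longrightarrow> ml_bound S 1 (D 1 y) L" and eps: "\<And>y. y \<in> S \<Longrightarrow> ml_bound S 2 (D 2 y) \<epsilon>"
    and e0: "0 \<le> \<epsilon>" and L0: "0 \<le> L"
  shows "C11 S T f (\<lambda>y h. D 1 y [h]) L \<epsilon>"
proof -
  interpret P: bounded_linear P by fact
  have cvx: "convex S" using S subspace_imp_convex by blast
  have lin1: "lin_on S (\<lambda>h. D 1 y [h])" if "y \<in> S" for y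
    using mlinear_on_1D Ckb_mlin[OF f _ that, of 1] n by simp
  have b1: "norm (D 1 y [h]) \<le> L * norm h" if "y \<in> S" "h \<in> S" for y h
    using L[OF that(1)] that(2) by (simp add: ml_bound_1)
  have lin2: "lin_on S (\<lambda>u. D 2 y [u, v])" if "y \<in> S" "v \<in> S" for y v
    using mlinear_on_2D Ckb_mlin[OF f n that(1)] that(2) by blast
  have b2: "norm (D 2 y [u, v]) \<le> \<epsilon> * norm u * norm v" if "y \<in> S" "u \<in> S" "v \<in> S" for y u v
    using ml_bound_2[OF eps[OF that(1)] that(2,3)] .
  have blf: "bounded_linear (\<lambda>k. D 1 z [P k])" if z: "z \<in> S" for z
  proof (rule bounded_linear_intro[where K=L])
    fix x y show "D 1 z [P (x + y)] = D 1 z [P x] + D 1 z [P y]"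
      using lin_onD(1)[OF lin1[OF z]] P(2) by (simp add: P.add)
  next
    fix r x show "D 1 z [P (r *\<^sub>R x)] = r *\<^sub>R D 1 z [P x]"
      using lin_onD(2)[OF lin1[OF z]] P(2) by (simp add: P.scale)
  next
    fix x show "norm (D 1 z [P x]) \<le> norm x * L"
      using b1[OF z P(2)[of x]] P(4)[of x] L0 by (metis mult.commute mult_left_mono order_trans)
  qed
  have df: "(f has_derivative (\<lambda>k. D 1 z [P k])) (at z within S)" if z: "z \<in> S" for z
  proof (rule eps_delta_has_derivative[OF S z blf[OF z]])
    fix e :: real assume "e > 0"
    then obtain d where "d > 0" "\<forall>h\<in>S. norm h < d \<longrightarrow> norm (f (z + h) - f z - D 1 z [h]) \<le> e * norm h"
      using Ckb_deriv0[OF f _ z _ S] n by auto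
    then show "\<exists>d>0. \<forall>h\<in>S. norm h < d \<longrightarrow> norm (f (z + h) - f z - D 1 z [P h]) \<le> e * norm h"
      using P(3) by auto
  qed
  have lipf: "norm (f z - f x) \<le> L * norm (z - x)" if "x \<in> S" "z \<in> S" for x z
  proof (rule differentiable_bound[OF cvx df _ that(2,1)])
    fix y assume y: "y \<in> S"
    show "onorm (\<lambda>k. D 1 y [P k]) \<le> L"
    proof (rule onorm_bound[OF L0])
      fix x show "norm (D 1 y [P x]) \<le> L * norm x"
        using b1[OF y P(2)[of x]] P(4)[of x] L0 by (metis mult_left_mono order_trans)
    qed
  qed
  have lipD: "norm (D 1 z [v] - D 1 x [v]) \<le> \<epsilon> * norm v * norm (z - x)" if "x \<in> S" "z \<in> S" "v \<in> S" for x z v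
  proof -
    have blg: "bounded_linear (\<lambda>k. D 2 y [P k, v])" if y: "y \<in> S" for y
    proof (rule bounded_linear_intro[where K="\<epsilon> * norm v"])
      fix a b show "D 2 y [P (a + b), v] = D 2 y [P a, v] + D 2 y [P b, v]"
        using lin_onD(1)[OF lin2[OF y \<open>v \<in> S\<close>]] P(2) by (simp add: P.add)
    next
      fix r a show "D 2 y [P (r *\<^sub>R a), v] = r *\<^sub>R D 2 y [P a, v]"
        using lin_onD(2)[OF lin2[OF y \<open>v \<in> S\<close>]] P(2) by (simp add: P.scale)
    next
      fix a have "norm (D 2 y [P a, v]) \<le> \<epsilon> * norm (P a) * norm v" using b2[OF y P(2) \<open>v \<in> S\<close>] .
      also have "\<dots> \<le> \<epsilon> * norm a * norm v" using P(4)[of a] e0 by (simp add: mult_left_mono mult_right_mono)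
      finally show "norm (D 2 y [P a, v]) \<le> norm a * (\<epsilon> * norm v)" by (simp add: algebra_simps)
    qed
    have dg: "((\<lambda>y. D 1 y [v]) has_derivative (\<lambda>k. D 2 y [P k, v])) (at y within S)" if y: "y \<in> S" for y
    proof (rule eps_delta_has_derivative[OF S y blg[OF y]])
      fix e :: real assume e: "e > 0"
      define e' where "e' = e / (norm v + 1)"
      have e': "e' > 0" using e by (simp add: e'_def add_nonneg_pos)
      obtain d where d: "d > 0" "\<forall>h\<in>S. norm h < d \<longrightarrow> (\<forall>w\<in>S. norm (D 1 (y + h) [w] - D 1 y [w] - D 2 y [h, w]) \<le> e' * norm h * norm w)"
        using Ckb_deriv1[OF f _ y e'] n by auto
      show "\<exists>d>0. \<forall>h\<in>S. norm h < d \<longrightarrow> norm (D 1 (y + h) [v] - D 1 y [v] - D 2 y [P h, v]) \<le> e * norm h"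
      proof (intro exI[of _ d] conjI d(1) ballI impI)
        fix h assume h: "h \<in> S" "norm h < d"
        have "norm (D 1 (y + h) [v] - D 1 y [v] - D 2 y [P h, v]) \<le> e' * norm h * norm v"
          using d(2) h \<open>v \<in> S\<close> P(3) by auto
        also have "\<dots> \<le> e * norm h"
        proof -
          have pv: "norm v + 1 > 0" by (smt (verit) norm_ge_zero)
          have "e' * norm v \<le> e" unfolding e'_def using e pv by (simp add: field_simps)
          then show ?thesis by (metis mult.commute mult.left_commute mult_right_mono norm_ge_zero)
        qed
        finally show "norm (D 1 (y + h) [v] - D 1 y [v] - D 2 y [P h, v]) \<le> e * norm h" .
      qed
    qed
    have "norm (D 1 z [v] - D 1 x [v]) \<le> (\<epsilon> * norm v) * norm (z - x)"
    proof (rule differentiable_bound[OF cvx dg _ that(2,1)])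
      fix y assume y: "y \<in> S"
      show "onorm (\<lambda>k. D 2 y [P k, v]) \<le> \<epsilon> * norm v"
      proof (rule onorm_bound)
        show "0 \<le> \<epsilon> * norm v" using e0 by simp
        fix a have "norm (D 2 y [P a, v]) \<le> \<epsilon> * norm (P a) * norm v" using b2[OF y P(2) \<open>v \<in> S\<close>] .
        also have "\<dots> \<le> \<epsilon> * norm a * norm v" using P(4)[of a] e0 by (simp add: mult_left_mono mult_right_mono)
        finally show "norm (D 2 y [P a, v]) \<le> \<epsilon> * norm v * norm a" by (simp add: algebra_simps)
      qed
    qed
    then show ?thesis by simp
  qed
  have tay: "norm (f (x + h) - f x - D 1 x [h]) \<le> \<epsilon> * (norm h)\<^sup>2" if x: "x \<in> S" and h: "h \<in> S" for x h
  proof -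
    have xh: "x + h \<in> S" using S x h by (simp add: subspace_add)
    define G where "G = closed_segment x (x + h)"
    have GS: "G \<subseteq> S" unfolding G_def using closed_segment_subset[OF x xh cvx] .
    have cG: "convex G" unfolding G_def by simp
    define psi where "psi z = f z - D 1 x [P z]" for z
    have dpsi: "(psi has_derivative (\<lambda>k. D 1 z [P k] - D 1 x [P k])) (at z within G)" if z: "z \<in> G" for z
    proof -
      have "(f has_derivative (\<lambda>k. D 1 z [P k])) (at z within G)"
        using has_derivative_subset[OF df GS] z GS by blast
      moreover have "((\<lambda>z. D 1 x [P z]) has_derivative (\<lambda>k. D 1 x [P k])) (at z within G)"
        using bounded_linear_imp_has_derivative[OF blf[OF x]] .
      ultimately show ?thesis unfolding psi_def by (rule has_derivative_diff)
    qed
    have "norm (psi (x + h) - psi x) \<le> (\<epsilon> * norm h) * norm (x + h - x)"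
    proof (rule differentiable_bound[OF cG dpsi])
      fix z assume z: "z \<in> G"
      have zS: "z \<in> S" using z GS by blast
      have nz: "norm (z - x) \<le> norm h" using segment_bound(1)[of z x "x + h"] z unfolding G_def by simp
      show "onorm (\<lambda>k. D 1 z [P k] - D 1 x [P k]) \<le> \<epsilon> * norm h"
      proof (rule onorm_bound)
        show "0 \<le> \<epsilon> * norm h" using e0 by simp
        fix a
        have "norm (D 1 z [P a] - D 1 x [P a]) \<le> \<epsilon> * norm (P a) * norm (z - x)" using lipD[OF x zS P(2)] .
        also have "\<dots> \<le> \<epsilon> * norm a * norm h"
          using P(4)[of a] e0 nz by (simp add: mult_mono mult_left_mono)
        finally show "norm (D 1 z [P a] - D 1 x [P a]) \<le> \<epsilon> * norm h * norm a" by (simp add: algebra_simps)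
      qed
    qed (auto simp: G_def)
    moreover have "psi (x + h) - psi x = f (x + h) - f x - D 1 x [h]"
      unfolding psi_def using P(3)[OF xh] P(3)[OF x] lin_onD(1)[OF lin1[OF x] x h] by simp
    ultimately show ?thesis by (simp add: power2_eq_square mult.assoc)
  qed
  show ?thesis
  proof (rule C11I)
    fix x assume x: "x \<in> S"
    show "f x \<in> T" using Ckb_basic(2)[OF f x] .
    show "lin_on S (\<lambda>h. D 1 x [h])" using lin1[OF x] .
    fix h assume h: "h \<in> S"
    show "D 1 x [h] \<in> T" using Ckb_mem[OF f _ x, of 1 "[h]"] h n by simp
    show "norm (D 1 x [h]) \<le> L * norm h" using b1[OF x h] .
    show "norm (f (x + h) - f x - D 1 x [h]) \<le> \<epsilon> * (norm h)\<^sup>2" using tay[OF x h] .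
  next
    fix x z assume "x \<in> S" "z \<in> S"
    then show "norm (f z - f x) \<le> L * norm (z - x)" using lipf by blast
  qed
qed

lemma lim_norm_le:
  assumes "X \<longlonglongrightarrow> x" "\<And>k. norm (X k) \<le> C"
  shows "norm x \<le> C"
  by (rule LIMSEQ_le_const2[OF tendsto_norm[OF assms(1)]]) (use assms(2) in auto)

lemma norm3: "norm (a - b + c) \<le> norm a + norm b + norm (c::'a::real_normed_vector)"
proof -
  have "norm (a - b + c) \<le> norm (a - b) + norm c" by (rule norm_triangle_ineq)
  moreover have "norm (a - b) \<le> norm a + norm b" by (rule norm_triangle_ineq4)
  ultimately show ?thesis by linarith
qed

lemma C11_limit:
  assumes W: "subspace W" and V: "closed V"
    and fk: "\<And>k. C11 W V (f k) (Df k) L N"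
    and fl: "\<And>x. x \<in> W \<Longrightarrow> (\<lambda>k. f k x) \<longlonglongrightarrow> F x"
    and dl: "\<And>x h. x \<in> W \<Longrightarrow> h \<in> W \<Longrightarrow> (\<lambda>k. Df k x h) \<longlonglongrightarrow> D x h"
  shows "C11 W V F D L N"
proof (rule C11I)
  fix x assume x: "x \<in> W"
  show "F x \<in> V" using closed_sequentially[OF V, of "\<lambda>k. f k x"] fl[OF x] C11D(1)[OF fk x] by blast
  show "lin_on W (D x)"
    unfolding lin_on_def
  proof (intro conjI ballI allI)
    fix a b assume a: "a \<in> W" and b: "b \<in> W"
    have ab: "a + b \<in> W" using W a b by (simp add: subspace_add)
    have "(\<lambda>k. Df k x (a + b)) \<longlonglongrightarrow> D x a + D x b"
      using tendsto_add[OF dl[OF x a] dl[OF x b]] lin_onD(1)[OF C11D(3)[OF fk x] a b] by simp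
    then show "D x (a + b) = D x a + D x b" using dl[OF x ab] LIMSEQ_unique by blast
  next
    fix c a assume a: "a \<in> W"
    have ca: "c *\<^sub>R a \<in> W" using W a by (simp add: subspace_scale)
    have "(\<lambda>k. Df k x (c *\<^sub>R a)) \<longlonglongrightarrow> c *\<^sub>R D x a"
      using tendsto_scaleR[OF tendsto_const dl[OF x a], of c] lin_onD(2)[OF C11D(3)[OF fk x] a] by simp
    then show "D x (c *\<^sub>R a) = c *\<^sub>R D x a" using dl[OF x ca] LIMSEQ_unique by blast
  qed
  fix h assume h: "h \<in> W"
  show "D x h \<in> V" using closed_sequentially[OF V, of "\<lambda>k. Df k x h"] dl[OF x h] C11D(2)[OF fk x h] by blast
  show "norm (D x h) \<le> L * norm h" using lim_norm_le[OF dl[OF x h]] C11D(4)[OF fk x h] by blast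
  have xh: "x + h \<in> W" using W x h by (simp add: subspace_add)
  have "(\<lambda>k. f k (x + h) - f k x - Df k x h) \<longlonglongrightarrow> F (x + h) - F x - D x h"
    by (intro tendsto_intros fl dl x h xh)
  then show "norm (F (x + h) - F x - D x h) \<le> N * (norm h)\<^sup>2"
    using lim_norm_le C11D(6)[OF fk x h] by blast
next
  fix x z assume x: "x \<in> W" and z: "z \<in> W"
  have "(\<lambda>k. f k z - f k x) \<longlonglongrightarrow> F z - F x"
    by (intro tendsto_intros fl x z)
  then show "norm (F z - F x) \<le> L * norm (z - x)"
    using lim_norm_le C11D(5)[OF fk x z] by blast
qed

lemma deriv_cauchy:
  assumes W: "subspace W" and fk: "\<And>k. C11 W V (f k) (Df k) L N" and N0: "0 \<le> N"
    and uc: "\<And>e. e > 0 \<Longrightarrow> \<exists>K. \<forall>m\<ge>K. \<forall>k\<ge>K. \<forall>x\<in>W. norm (f m x - f k x) \<le> e"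
    and x: "x \<in> W" and h: "h \<in> W"
  shows "Cauchy (\<lambda>k. Df k x h)"
  unfolding Cauchy_def
proof (intro allI impI)
  fix e :: real assume e: "e > 0"
  define s where "s = e / (8 * (N * (norm h)\<^sup>2 + 1))"
  have Np: "N * (norm h)\<^sup>2 + 1 > 0" using N0 by (simp add: add_nonneg_pos)
  have s0: "s > 0" unfolding s_def using e Np by simp
  obtain K where K: "\<forall>m\<ge>K. \<forall>k\<ge>K. \<forall>x\<in>W. norm (f m x - f k x) \<le> e * s / 8"
    using uc[of "e * s / 8"] e s0 by auto
  show "\<exists>M. \<forall>m\<ge>M. \<forall>n\<ge>M. dist (Df m x h) (Df n x h) < e"
  proof (intro exI[of _ K] allI impI)
    fix m k assume m: "K \<le> m" and k: "K \<le> k"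
    have sh: "s *\<^sub>R h \<in> W" using W h by (simp add: subspace_scale)
    have xsh: "x + s *\<^sub>R h \<in> W" using W x sh by (simp add: subspace_add)
    have eq: "s *\<^sub>R (Df m x h - Df k x h) =
      ((f m (x + s *\<^sub>R h) - f k (x + s *\<^sub>R h)) - (f m x - f k x))
      - (f m (x + s *\<^sub>R h) - f m x - Df m x (s *\<^sub>R h)) + (f k (x + s *\<^sub>R h) - f k x - Df k x (s *\<^sub>R h))"
      using lin_onD(2)[OF C11D(3)[OF fk x] h, where c=s] by (simp add: algebra_simps)
    have n1: "norm ((f m (x + s *\<^sub>R h) - f k (x + s *\<^sub>R h)) - (f m x - f k x)) \<le> e * s / 8 + e * s / 8"
      using K m k xsh x by (metis norm_triangle_le_diff add_mono)
    have n2: "norm (f m (x + s *\<^sub>R h) - f m x - Df m x (s *\<^sub>R h)) \<le> N * (s * norm h)\<^sup>2"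
      using C11D(6)[OF fk x sh] s0 by simp
    have n3: "norm (f k (x + s *\<^sub>R h) - f k x - Df k x (s *\<^sub>R h)) \<le> N * (s * norm h)\<^sup>2"
      using C11D(6)[OF fk x sh] s0 by simp
    have "s * norm (Df m x h - Df k x h) \<le> e * s / 8 + e * s / 8 + N * (s * norm h)\<^sup>2 + N * (s * norm h)\<^sup>2"
    proof -
      have "s * norm (Df m x h - Df k x h) = norm (s *\<^sub>R (Df m x h - Df k x h))" using s0 by simp
      also have "\<dots> \<le> norm ((f m (x + s *\<^sub>R h) - f k (x + s *\<^sub>R h)) - (f m x - f k x))
          + norm (f m (x + s *\<^sub>R h) - f m x - Df m x (s *\<^sub>R h)) + norm (f k (x + s *\<^sub>R h) - f k x - Df k x (s *\<^sub>R h))"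
        unfolding eq by (rule norm3)
      finally show ?thesis using n1 n2 n3 by linarith
    qed
    also have "e * s / 8 + e * s / 8 + N * (s * norm h)\<^sup>2 + N * (s * norm h)\<^sup>2 = s * (e / 4 + 2 * N * s * (norm h)\<^sup>2)"
      by (simp add: power2_eq_square algebra_simps)
    finally have "norm (Df m x h - Df k x h) \<le> e / 4 + 2 * N * s * (norm h)\<^sup>2"
      using s0 by (meson mult_left_le_imp_le)
    also have "2 * N * s * (norm h)\<^sup>2 \<le> e / 4"
    proof -
      have "2 * N * s * (norm h)\<^sup>2 \<le> 2 * (N * (norm h)\<^sup>2 + 1) * s" using s0 by (simp add: algebra_simps)
      also have "\<dots> = e / 4" unfolding s_def using Np by (simp add: field_simps)
      finally show ?thesis .
    qed
    then have "e / 4 + 2 * N * s * (norm h)\<^sup>2 < e" using e by linarith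
    finally show "dist (Df m x h) (Df k x h) < e" by (simp add: dist_norm)
  qed
qed

lemma four_point:
  assumes W: "subspace W" and f: "C11 W V f Df L N" and N0: "0 \<le> N"
    and x: "x \<in> W" and y: "y \<in> W" and v: "v \<in> W"
  shows "norm (Df y v - Df x v) \<le> 6 * N * norm (y - x) * norm v"
proof (cases "y = x \<or> v = 0")
  case True
  then show ?thesis
  proof
    assume "v = 0" then show ?thesis
      using lin_on_zero[OF C11D(3)[OF f x] W] lin_on_zero[OF C11D(3)[OF f y] W] by simp
  qed simp
next
  case False
  define \<rho> where "\<rho> = norm (y - x)"
  define c where "c = \<rho> / norm v"
  have \<rho>0: "\<rho> > 0" using False by (simp add: \<rho>_def)
  have c0: "c > 0" using False \<rho>0 by (simp add: c_def)
  define w where "w = c *\<^sub>R v"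
  have wW: "w \<in> W" using W v by (simp add: w_def subspace_scale)
  have nw: "norm w = \<rho>" using c0 False \<rho>0 by (simp add: w_def c_def)
  have yx: "y - x \<in> W" using W x y by (simp add: subspace_diff)
  have yxw: "y - x + w \<in> W" using W yx wW by (simp add: subspace_add)
  define E1 where "E1 = f (y + w) - f y - Df y w"
  define E3 where "E3 = f (x + (y - x + w)) - f x - Df x (y - x + w)"
  define E4 where "E4 = f (x + (y - x)) - f x - Df x (y - x)"
  have lin: "Df x (y - x + w) = Df x (y - x) + Df x w" using lin_onD(1)[OF C11D(3)[OF f x] yx wW] .
  have eq: "Df x w - Df y w = E1 - E3 + E4"
    unfolding E1_def E3_def E4_def lin by (simp add: algebra_simps)
  have b1: "norm E1 \<le> N * \<rho>\<^sup>2" unfolding E1_def using C11D(6)[OF f y wW] nw by simp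
  have b3: "norm E3 \<le> N * (2 * \<rho>)\<^sup>2"
  proof -
    have "norm (y - x + w) \<le> 2 * \<rho>" using norm_triangle_ineq[of "y - x" w] nw \<rho>_def by simp
    then have "(norm (y - x + w))\<^sup>2 \<le> (2 * \<rho>)\<^sup>2" by (rule power_mono) simp
    then show ?thesis unfolding E3_def using C11D(6)[OF f x yxw] N0
      by (meson mult_left_mono order_trans)
  qed
  have b4: "norm E4 \<le> N * \<rho>\<^sup>2" unfolding E4_def using C11D(6)[OF f x yx] \<rho>_def by simp
  have "norm (Df x w - Df y w) \<le> 6 * N * \<rho>\<^sup>2"
  proof -
    have "norm (E1 - E3 + E4) \<le> norm E1 + norm E3 + norm E4" by (rule norm3)
    then have "norm (Df x w - Df y w) \<le> norm E1 + norm E3 + norm E4" unfolding eq .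
    moreover have "N * \<rho>\<^sup>2 + N * (2 * \<rho>)\<^sup>2 + N * \<rho>\<^sup>2 = 6 * N * \<rho>\<^sup>2" by (simp add: power2_eq_square algebra_simps)
    ultimately show ?thesis using b1 b3 b4 by linarith
  qed
  moreover have "Df x w - Df y w = c *\<^sub>R (Df x v - Df y v)"
    unfolding w_def using lin_onD(2)[OF C11D(3)[OF f x] v] lin_onD(2)[OF C11D(3)[OF f y] v] by (simp add: algebra_simps)
  ultimately have "c * norm (Df y v - Df x v) \<le> 6 * N * \<rho>\<^sup>2" using c0 by (simp add: norm_minus_commute)
  then have "norm (Df y v - Df x v) \<le> 6 * N * \<rho>\<^sup>2 / c" using c0 by (simp add: field_simps)
  also have "\<dots> = 6 * N * \<rho> * norm v" unfolding c_def using \<rho>0 False by (simp add: power2_eq_square field_simps)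
  finally show ?thesis unfolding \<rho>_def .
qed

definition mkD :: "('a \<Rightarrow> 'b) \<Rightarrow> ('a \<Rightarrow> 'a \<Rightarrow> 'b) \<Rightarrow> nat \<Rightarrow> 'a \<Rightarrow> 'a list \<Rightarrow> 'b" where
  "mkD f Df j y vs = (if j = 0 then f y else Df y (hd vs))"

lemma C11_Ckb1:
  assumes W: "subspace W" and f: "C11 W V f Df L N" and N0: "0 \<le> N" and L0: "0 \<le> L"
    and B: "\<And>x. x \<in> W \<Longrightarrow> norm (f x) \<le> B"
  shows "Ckb 1 W V f (mkD f Df)"
  unfolding Ckb_def
proof (intro conjI)
  show "\<forall>y\<in>W. f y \<in> V \<and> mkD f Df 0 y [] = f y" using C11D(1)[OF f] by (simp add: mkD_def)
  show "\<forall>j\<le>1. \<forall>y\<in>W. mlinear_on W j (mkD f Df j y) \<and> (\<forall>vs. length vs = j \<and> set vs \<subseteq> W \<longrightarrow> mkD f Df j y vs \<in> V)"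
  proof (intro allI impI ballI conjI)
    fix j y vs assume j: "j \<le> (1::nat)" and y: "y \<in> W"
    show "mlinear_on W j (mkD f Df j y)"
    proof (cases "j = 0")
      case True then show ?thesis by (simp add: mlinear_on_0)
    next
      case False then have "j = Suc 0" using j by simp
      then show ?thesis using mlinear_on_1I[of W "mkD f Df (Suc 0) y"] C11D(3)[OF f y] by (simp add: mkD_def)
    qed
    assume "length vs = j \<and> set vs \<subseteq> W"
    then show "mkD f Df j y vs \<in> V"
      using j C11D(1,2)[OF f y] by (cases vs) (auto simp: mkD_def)
  qed
  show "\<forall>j\<le>1. \<exists>B. \<forall>y\<in>W. ml_bound W j (mkD f Df j y) B"
  proof (intro allI impI)
    fix j :: nat assume j: "j \<le> 1"
    show "\<exists>B. \<forall>y\<in>W. ml_bound W j (mkD f Df j y) B"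
    proof (cases "j = 0")
      case True then show ?thesis using B by (intro exI[of _ B]) (simp add: mkD_def ml_bound_0)
    next
      case False then have "j = Suc 0" using j by simp
      then show ?thesis using C11D(4)[OF f] by (intro exI[of _ L]) (simp add: mkD_def ml_bound_1)
    qed
  qed
  show "\<forall>j<1. \<forall>y\<in>W. \<forall>e>0. \<exists>d>0. \<forall>h\<in>W. norm h < d \<longrightarrow>
          ml_bound W j (\<lambda>vs. mkD f Df j (y + h) vs - mkD f Df j y vs - mkD f Df (Suc j) y (h # vs)) (e * norm h)"
  proof (intro allI impI ballI)
    fix j :: nat and y and e :: real assume j: "j < 1" and y: "y \<in> W" and e: "e > 0"
    define d where "d = e / (N + 1)"
    have d0: "d > 0" using e N0 by (simp add: d_def)
    show "\<exists>d>0. \<forall>h\<in>W. norm h < d \<longrightarrow>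
          ml_bound W j (\<lambda>vs. mkD f Df j (y + h) vs - mkD f Df j y vs - mkD f Df (Suc j) y (h # vs)) (e * norm h)"
    proof (intro exI[of _ d] conjI d0 ballI impI)
      fix h assume h: "h \<in> W" "norm h < d"
      have "N * norm h \<le> e"
      proof -
        have "N * norm h \<le> N * d" using h N0 by (simp add: mult_left_mono)
        also have "\<dots> \<le> e" unfolding d_def using N0 e by (simp add: field_simps)
        finally show ?thesis .
      qed
      then have "N * (norm h)\<^sup>2 \<le> e * norm h" by (simp add: power2_eq_square mult_right_mono mult.assoc[symmetric])
      then show "ml_bound W j (\<lambda>vs. mkD f Df j (y + h) vs - mkD f Df j y vs - mkD f Df (Suc j) y (h # vs)) (e * norm h)"
        using j C11D(6)[OF f y h(1)] by (simp add: mkD_def ml_bound_0)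
    qed
  qed
  show "\<forall>y\<in>W. \<forall>e>0. \<exists>d>0. \<forall>z\<in>W. norm (z - y) < d \<longrightarrow> ml_bound W 1 (\<lambda>vs. mkD f Df 1 z vs - mkD f Df 1 y vs) e"
  proof (intro allI impI ballI)
    fix y and e :: real assume y: "y \<in> W" and e: "e > 0"
    define d where "d = e / (6 * N + 1)"
    have d0: "d > 0" using e N0 by (simp add: d_def)
    show "\<exists>d>0. \<forall>z\<in>W. norm (z - y) < d \<longrightarrow> ml_bound W 1 (\<lambda>vs. mkD f Df 1 z vs - mkD f Df 1 y vs) e"
    proof (intro exI[of _ d] conjI d0 ballI impI)
      fix z assume z: "z \<in> W" "norm (z - y) < d"
      have "6 * N * norm (z - y) \<le> e"
      proof -
        have "6 * N * norm (z - y) \<le> 6 * N * d" using z N0 by (simp add: mult_left_mono)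
        also have "\<dots> \<le> e" unfolding d_def using N0 e by (simp add: field_simps)
        finally show ?thesis .
      qed
      then have "\<forall>v\<in>W. norm (Df z v - Df y v) \<le> e * norm v"
        using four_point[OF W f N0 y z(1)] by (meson mult_right_mono norm_ge_zero order_trans)
      then show "ml_bound W 1 (\<lambda>vs. mkD f Df 1 z vs - mkD f Df 1 y vs) e"
        by (simp add: mkD_def ml_bound_1)
    qed
  qed
qed

context cm_setting begin

lemma consts_basic: "0 \<le> ac" "0 \<le> aci" "0 \<le> aui" "0 \<le> asn"
  using A_bound Aci_bound Aui_bound by auto

lemma Lr_props: "0 \<le> Lr" "Lr = ac * Lc + Lg * (1 + Lc) + Lc * (ac + Lr)"
proof -
  have d: "1 - Lc > 0" using SN_facts(1) by simp
  have eq: "Lr * (1 - Lc) = Lg + Lc * (2 * ac + Lg)" unfolding Lr_def cLr_def using d by simp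
  show "0 \<le> Lr" unfolding Lr_def cLr_def using d Lg0 Lc0 consts_basic by simp
  show "Lr = ac * Lc + Lg * (1 + Lc) + Lc * (ac + Lr)" using eq by (simp add: algebra_simps)
qed

lemma Lt_props: "0 \<le> Lt" "Lm1 * (1 - aci * Lr) = aci" "Lt = aci * (Lr * Lm1)" "0 \<le> Lm1" "aci \<le> Lm1"
proof -
  have d: "1 - aci * Lr > 0" using SN_facts(2) by (simp add: mult.commute)
  show t0: "0 \<le> Lt" unfolding Lt_def cLt_def using d Lr_props consts_basic by simp
  have "Lt * (1 - aci * Lr) = aci^2 * Lr" unfolding Lt_def cLt_def using d by simp
  then show m: "Lm1 * (1 - aci * Lr) = aci" unfolding Lm1_def by (simp add: algebra_simps power2_eq_square)
  have "Lm1 = aci / (1 - aci * Lr)" using m d by (simp add: field_simps)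
  then show "Lt = aci * (Lr * Lm1)" unfolding Lt_def cLt_def using d by (simp add: power2_eq_square)
  show "0 \<le> Lm1" "aci \<le> Lm1" unfolding Lm1_def using t0 consts_basic by auto
qed

lemma Lu_props: "0 \<le> Lu" "Lu = aui * (Lu * (ac + Lr) + Lg * (1 + Lc))" "Lu \<le> 1 + Lc"
proof -
  define D where "D = 1 - Lr * aui - ac * aui"
  have d: "D > 0" using SN_facts(3) by (simp add: D_def)
  have eq: "Lu * D = aui * (1 + Lc) * Lg" unfolding Lu_def cLu_def D_def using d by (simp add: D_def)
  show u0: "0 \<le> Lu" unfolding Lu_def cLu_def using d consts_basic Lg0 Lc0 by (simp add: D_def)
  show "Lu = aui * (Lu * (ac + Lr) + Lg * (1 + Lc))" using eq by (simp add: D_def algebra_simps)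
  have "aui * ((ac + Lr)^1 + Lg + Lu) < 1" using SN_facts(6)[of 1] by simp
  moreover have "aui * ((ac + Lr)^1 + Lg + Lu) = aui * ac + aui * Lr + aui * Lg + aui * Lu" by (simp add: algebra_simps)
  moreover have "aui * Lu \<ge> 0" using u0 consts_basic by simp
  moreover have "D = 1 - aui * Lr - aui * ac" unfolding D_def by (simp add: mult.commute)
  ultimately have "aui * Lg \<le> D" by linarith
  then have "Lu * D \<le> (1 + Lc) * D" using eq Lc0 by (simp add: mult.commute mult.left_commute mult_left_mono)
  then show "Lu \<le> 1 + Lc" using d by simp
qed

lemma Ls_props: "0 \<le> Ls" "Ls = (asn * Ls + Lg * (1 + Lc)) * Lm1" "Ls \<le> 1 + Lc"
proof -
  define D where "D = 1 - Lr * aci - asn * aci"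
  have d: "D > 0" using SN_facts(4) by (simp add: D_def)
  have eq: "Ls * D = aci * (1 + Lc) * Lg" unfolding Ls_def cLs_def D_def using d by (simp add: D_def)
  show s0: "0 \<le> Ls" unfolding Ls_def cLs_def using d consts_basic Lg0 Lc0 by (simp add: D_def)
  have d1: "1 - aci * Lr > 0" using SN_facts(2) by (simp add: mult.commute)
  have "Ls * (1 - aci * Lr) = (asn * Ls + Lg * (1 + Lc)) * aci" using eq by (simp add: D_def algebra_simps)
  also have "\<dots> = ((asn * Ls + Lg * (1 + Lc)) * Lm1) * (1 - aci * Lr)"
    using Lt_props(2) by (simp only: mult.assoc)
  finally show "Ls = (asn * Ls + Lg * (1 + Lc)) * Lm1"
    using d1 by simp
  have "Lm1^1 * (asn * (1 + Lm1 * Ls) + Lg * (1 + Lm1 * (1 + Lc))) < 1" using SN_facts(7)[of 1] by simp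
  moreover have "Lm1^1 * (asn * (1 + Lm1 * Ls) + Lg * (1 + Lm1 * (1 + Lc))) = Lm1 * (asn + Lg) + (Lm1 * asn * Lm1 * Ls + Lm1 * Lg * Lm1 * (1 + Lc))"
    by (simp add: algebra_simps)
  moreover have "Lm1 * asn * Lm1 * Ls \<ge> 0" "Lm1 * Lg * Lm1 * (1 + Lc) \<ge> 0"
    using s0 Lt_props(4) consts_basic Lg0 Lc0 by simp_all
  ultimately have "Lm1 * (asn + Lg) < 1" by linarith
  then have "Lm1 * (asn + Lg) * (1 - aci * Lr) < 1 - aci * Lr" using d1 by simp
  moreover have "Lm1 * (asn + Lg) * (1 - aci * Lr) = (Lm1 * (1 - aci * Lr)) * (asn + Lg)" by (simp add: ac_simps)
  ultimately have "aci * (asn + Lg) < 1 - aci * Lr" using Lt_props(2) by simp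
  then have "aci * Lg \<le> D" unfolding D_def by (simp add: algebra_simps)
  then have "Ls * D \<le> (1 + Lc) * D" using eq Lc0 by (simp add: mult.commute mult.left_commute mult_left_mono)
  then show "Ls \<le> 1 + Lc" using d by simp
qed

lemma aui_lt1: "aui < 1" and asn_lt1: "asn < 1"
proof -
  have "aui * ((ac + Lr)^0 + Lg + Lu) < 1" using SN_facts(6)[of 0] by simp
  moreover have "aui * ((ac + Lr)^0 + Lg + Lu) = aui + aui * Lg + aui * Lu" by (simp add: algebra_simps)
  moreover have "aui * Lg \<ge> 0" "aui * Lu \<ge> 0" using consts_basic Lg0 Lu_props(1) by simp_all
  ultimately show "aui < 1" by linarith
  have "Lm1^0 * (asn * (1 + Lm1 * Ls) + Lg * (1 + Lm1 * (1 + Lc))) < 1" using SN_facts(7)[of 0] by simp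
  moreover have "Lm1^0 * (asn * (1 + Lm1 * Ls) + Lg * (1 + Lm1 * (1 + Lc))) = asn + (asn * Lm1 * Ls + Lg * (1 + Lm1 * (1 + Lc)))"
    by (simp add: algebra_simps)
  moreover have "asn * Lm1 * Ls \<ge> 0" "Lg * (1 + Lm1 * (1 + Lc)) \<ge> 0"
    using consts_basic Lg0 Lc0 Ls_props(1) Lt_props(4) by simp_all
  ultimately show "asn < 1" by linarith
qed

end

context cm_setting begin

lemma C11_sum3:
  assumes W: "subspace W"
    and f1: "C11 W Xc f1 D1 L1 N1" and f2: "C11 W Xu f2 D2 L2 N2" and f3: "C11 W Xs f3 D3 L3 N3"
  shows "C11 W UNIV (\<lambda>x. f1 x + f2 x + f3 x) (\<lambda>x h. D1 x h + D2 x h + D3 x h)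
           (max L1 (max L2 L3)) (max N1 (max N2 N3))"
proof (rule C11I)
  have mx: "max a (max b c) \<le> max L1 (max L2 L3) * t"
    if "a \<le> L1 * t" "b \<le> L2 * t" "c \<le> L3 * t" "0 \<le> t" for a b c t
  proof -
    have "L1 * t \<le> max L1 (max L2 L3) * t" "L2 * t \<le> max L1 (max L2 L3) * t" "L3 * t \<le> max L1 (max L2 L3) * t"
      using that(4) by (simp_all add: mult_right_mono)
    then show ?thesis using that by simp
  qed
  have mxN: "max a (max b c) \<le> max N1 (max N2 N3) * t"
    if "a \<le> N1 * t" "b \<le> N2 * t" "c \<le> N3 * t" "0 \<le> t" for a b c t
  proof -
    have "N1 * t \<le> max N1 (max N2 N3) * t" "N2 * t \<le> max N1 (max N2 N3) * t" "N3 * t \<le> max N1 (max N2 N3) * t"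
      using that(4) by (simp_all add: mult_right_mono)
    then show ?thesis using that by simp
  qed
  fix x assume x: "x \<in> W"
  show "f1 x + f2 x + f3 x \<in> UNIV" by simp
  show "lin_on W (\<lambda>h. D1 x h + D2 x h + D3 x h)"
    unfolding lin_on_def using lin_onD[OF C11D(3)[OF f1 x]] lin_onD[OF C11D(3)[OF f2 x]] lin_onD[OF C11D(3)[OF f3 x]]
    by (simp add: algebra_simps scaleR_add_right)
  fix h assume h: "h \<in> W"
  show "D1 x h + D2 x h + D3 x h \<in> UNIV" by simp
  show "norm (D1 x h + D2 x h + D3 x h) \<le> max L1 (max L2 L3) * norm h"
    using norm_c_u_s[OF C11D(2)[OF f1 x h] C11D(2)[OF f2 x h] C11D(2)[OF f3 x h]]
      mx[OF C11D(4)[OF f1 x h] C11D(4)[OF f2 x h] C11D(4)[OF f3 x h]] by simp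
  have xh: "x + h \<in> W" using W x h by (simp add: subspace_add)
  have e: "f1 (x + h) + f2 (x + h) + f3 (x + h) - (f1 x + f2 x + f3 x) - (D1 x h + D2 x h + D3 x h)
     = (f1 (x + h) - f1 x - D1 x h) + (f2 (x + h) - f2 x - D2 x h) + (f3 (x + h) - f3 x - D3 x h)"
    by (simp add: algebra_simps)
  have i1: "f1 (x + h) - f1 x - D1 x h \<in> Xc" using C11D(1,2)[OF f1] x h xh subc by (simp add: subspace_diff)
  have i2: "f2 (x + h) - f2 x - D2 x h \<in> Xu" using C11D(1,2)[OF f2] x h xh subu by (simp add: subspace_diff)
  have i3: "f3 (x + h) - f3 x - D3 x h \<in> Xs" using C11D(1,2)[OF f3] x h xh subs by (simp add: subspace_diff)
  show "norm (f1 (x + h) + f2 (x + h) + f3 (x + h) - (f1 x + f2 x + f3 x) - (D1 x h + D2 x h + D3 x h))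
        \<le> max N1 (max N2 N3) * (norm h)\<^sup>2"
    unfolding e norm_c_u_s[OF i1 i2 i3]
    by (rule mxN[OF C11D(6)[OF f1 x h] C11D(6)[OF f2 x h] C11D(6)[OF f3 x h]]) simp
next
  fix x z assume x: "x \<in> W" and z: "z \<in> W"
  have mx: "max a (max b c) \<le> max L1 (max L2 L3) * t"
    if "a \<le> L1 * t" "b \<le> L2 * t" "c \<le> L3 * t" "0 \<le> t" for a b c t
  proof -
    have "L1 * t \<le> max L1 (max L2 L3) * t" "L2 * t \<le> max L1 (max L2 L3) * t" "L3 * t \<le> max L1 (max L2 L3) * t"
      using that(4) by (simp_all add: mult_right_mono)
    then show ?thesis using that by simp
  qed
  have e: "f1 z + f2 z + f3 z - (f1 x + f2 x + f3 x) = (f1 z - f1 x) + (f2 z - f2 x) + (f3 z - f3 x)"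
    by (simp add: algebra_simps)
  have i1: "f1 z - f1 x \<in> Xc" using C11D(1)[OF f1] x z subc by (simp add: subspace_diff)
  have i2: "f2 z - f2 x \<in> Xu" using C11D(1)[OF f2] x z subu by (simp add: subspace_diff)
  have i3: "f3 z - f3 x \<in> Xs" using C11D(1)[OF f3] x z subs by (simp add: subspace_diff)
  show "norm (f1 z + f2 z + f3 z - (f1 x + f2 x + f3 x)) \<le> max L1 (max L2 L3) * norm (z - x)"
    unfolding e norm_c_u_s[OF i1 i2 i3]
    by (rule mx[OF C11D(5)[OF f1 x z] C11D(5)[OF f2 x z] C11D(5)[OF f3 x z]]) simp
qed

end

locale cm_data = cm_setting +
  fixes g :: "'a \<Rightarrow> 'a" and G :: "'a \<Rightarrow> 'a \<Rightarrow> 'a" and kc :: "'a \<Rightarrow> 'a" and KC :: "'a \<Rightarrow> 'a \<Rightarrow> 'a"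
    and Ng Nk Bg Bk :: real
  assumes g_C11: "C11 UNIV UNIV g G Lg Ng" and kc_C11: "C11 Xc Xc kc KC Lc Nk"
    and g0: "g 0 = 0" and G0: "\<And>v. G 0 v = 0" and kc0: "kc 0 = 0" and KC0: "\<And>v. v \<in> Xc \<Longrightarrow> KC 0 v = 0"
    and Bg: "\<And>x. norm (g x) \<le> Bg" and Bk: "\<And>x. x \<in> Xc \<Longrightarrow> norm (kc x) \<le> Bk"
    and Ng0: "0 \<le> Ng" and Nk0: "0 \<le> Nk"
begin

interpretation A: bounded_linear A by (rule A_lin)

definition "Kf u s x = x + kc x + u x + s x"
definition "DKf Du Ds x h = h + KC x h + Du x h + Ds x h"

definition "Cg = Ng * (1 + Lc)\<^sup>2"
definition "Cr = ac * Nk + Cg + Nk * (ac + Lr)\<^sup>2"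
definition "th2u = aui * ((ac + Lr)^2 + Lg + Lu)"
definition "th2s = Lm1^2 * (asn * (1 + Lm1 * Ls) + Lg * (1 + Lm1 * (1 + Lc)))"
definition "mu = Nk + Cr / (1 - Lg - Lc) + aui * Cg / (1 - th2u) + Cg * Lm1\<^sup>2 / (1 - th2s) + 1"
definition "Nt = mu * Lm1 ^ 3"

lemma Bg0: "0 \<le> Bg" using Bg[of 0] norm_ge_zero order_trans by blast

lemma mu_props: "Nk \<le> mu" "0 \<le> mu" "Cr \<le> (1 - Lg - Lc) * mu" "aui * Cg \<le> (1 - th2u) * mu"
  "Cg * Lm1\<^sup>2 \<le> (1 - th2s) * mu" "0 \<le> Cg" "0 \<le> Cr"
proof -
  have d1: "1 - Lg - Lc > 0" using SN_facts(5)[of "0::nat"] by simp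
  have d2: "1 - th2u > 0" using SN_facts(6)[of 2] by (simp add: th2u_def)
  have d3: "1 - th2s > 0" using SN_facts(7)[of 2] by (simp add: th2s_def)
  show cg: "0 \<le> Cg" unfolding Cg_def using Ng0 by simp
  show cr: "0 \<le> Cr" unfolding Cr_def using Nk0 cg consts_basic by simp
  have t1: "0 \<le> Cr / (1 - Lg - Lc)" using cr d1 by simp
  have t2: "0 \<le> aui * Cg / (1 - th2u)" using cg d2 consts_basic by simp
  have t3: "0 \<le> Cg * Lm1\<^sup>2 / (1 - th2s)" using cg d3 by simp
  show "Nk \<le> mu" "0 \<le> mu" unfolding mu_def using t1 t2 t3 Nk0 by linarith+
  have "Cr / (1 - Lg - Lc) \<le> mu" unfolding mu_def using t2 t3 Nk0 by linarith
  then show "Cr \<le> (1 - Lg - Lc) * mu" using d1 by (simp add: divide_le_eq mult.commute)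
  have "aui * Cg / (1 - th2u) \<le> mu" unfolding mu_def using t1 t3 Nk0 by linarith
  then show "aui * Cg \<le> (1 - th2u) * mu" using d2 by (simp add: divide_le_eq mult.commute)
  have "Cg * Lm1\<^sup>2 / (1 - th2s) \<le> mu" unfolding mu_def using t1 t2 Nk0 by linarith
  then show "Cg * Lm1\<^sup>2 \<le> (1 - th2s) * mu" using d3 by (simp add: divide_le_eq mult.commute)
qed

lemma C11_K:
  assumes u: "C11 Xc Xu u Du Lu mu" and s: "C11 Xc Xs s Ds Ls mu"
  shows "C11 Xc UNIV (Kf u s) (DKf Du Ds) (1 + Lc) mu"
proof -
  have f1: "C11 Xc Xc (\<lambda>x. x + kc x) (\<lambda>x h. h + KC x h) (1 + Lc) (0 + Nk)"
    using C11_add[OF subc subc C11_id[OF subc] kc_C11] .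
  have "C11 Xc UNIV (\<lambda>x. (x + kc x) + u x + s x) (\<lambda>x h. (h + KC x h) + Du x h + Ds x h)
           (max (1 + Lc) (max Lu Ls)) (max (0 + Nk) (max mu mu))"
    using C11_sum3[OF subc f1 u s] .
  moreover have "max (1 + Lc) (max Lu Ls) \<le> 1 + Lc" using Lu_props(3) Ls_props(3) by simp
  moreover have "max (0 + Nk) (max mu mu) \<le> mu" using mu_props(1) by simp
  ultimately show ?thesis unfolding Kf_def[abs_def] DKf_def[abs_def] by (rule C11_mono)
qed

lemma K0: "u 0 = 0 \<Longrightarrow> s 0 = 0 \<Longrightarrow> Kf u s 0 = 0"
  by (simp add: Kf_def kc0)

end

context cm_data begin

interpretation A: bounded_linear A by (rule A_lin)

definition "stepR r u s x = A (kc x) + pc (g (Kf u s x)) - kc (A x + r x)"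
definition "DstepR r Dr u Du s Ds x h = A (KC x h) + pc (G (Kf u s x) (DKf Du Ds x h)) - KC (A x + r x) (A h + Dr x h)"
definition "stepT r t x = - Aci (r (Aci x + t x))"
definition "DstepT Dr t Dt x h = - Aci (Dr (Aci x + t x) (Aci h + Dt x h))"
definition "stepU r u s x = Aui (u (A x + r x) - pu (g (Kf u s x)))"
definition "DstepU r Dr u Du s Ds x h = Aui (Du (A x + r x) (A h + Dr x h) - pu (G (Kf u s x) (DKf Du Ds x h)))"
definition "stepS t u s x = A (s (Aci x + t x)) + ps (g (Kf u s (Aci x + t x)))"
definition "DstepS t Dt u Du s Ds x h = A (Ds (Aci x + t x) (Aci h + Dt x h)) + ps (G (Kf u s (Aci x + t x)) (DKf Du Ds (Aci x + t x) (Aci h + Dt x h)))"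

lemma lin_A_c: "C11 Xc Xc A (\<lambda>x h. A h) ac 0"
  by (rule C11_linmap[OF subc lin_on_A]) (use A_c A_bound in auto)

lemma lin_Aci_c: "C11 Xc Xc Aci (\<lambda>x h. Aci h) aci 0"
  by (rule C11_linmap[OF subc lin_Aci]) (use Aci_props Aci_bound in auto)

lemma C11_y:
  assumes r: "C11 Xc Xc r Dr Lr mu"
  shows "C11 Xc Xc (\<lambda>x. A x + r x) (\<lambda>x h. A h + Dr x h) (ac + Lr) (0 + mu)"
  using C11_add[OF subc subc lin_A_c r] .

lemma C11_Phi:
  assumes t: "C11 Xc Xc t Dt Lt Nt"
  shows "C11 Xc Xc (\<lambda>x. Aci x + t x) (\<lambda>x h. Aci h + Dt x h) Lm1 (0 + Nt)"
  using C11_add[OF subc subc lin_Aci_c t] unfolding Lm1_def .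

lemma C11_gK:
  assumes u: "C11 Xc Xu u Du Lu mu" and s: "C11 Xc Xs s Ds Ls mu"
  shows "C11 Xc UNIV (\<lambda>x. g (Kf u s x)) (\<lambda>x h. G (Kf u s x) (DKf Du Ds x h)) (Lg * (1 + Lc)) (Ng * (1 + Lc)\<^sup>2 + Lg * mu)"
  using C11_comp[OF subc subspace_UNIV g_C11 C11_K[OF u s]] Lg0 Lc0 Ng0 by simp

lemma pc_C11: "C11 Xc UNIV f Df L N \<Longrightarrow> C11 Xc Xc (\<lambda>x. pc (f x)) (\<lambda>x h. pc (Df x h)) (1 * L) (1 * N)"
  by (rule C11_lin[OF subc subspace_UNIV lin_on_pc]) (auto simp: pc_in norm_pc)
lemma pu_C11: "C11 Xc UNIV f Df L N \<Longrightarrow> C11 Xc Xu (\<lambda>x. pu (f x)) (\<lambda>x h. pu (Df x h)) (1 * L) (1 * N)"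
  by (rule C11_lin[OF subc subspace_UNIV lin_on_pu]) (auto simp: pu_in norm_pu)
lemma ps_C11: "C11 Xc UNIV f Df L N \<Longrightarrow> C11 Xc Xs (\<lambda>x. ps (f x)) (\<lambda>x h. ps (Df x h)) (1 * L) (1 * N)"
  by (rule C11_lin[OF subc subspace_UNIV lin_on_ps]) (auto simp: ps_in norm_ps)

lemma Nt0: "0 \<le> Nt" unfolding Nt_def using mu_props(2) Lt_props(4) by simp

lemma stepR_C11:
  assumes r: "C11 Xc Xc r Dr Lr mu" and u: "C11 Xc Xu u Du Lu mu" and s: "C11 Xc Xs s Ds Ls mu"
  shows "C11 Xc Xc (stepR r u s) (DstepR r Dr u Du s Ds) Lr mu"
proof -
  have c1: "C11 Xc Xc (\<lambda>x. A (kc x)) (\<lambda>x h. A (KC x h)) (ac * Lc) (ac * Nk)"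
    by (rule C11_lin[OF subc subc lin_on_A _ _ _ kc_C11]) (use A_c A_bound in auto)
  note c3 = pc_C11[OF C11_gK[OF u s]]
  have c4: "C11 Xc Xc (\<lambda>x. kc (A x + r x)) (\<lambda>x h. KC (A x + r x) (A h + Dr x h)) (Lc * (ac + Lr)) (Nk * (ac + Lr)\<^sup>2 + Lc * (0 + mu))"
    using C11_comp[OF subc subc kc_C11 C11_y[OF r]] Lc0 Nk0 consts_basic Lr_props by simp
  note c5 = C11_diff[OF subc subc C11_add[OF subc subc c1 c3] c4]
  show ?thesis unfolding stepR_def[abs_def] DstepR_def[abs_def]
  proof (rule C11_mono[OF c5])
    show "ac * Lc + 1 * (Lg * (1 + Lc)) + Lc * (ac + Lr) \<le> Lr" using Lr_props(2) by simp
    have "ac * Nk + 1 * (Ng * (1 + Lc)\<^sup>2 + Lg * mu) + (Nk * (ac + Lr)\<^sup>2 + Lc * (0 + mu)) = Cr + (Lg + Lc) * mu"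
      unfolding Cr_def Cg_def by (simp add: algebra_simps)
    then show "ac * Nk + 1 * (Ng * (1 + Lc)\<^sup>2 + Lg * mu) + (Nk * (ac + Lr)\<^sup>2 + Lc * (0 + mu)) \<le> mu"
      using mu_props(3) by (simp add: algebra_simps)
  qed
qed

lemma stepT_C11:
  assumes r: "C11 Xc Xc r Dr Lr mu" and t: "C11 Xc Xc t Dt Lt Nt"
  shows "C11 Xc Xc (stepT r t) (DstepT Dr t Dt) Lt Nt"
proof -
  have c1: "C11 Xc Xc (\<lambda>x. r (Aci x + t x)) (\<lambda>x h. Dr (Aci x + t x) (Aci h + Dt x h)) (Lr * Lm1) (mu * Lm1\<^sup>2 + Lr * (0 + Nt))"
    using C11_comp[OF subc subc r C11_Phi[OF t]] Lr_props(1) Lt_props(4) mu_props(2) by simp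
  have ln: "lin_on Xc (\<lambda>v. - Aci v)" using lin_onD[OF lin_Aci] by (simp add: lin_on_def)
  have c2: "C11 Xc Xc (\<lambda>x. - Aci (r (Aci x + t x))) (\<lambda>x h. - Aci (Dr (Aci x + t x) (Aci h + Dt x h))) (aci * (Lr * Lm1)) (aci * (mu * Lm1\<^sup>2 + Lr * (0 + Nt)))"
    by (rule C11_lin[OF subc subc ln _ _ _ c1]) (auto simp: Aci_props Aci_bound subspace_neg[OF subc])
  show ?thesis unfolding stepT_def[abs_def] DstepT_def[abs_def]
  proof (rule C11_mono[OF c2])
    show "aci * (Lr * Lm1) \<le> Lt" using Lt_props(3) by simp
    have m: "Lm1 = aci + aci * Lr * Lm1" using Lt_props(2) by (simp add: algebra_simps)
    have "aci * (mu * Lm1\<^sup>2 + Lr * (0 + Nt)) = mu * Lm1\<^sup>2 * (aci + aci * Lr * Lm1)"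
      unfolding Nt_def by (simp add: power2_eq_square power3_eq_cube algebra_simps)
    also have "\<dots> = Nt" unfolding Nt_def using m[symmetric] by (simp add: power2_eq_square power3_eq_cube)
    finally show "aci * (mu * Lm1\<^sup>2 + Lr * (0 + Nt)) \<le> Nt" by simp
  qed
qed

lemma stepU_C11:
  assumes r: "C11 Xc Xc r Dr Lr mu" and u: "C11 Xc Xu u Du Lu mu" and s: "C11 Xc Xs s Ds Ls mu"
  shows "C11 Xc Xu (stepU r u s) (DstepU r Dr u Du s Ds) Lu mu"
proof -
  have c1: "C11 Xc Xu (\<lambda>x. u (A x + r x)) (\<lambda>x h. Du (A x + r x) (A h + Dr x h)) (Lu * (ac + Lr)) (mu * (ac + Lr)\<^sup>2 + Lu * (0 + mu))"
    using C11_comp[OF subc subc u C11_y[OF r]] Lu_props(1) Lr_props(1) consts_basic mu_props(2) by simp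
  note c2 = C11_diff[OF subc subu c1 pu_C11[OF C11_gK[OF u s]]]
  note c3 = C11_lin[OF subc subu lin_Aui Aui_props(1) Aui_bound(1) Aui_bound(2) c2]
  show ?thesis unfolding stepU_def[abs_def] DstepU_def[abs_def]
  proof (rule C11_mono[OF c3])
    show "aui * (Lu * (ac + Lr) + 1 * (Lg * (1 + Lc))) \<le> Lu" using Lu_props(2) by (simp add: algebra_simps)
    have "aui * (mu * (ac + Lr)\<^sup>2 + Lu * (0 + mu) + 1 * (Ng * (1 + Lc)\<^sup>2 + Lg * mu)) = th2u * mu + aui * Cg"
      unfolding th2u_def Cg_def by (simp add: algebra_simps)
    then show "aui * (mu * (ac + Lr)\<^sup>2 + Lu * (0 + mu) + 1 * (Ng * (1 + Lc)\<^sup>2 + Lg * mu)) \<le> mu"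
      using mu_props(4) by (simp add: algebra_simps)
  qed
qed

lemma stepS_C11:
  assumes t: "C11 Xc Xc t Dt Lt Nt" and u: "C11 Xc Xu u Du Lu mu" and s: "C11 Xc Xs s Ds Ls mu"
  shows "C11 Xc Xs (stepS t u s) (DstepS t Dt u Du s Ds) Ls mu"
proof -
  have c1: "C11 Xc Xs (\<lambda>x. s (Aci x + t x)) (\<lambda>x h. Ds (Aci x + t x) (Aci h + Dt x h)) (Ls * Lm1) (mu * Lm1\<^sup>2 + Ls * (0 + Nt))"
    using C11_comp[OF subc subc s C11_Phi[OF t]] Ls_props(1) Lt_props(4) mu_props(2) by simp
  have c2: "C11 Xc Xs (\<lambda>x. A (s (Aci x + t x))) (\<lambda>x h. A (Ds (Aci x + t x) (Aci h + Dt x h))) (asn * (Ls * Lm1)) (asn * (mu * Lm1\<^sup>2 + Ls * (0 + Nt)))"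
    by (rule C11_lin[OF subc subs lin_on_A _ _ _ c1]) (use A_s A_bound in auto)
  have c3: "C11 Xc UNIV (\<lambda>x. g (Kf u s (Aci x + t x))) (\<lambda>x h. G (Kf u s (Aci x + t x)) (DKf Du Ds (Aci x + t x) (Aci h + Dt x h)))
      (Lg * (1 + Lc) * Lm1) ((Ng * (1 + Lc)\<^sup>2 + Lg * mu) * Lm1\<^sup>2 + Lg * (1 + Lc) * (0 + Nt))"
    using C11_comp[OF subc subc C11_gK[OF u s] C11_Phi[OF t]] Lg0 Lc0 Ng0 mu_props(2) Lt_props(4) by simp
  note c4 = C11_add[OF subc subs c2 ps_C11[OF c3]]
  show ?thesis unfolding stepS_def[abs_def] DstepS_def[abs_def]
  proof (rule C11_mono[OF c4])
    show "asn * (Ls * Lm1) + 1 * (Lg * (1 + Lc) * Lm1) \<le> Ls" using Ls_props(2) by (simp add: algebra_simps)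
    have "asn * (mu * Lm1\<^sup>2 + Ls * (0 + Nt)) + 1 * ((Ng * (1 + Lc)\<^sup>2 + Lg * mu) * Lm1\<^sup>2 + Lg * (1 + Lc) * (0 + Nt))
       = th2s * mu + Cg * Lm1\<^sup>2"
      unfolding th2s_def Cg_def Nt_def by (simp add: power2_eq_square power3_eq_cube algebra_simps)
    then show "asn * (mu * Lm1\<^sup>2 + Ls * (0 + Nt)) + 1 * ((Ng * (1 + Lc)\<^sup>2 + Lg * mu) * Lm1\<^sup>2 + Lg * (1 + Lc) * (0 + Nt)) \<le> mu"
      using mu_props(5) by (simp add: algebra_simps)
  qed
qed

end

context cm_data begin

interpretation A: bounded_linear A by (rule A_lin)

lemma norm3b: "norm (a + b - c) \<le> norm a + norm b + norm (c::'a)"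
proof -
  have "norm (a + b - c) \<le> norm (a + b) + norm c" by (rule norm_triangle_ineq4)
  moreover have "norm (a + b) \<le> norm a + norm b" by (rule norm_triangle_ineq)
  ultimately show ?thesis by linarith
qed

definition "Br = ac * Bk + Bg + Bk"
definition "Bt = aci * Br"
definition "Bu = aui * Bg / (1 - aui)"
definition "Bs = Bg / (1 - asn)"

lemma Bk0: "0 \<le> Bk" using Bk[OF z_c] norm_ge_zero order_trans by blast

lemma B_props: "0 \<le> Br" "0 \<le> Bt" "0 \<le> Bu" "0 \<le> Bs" "aui * (Bu + Bg) = Bu" "asn * Bs + Bg = Bs"
proof -
  have a1: "1 - aui > 0" using aui_lt1 by simp
  have a2: "1 - asn > 0" using asn_lt1 by simp
  show b: "0 \<le> Br" unfolding Br_def using consts_basic Bk0 Bg0 by simp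
  show "0 \<le> Bt" unfolding Bt_def using b consts_basic by simp
  show "0 \<le> Bu" unfolding Bu_def using a1 consts_basic Bg0 by simp
  show "0 \<le> Bs" unfolding Bs_def using a2 Bg0 by simp
  show "aui * (Bu + Bg) = Bu" unfolding Bu_def using a1 by (simp add: field_simps)
  show "asn * Bs + Bg = Bs" unfolding Bs_def using a2 by (simp add: field_simps)
qed

definition Good :: "('a \<Rightarrow> 'a) \<Rightarrow> ('a \<Rightarrow> 'a) \<Rightarrow> ('a \<Rightarrow> 'a) \<Rightarrow> ('a \<Rightarrow> 'a) \<Rightarrow> bool" where
  "Good r t u s \<longleftrightarrow>
    (\<exists>Dr Dt Du Ds. C11 Xc Xc r Dr Lr mu \<and> C11 Xc Xc t Dt Lt Nt \<and> C11 Xc Xu u Du Lu mu \<and> C11 Xc Xs s Ds Ls mu \<and>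
       (\<forall>h\<in>Xc. Dr 0 h = 0 \<and> Dt 0 h = 0 \<and> Du 0 h = 0 \<and> Ds 0 h = 0)) \<and>
    r 0 = 0 \<and> t 0 = 0 \<and> u 0 = 0 \<and> s 0 = 0 \<and>
    (\<forall>x\<in>Xc. norm (r x) \<le> Br \<and> norm (t x) \<le> Bt \<and> norm (u x) \<le> Bu \<and> norm (s x) \<le> Bs)"

lemma C11_zero: "0 \<in> V \<Longrightarrow> 0 \<le> L \<Longrightarrow> 0 \<le> N \<Longrightarrow> C11 W V (\<lambda>x. 0) (\<lambda>x h. 0) L N"
  by (rule C11I) (simp_all add: lin_on_def)

lemma Good_0: "Good (\<lambda>x. 0) (\<lambda>x. 0) (\<lambda>x. 0) (\<lambda>x. 0)"
  unfolding Good_def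
  apply (intro conjI exI[of _ "\<lambda>x h. 0"] ballI C11_zero)
  using z_c z_u z_s Lr_props(1) Lt_props(1) Lu_props(1) Ls_props(1) mu_props(2) Nt0 B_props by simp_all

lemma pzero: "pc 0 = 0" "pu 0 = 0" "ps 0 = 0" using pc_id pu_id ps_id z_c z_u z_s by auto

lemma Good_step:
  assumes "Good r t u s"
  shows "Good (stepR r u s) (stepT r t) (stepU r u s) (stepS t u s)"
proof -
  obtain Dr Dt Du Ds where r: "C11 Xc Xc r Dr Lr mu" and t: "C11 Xc Xc t Dt Lt Nt" and u: "C11 Xc Xu u Du Lu mu"
    and s: "C11 Xc Xs s Ds Ls mu" and D0: "\<forall>h\<in>Xc. Dr 0 h = 0 \<and> Dt 0 h = 0 \<and> Du 0 h = 0 \<and> Ds 0 h = 0"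
    using assms unfolding Good_def by blast
  have z: "r 0 = 0" "t 0 = 0" "u 0 = 0" "s 0 = 0" using assms unfolding Good_def by blast+
  have bd: "\<forall>x\<in>Xc. norm (r x) \<le> Br \<and> norm (t x) \<le> Bt \<and> norm (u x) \<le> Bu \<and> norm (s x) \<le> Bs"
    using assms unfolding Good_def by blast
  have K0': "Kf u s 0 = 0" using K0 z by blast
  have DK0: "DKf Du Ds 0 h = h" if "h \<in> Xc" for h using that D0 KC0 by (simp add: DKf_def)
  have Az: "A 0 = 0" by (rule A.zero)
  have dz: "\<forall>h\<in>Xc. DstepR r Dr u Du s Ds 0 h = 0 \<and> DstepT Dr t Dt 0 h = 0 \<and> DstepU r Dr u Du s Ds 0 h = 0 \<and> DstepS t Dt u Du s Ds 0 h = 0"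
  proof
    fix h assume h: "h \<in> Xc"
    have Ah: "A h \<in> Xc" using A_c h by blast
    have Acih: "Aci h \<in> Xc" using Aci_props h by blast
    show "DstepR r Dr u Du s Ds 0 h = 0 \<and> DstepT Dr t Dt 0 h = 0 \<and> DstepU r Dr u Du s Ds 0 h = 0 \<and> DstepS t Dt u Du s Ds 0 h = 0"
      unfolding DstepR_def DstepT_def DstepU_def DstepS_def
      using K0' DK0[OF h] D0 h Ah Acih KC0 G0 Az z Aci0 Aui0 pzero by simp
  qed
  have fz: "stepR r u s 0 = 0" "stepT r t 0 = 0" "stepU r u s 0 = 0" "stepS t u s 0 = 0"
    unfolding stepR_def stepT_def stepU_def stepS_def using K0' Az z Aci0 Aui0 pzero g0 kc0 by simp_all
  have bnd: "\<forall>x\<in>Xc. norm (stepR r u s x) \<le> Br \<and> norm (stepT r t x) \<le> Bt \<and> norm (stepU r u s x) \<le> Bu \<and> norm (stepS t u s x) \<le> Bs"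
  proof
    fix x assume x: "x \<in> Xc"
    have yx: "A x + r x \<in> Xc" using A_c C11D(1)[OF r x] x subc by (auto simp: subspace_add)
    have px: "Aci x + t x \<in> Xc" using Aci_props C11D(1)[OF t x] x subc by (auto simp: subspace_add)
    have "norm (stepR r u s x) \<le> norm (A (kc x)) + norm (pc (g (Kf u s x))) + norm (kc (A x + r x))"
      unfolding stepR_def by (rule norm3b)
    also have "\<dots> \<le> ac * Bk + Bg + Bk"
    proof -
      have "norm (A (kc x)) \<le> ac * norm (kc x)" using A_bound(1) C11D(1)[OF kc_C11 x] .
      also have "\<dots> \<le> ac * Bk" using Bk[OF x] consts_basic by (simp add: mult_left_mono)
      finally have "norm (A (kc x)) \<le> ac * Bk" .
      moreover have "norm (pc (g (Kf u s x))) \<le> Bg" using norm_pc Bg order_trans by blast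
      moreover have "norm (kc (A x + r x)) \<le> Bk" using Bk[OF yx] .
      ultimately show ?thesis by linarith
    qed
    finally have b1: "norm (stepR r u s x) \<le> Br" unfolding Br_def .
    have "norm (stepT r t x) = norm (Aci (r (Aci x + t x)))" unfolding stepT_def by simp
    also have "\<dots> \<le> aci * norm (r (Aci x + t x))" using Aci_bound(1) C11D(1)[OF r px] .
    also have "\<dots> \<le> aci * Br" using bd px consts_basic by (simp add: mult_left_mono)
    finally have b2: "norm (stepT r t x) \<le> Bt" unfolding Bt_def .
    have uin: "u (A x + r x) - pu (g (Kf u s x)) \<in> Xu" using C11D(1)[OF u yx] pu_in subu by (simp add: subspace_diff)
    have "norm (stepU r u s x) \<le> aui * norm (u (A x + r x) - pu (g (Kf u s x)))"
      unfolding stepU_def using Aui_bound(1)[OF uin] .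
    also have "\<dots> \<le> aui * (Bu + Bg)"
    proof -
      have "norm (u (A x + r x) - pu (g (Kf u s x))) \<le> norm (u (A x + r x)) + norm (pu (g (Kf u s x)))"
        by (rule norm_triangle_ineq4)
      also have "\<dots> \<le> Bu + Bg" using bd yx norm_pu[of "g (Kf u s x)"] Bg[of "Kf u s x"] by force
      finally show ?thesis using consts_basic by (simp add: mult_left_mono)
    qed
    finally have b3: "norm (stepU r u s x) \<le> Bu" using B_props(5) by simp
    have "norm (stepS t u s x) \<le> norm (A (s (Aci x + t x))) + norm (ps (g (Kf u s (Aci x + t x))))"
      unfolding stepS_def by (rule norm_triangle_ineq)
    also have "\<dots> \<le> asn * Bs + Bg"
    proof -
      have "norm (A (s (Aci x + t x))) \<le> asn * norm (s (Aci x + t x))" using A_bound(3) C11D(1)[OF s px] .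
      also have "\<dots> \<le> asn * Bs" using bd px consts_basic by (simp add: mult_left_mono)
      finally have "norm (A (s (Aci x + t x))) \<le> asn * Bs" .
      moreover have "norm (ps (g (Kf u s (Aci x + t x)))) \<le> Bg" using norm_ps Bg order_trans by blast
      ultimately show ?thesis by linarith
    qed
    finally have b4: "norm (stepS t u s x) \<le> Bs" using B_props(6) by simp
    show "norm (stepR r u s x) \<le> Br \<and> norm (stepT r t x) \<le> Bt \<and> norm (stepU r u s x) \<le> Bu \<and> norm (stepS t u s x) \<le> Bs"
      using b1 b2 b3 b4 by blast
  qed
  show ?thesis unfolding Good_def
    using stepR_C11[OF r u s] stepT_C11[OF r t] stepU_C11[OF r u s] stepS_C11[OF t u s] dz fz bnd by blast
qed

end

context cm_data begin

interpretation A: bounded_linear A by (rule A_lin)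

definition "QW q wt \<longleftrightarrow> 0 < q \<and> q < 1 \<and> 0 \<le> wt \<and> Lc + Lg \<le> q \<and> aci * (1 + Lr * wt) \<le> q * wt \<and>
   aui * (1 + Lu + Lg) \<le> q \<and> asn * (1 + Ls * wt) + Lg * ((1 + Lc) * wt + 1) \<le> q"

lemma QW_exists: "\<exists>q wt. QW q wt"
proof -
  define f where "f q = asn * (1 + Ls * (aci / (q - aci * Lr))) + Lg * ((1 + Lc) * (aci / (q - aci * Lr)) + 1)" for q
  have d: "1 - aci * Lr > 0" using SN_facts(2) by (simp add: mult.commute)
  have lm: "aci / (1 - aci * Lr) = Lm1" using Lt_props(2) d by (simp add: field_simps)
  have f1: "f 1 < 1"
  proof -
    have "f 1 = Lm1^0 * (asn * (1 + Lm1 * Ls) + Lg * (1 + Lm1 * (1 + Lc)))"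
      unfolding f_def lm by (simp add: algebra_simps)
    then show ?thesis using SN_facts(7)[of 0] by simp
  qed
  define c0 where "c0 = max (Lc + Lg) (max (aui * (1 + Lu + Lg)) (aci * Lr))"
  have c0: "c0 < 1" unfolding c0_def using SN_facts(5)[of "0::nat"] SN_facts(6)[of 0] d
    by (simp add: algebra_simps)
  have ev1: "\<forall>\<^sub>F q in at_left 1. c0 < q"
    by (rule order_tendstoD(1)[OF _ c0]) (rule tendsto_ident_at)
  have ev2: "\<forall>\<^sub>F q in at_left (1::real). q \<in> {0<..<1}"
    by (rule eventually_at_left_real) simp
  have "((\<lambda>q. q - f q) \<longlongrightarrow> 1 - f 1) (at_left 1)"
    unfolding f_def by (intro tendsto_intros) (use d in auto)
  then have ev3: "\<forall>\<^sub>F q in at_left 1. 0 < q - f q"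
    by (rule order_tendstoD(1)) (use f1 in simp)
  have "\<forall>\<^sub>F q in at_left 1. c0 < q \<and> q \<in> {0<..<1} \<and> 0 < q - f q"
    using eventually_conj[OF ev1 eventually_conj[OF ev2 ev3]] .
  then have "\<exists>q. c0 < q \<and> q \<in> {0<..<1} \<and> 0 < q - f q"
    using eventually_happens trivial_limit_at_left_real[of 1] unfolding trivial_limit_def by blast
  then obtain q where q: "c0 < q" "0 < q" "q < 1" "f q < q" by auto
  have qa: "q - aci * Lr > 0" using q(1) unfolding c0_def by simp
  define wt where "wt = aci / (q - aci * Lr)"
  have wt0: "0 \<le> wt" unfolding wt_def using qa consts_basic by simp
  have "aci * (1 + Lr * wt) = q * wt"
    unfolding wt_def using qa by (simp add: field_simps)
  then have "QW q wt" unfolding QW_def using q wt0 c0_def f_def wt_def by auto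
  then show ?thesis by blast
qed

definition "close wt d r t u s r' t' u' s' \<longleftrightarrow> (\<forall>x\<in>Xc. norm (r x - r' x) \<le> d \<and> norm (t x - t' x) \<le> wt * d \<and>
   norm (u x - u' x) \<le> d \<and> norm (s x - s' x) \<le> d)"

lemma p_diff: "pc (a - b) = pc a - pc b" "pu (a - b) = pu a - pu b" "ps (a - b) = ps a - ps b"
  using lin_on_diff[OF lin_on_pc subspace_UNIV] lin_on_diff[OF lin_on_pu subspace_UNIV]
    lin_on_diff[OF lin_on_ps subspace_UNIV] by auto

lemma tri: "norm (a - c) \<le> norm (a - b) + norm (b - (c::'a))"
proof -
  have "a - c = (a - b) + (b - c)" by simp
  then show ?thesis by (metis norm_triangle_ineq)
qed

lemma Good_C11:
  assumes "Good r t u s"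
  obtains Dr Dt Du Ds where "C11 Xc Xc r Dr Lr mu" "C11 Xc Xc t Dt Lt Nt" "C11 Xc Xu u Du Lu mu" "C11 Xc Xs s Ds Ls mu"
  using assms unfolding Good_def by blast

lemma contract:
  assumes G1: "Good r t u s" and G2: "Good r' t' u' s'" and QW: "QW q wt" and d0: "0 \<le> d"
    and cl: "close wt d r t u s r' t' u' s'"
  shows "close wt (q * d) (stepR r u s) (stepT r t) (stepU r u s) (stepS t u s) (stepR r' u' s') (stepT r' t') (stepU r' u' s') (stepS t' u' s')"
  unfolding close_def
proof (intro ballI conjI)
  obtain Dr Dt Du Ds where r: "C11 Xc Xc r Dr Lr mu" and t: "C11 Xc Xc t Dt Lt Nt" and u: "C11 Xc Xu u Du Lu mu"
    and s: "C11 Xc Xs s Ds Ls mu" using Good_C11[OF G1] by blast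
  obtain Dr' Dt' Du' Ds' where r': "C11 Xc Xc r' Dr' Lr mu" and t': "C11 Xc Xc t' Dt' Lt Nt" and u': "C11 Xc Xu u' Du' Lu mu"
    and s': "C11 Xc Xs s' Ds' Ls mu" using Good_C11[OF G2] by blast
  have q: "0 < q" "q < 1" "0 \<le> wt" "Lc + Lg \<le> q" "aci * (1 + Lr * wt) \<le> q * wt"
    "aui * (1 + Lu + Lg) \<le> q" "asn * (1 + Ls * wt) + Lg * ((1 + Lc) * wt + 1) \<le> q"
    using QW unfolding QW_def by auto
  have cd: "norm (r x - r' x) \<le> d" "norm (t x - t' x) \<le> wt * d" "norm (u x - u' x) \<le> d" "norm (s x - s' x) \<le> d"
    if "x \<in> Xc" for x using cl that unfolding close_def by auto
  have Kd: "norm (Kf u s x - Kf u' s' x) \<le> d" if x: "x \<in> Xc" for x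
  proof -
    have "Kf u s x - Kf u' s' x = 0 + (u x - u' x) + (s x - s' x)" by (simp add: Kf_def algebra_simps)
    moreover have "u x - u' x \<in> Xu" using C11D(1)[OF u x] C11D(1)[OF u' x] subu by (simp add: subspace_diff)
    moreover have "s x - s' x \<in> Xs" using C11D(1)[OF s x] C11D(1)[OF s' x] subs by (simp add: subspace_diff)
    ultimately show ?thesis using norm_c_u_s[OF z_c] cd[OF x] d0 by simp
  qed
  have gL: "norm (g a - g b) \<le> Lg * norm (a - b)" for a b using C11D(5)[OF g_C11] by simp
  have Kl: "norm (Kf u s z - Kf u s x) \<le> (1 + Lc) * norm (z - x)" if "x \<in> Xc" "z \<in> Xc" for x z
    using C11D(5)[OF C11_K[OF u s] that] .
  fix x assume x: "x \<in> Xc"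
  have yx: "A x + r x \<in> Xc" using A_c C11D(1)[OF r x] x subc by (auto simp: subspace_add)
  have yx': "A x + r' x \<in> Xc" using A_c C11D(1)[OF r' x] x subc by (auto simp: subspace_add)
  have px: "Aci x + t x \<in> Xc" using Aci_props C11D(1)[OF t x] x subc by (auto simp: subspace_add)
  have px': "Aci x + t' x \<in> Xc" using Aci_props C11D(1)[OF t' x] x subc by (auto simp: subspace_add)
  show "norm (stepR r u s x - stepR r' u' s' x) \<le> q * d"
  proof -
    have "stepR r u s x - stepR r' u' s' x = (pc (g (Kf u s x)) - pc (g (Kf u' s' x))) - (kc (A x + r x) - kc (A x + r' x))"
      unfolding stepR_def by (simp add: algebra_simps)
    also have "\<dots> = pc (g (Kf u s x) - g (Kf u' s' x)) - (kc (A x + r x) - kc (A x + r' x))"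
      by (simp only: p_diff)
    finally have "norm (stepR r u s x - stepR r' u' s' x) \<le> norm (pc (g (Kf u s x) - g (Kf u' s' x))) + norm (kc (A x + r x) - kc (A x + r' x))"
      by (simp add: norm_triangle_ineq4)
    also have "\<dots> \<le> norm (g (Kf u s x) - g (Kf u' s' x)) + norm (kc (A x + r x) - kc (A x + r' x))"
      using norm_pc by simp
    also have "\<dots> \<le> Lg * d + Lc * d"
    proof -
      have "norm (g (Kf u s x) - g (Kf u' s' x)) \<le> Lg * d" using gL[of "Kf u s x" "Kf u' s' x"] Kd[OF x] Lg0
        by (meson mult_left_mono order_trans)
      moreover have "norm (kc (A x + r x) - kc (A x + r' x)) \<le> Lc * d"
        using C11D(5)[OF kc_C11 yx' yx] cd(1)[OF x] Lc0 by (simp add: mult_left_mono order_trans)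
      ultimately show ?thesis by linarith
    qed
    also have "\<dots> \<le> q * d" using q(4) d0 by (simp add: distrib_right[symmetric] mult_right_mono)
    finally show ?thesis .
  qed
  show "norm (stepT r t x - stepT r' t' x) \<le> wt * (q * d)"
  proof -
    have i1: "r (Aci x + t x) \<in> Xc" "r' (Aci x + t' x) \<in> Xc" using C11D(1)[OF r px] C11D(1)[OF r' px'] by auto
    have "stepT r t x - stepT r' t' x = Aci (r' (Aci x + t' x) - r (Aci x + t x))"
      unfolding stepT_def using lin_on_diff[OF lin_Aci subc i1(2) i1(1)] by simp
    moreover have "r' (Aci x + t' x) - r (Aci x + t x) \<in> Xc" using i1 subc by (simp add: subspace_diff)
    ultimately have "norm (stepT r t x - stepT r' t' x) \<le> aci * norm (r' (Aci x + t' x) - r (Aci x + t x))"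
      using Aci_bound(1) by simp
    also have "\<dots> \<le> aci * (Lr * (wt * d) + d)"
    proof -
      have "norm (r' (Aci x + t' x) - r (Aci x + t x)) \<le> norm (r (Aci x + t x) - r (Aci x + t' x)) + norm (r (Aci x + t' x) - r' (Aci x + t' x))"
        using tri[of "r (Aci x + t x)" "r' (Aci x + t' x)" "r (Aci x + t' x)"] by (simp add: norm_minus_commute)
      also have "\<dots> \<le> Lr * (wt * d) + d"
      proof -
        have "norm (r (Aci x + t x) - r (Aci x + t' x)) \<le> Lr * norm (Aci x + t x - (Aci x + t' x))"
          using C11D(5)[OF r px' px] .
        also have "\<dots> \<le> Lr * (wt * d)" using cd(2)[OF x] Lr_props(1) by (simp add: mult_left_mono)
        finally show ?thesis using cd(1)[OF px'] by linarith
      qed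
      finally show ?thesis using consts_basic by (simp add: mult_left_mono)
    qed
    also have "\<dots> = aci * (1 + Lr * wt) * d" by (simp add: algebra_simps)
    also have "\<dots> \<le> q * wt * d" using q(5) d0 by (simp add: mult_right_mono)
    finally show ?thesis by (simp add: algebra_simps)
  qed
  show "norm (stepU r u s x - stepU r' u' s' x) \<le> q * d"
  proof -
    have i1: "u (A x + r x) - pu (g (Kf u s x)) \<in> Xu" "u' (A x + r' x) - pu (g (Kf u' s' x)) \<in> Xu"
      using C11D(1)[OF u yx] C11D(1)[OF u' yx'] pu_in subu by (simp_all add: subspace_diff)
    have "stepU r u s x - stepU r' u' s' x = Aui ((u (A x + r x) - pu (g (Kf u s x))) - (u' (A x + r' x) - pu (g (Kf u' s' x))))"
      unfolding stepU_def using lin_on_diff[OF lin_Aui subu i1] by simp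
    moreover have "(u (A x + r x) - pu (g (Kf u s x))) - (u' (A x + r' x) - pu (g (Kf u' s' x))) \<in> Xu"
      using i1 subu by (simp add: subspace_diff)
    ultimately have "norm (stepU r u s x - stepU r' u' s' x) \<le> aui * norm ((u (A x + r x) - pu (g (Kf u s x))) - (u' (A x + r' x) - pu (g (Kf u' s' x))))"
      using Aui_bound(1) by simp
    also have "\<dots> \<le> aui * (Lu * d + d + Lg * d)"
    proof -
      have e: "(u (A x + r x) - pu (g (Kf u s x))) - (u' (A x + r' x) - pu (g (Kf u' s' x)))
         = (u (A x + r x) - u (A x + r' x)) + (u (A x + r' x) - u' (A x + r' x)) - pu (g (Kf u s x) - g (Kf u' s' x))"
        by (simp add: p_diff algebra_simps)
      have n1: "norm (u (A x + r x) - u (A x + r' x)) \<le> Lu * d"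
        using C11D(5)[OF u yx' yx] cd(1)[OF x] Lu_props(1) by (simp add: mult_left_mono order_trans)
      have n2: "norm (u (A x + r' x) - u' (A x + r' x)) \<le> d" using cd(3)[OF yx'] .
      have n3: "norm (pu (g (Kf u s x) - g (Kf u' s' x))) \<le> Lg * d"
        using norm_pu gL[of "Kf u s x" "Kf u' s' x"] Kd[OF x] Lg0 by (meson mult_left_mono order_trans)
      have "norm ((u (A x + r x) - pu (g (Kf u s x))) - (u' (A x + r' x) - pu (g (Kf u' s' x)))) \<le> Lu * d + d + Lg * d"
        unfolding e using n1 n2 n3 norm3b by (smt (verit, best))
      then show ?thesis using consts_basic by (simp add: mult_left_mono)
    qed
    also have "\<dots> = aui * (1 + Lu + Lg) * d" by (simp add: algebra_simps)
    also have "\<dots> \<le> q * d" using q(6) d0 by (simp add: mult_right_mono)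
    finally show ?thesis .
  qed
  show "norm (stepS t u s x - stepS t' u' s' x) \<le> q * d"
  proof -
    have i1: "s (Aci x + t x) \<in> Xs" "s' (Aci x + t' x) \<in> Xs" using C11D(1)[OF s px] C11D(1)[OF s' px'] by auto
    have e: "stepS t u s x - stepS t' u' s' x = A (s (Aci x + t x) - s' (Aci x + t' x)) + ps (g (Kf u s (Aci x + t x)) - g (Kf u' s' (Aci x + t' x)))"
      unfolding stepS_def by (simp add: p_diff A.diff algebra_simps)
    have n1: "norm (A (s (Aci x + t x) - s' (Aci x + t' x))) \<le> asn * (Ls * (wt * d) + d)"
    proof -
      have "s (Aci x + t x) - s' (Aci x + t' x) \<in> Xs" using i1 subs by (simp add: subspace_diff)
      then have "norm (A (s (Aci x + t x) - s' (Aci x + t' x))) \<le> asn * norm (s (Aci x + t x) - s' (Aci x + t' x))"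
        using A_bound(3) by blast
      also have "\<dots> \<le> asn * (Ls * (wt * d) + d)"
      proof -
        have "norm (s (Aci x + t x) - s' (Aci x + t' x)) \<le> norm (s (Aci x + t x) - s (Aci x + t' x)) + norm (s (Aci x + t' x) - s' (Aci x + t' x))"
          by (rule tri)
        also have "\<dots> \<le> Ls * (wt * d) + d"
        proof -
          have "norm (s (Aci x + t x) - s (Aci x + t' x)) \<le> Ls * norm (Aci x + t x - (Aci x + t' x))"
            using C11D(5)[OF s px' px] .
          also have "\<dots> \<le> Ls * (wt * d)" using cd(2)[OF x] Ls_props(1) by (simp add: mult_left_mono)
          finally show ?thesis using cd(4)[OF px'] by linarith
        qed
        finally show ?thesis using consts_basic by (simp add: mult_left_mono)
      qed
      finally show ?thesis .
    qed
    have n2: "norm (ps (g (Kf u s (Aci x + t x)) - g (Kf u' s' (Aci x + t' x)))) \<le> Lg * ((1 + Lc) * (wt * d) + d)"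
    proof -
      have "norm (Kf u s (Aci x + t x) - Kf u' s' (Aci x + t' x)) \<le> norm (Kf u s (Aci x + t x) - Kf u s (Aci x + t' x)) + norm (Kf u s (Aci x + t' x) - Kf u' s' (Aci x + t' x))"
        by (rule tri)
      also have "\<dots> \<le> (1 + Lc) * (wt * d) + d"
      proof -
        have "norm (Kf u s (Aci x + t x) - Kf u s (Aci x + t' x)) \<le> (1 + Lc) * norm (Aci x + t x - (Aci x + t' x))"
          using Kl[OF px' px] .
        also have "\<dots> \<le> (1 + Lc) * (wt * d)" using cd(2)[OF x] Lc0 by (simp add: mult_left_mono)
        finally show ?thesis using Kd[OF px'] by linarith
      qed
      finally have "norm (Kf u s (Aci x + t x) - Kf u' s' (Aci x + t' x)) \<le> (1 + Lc) * (wt * d) + d" .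
      then show ?thesis using norm_ps gL Lg0 by (meson mult_left_mono order_trans)
    qed
    have "norm (stepS t u s x - stepS t' u' s' x) \<le> asn * (Ls * (wt * d) + d) + Lg * ((1 + Lc) * (wt * d) + d)"
      unfolding e using n1 n2 norm_triangle_ineq by (smt (verit, best))
    also have "\<dots> = (asn * (1 + Ls * wt) + Lg * ((1 + Lc) * wt + 1)) * d" by (simp add: algebra_simps)
    also have "\<dots> \<le> q * d" using q(7) d0 by (simp add: mult_right_mono)
    finally show ?thesis .
  qed
qed

end

lemma geo_aux:
  fixes F :: "nat \<Rightarrow> 'a \<Rightarrow> 'b::real_normed_vector"
  assumes st: "\<And>k x. x \<in> W \<Longrightarrow> norm (F (Suc k) x - F k x) \<le> c * q^k" and c: "0 \<le> c" and q: "0 \<le> q" "q < 1"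
    and x: "x \<in> W"
  shows "norm (F (k + j) x - F k x) \<le> c * q^k / (1 - q)"
proof -
  have "norm (F (k + j) x - F k x) \<le> c * q^k * (1 - q^j) / (1 - q)"
  proof (induction j)
    case 0 then show ?case by simp
  next
    case (Suc j)
    have "norm (F (k + Suc j) x - F k x) \<le> norm (F (Suc (k + j)) x - F (k + j) x) + norm (F (k + j) x - F k x)"
      using norm_triangle_ineq[of "F (Suc (k + j)) x - F (k + j) x" "F (k + j) x - F k x"] by simp
    also have "\<dots> \<le> c * q^(k + j) + c * q^k * (1 - q^j) / (1 - q)" using st[OF x] Suc by (simp add: add_mono)
    also have "\<dots> = c * q^k * (1 - q^Suc j) / (1 - q)" using q by (simp add: field_simps power_add)
    finally show ?case .
  qed
  also have "\<dots> \<le> c * q^k / (1 - q)"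
  proof -
    have "c * q^k * (1 - q^j) \<le> c * q^k" using c q by (simp add: mult_left_le)
    then show ?thesis using q by (simp add: divide_right_mono)
  qed
  finally show ?thesis .
qed

lemma geo_conv:
  fixes F :: "nat \<Rightarrow> 'a \<Rightarrow> 'b::banach"
  assumes st: "\<And>k x. x \<in> W \<Longrightarrow> norm (F (Suc k) x - F k x) \<le> c * q^k" and c: "0 \<le> c" and q: "0 \<le> q" "q < 1"
  shows "\<And>e. e > 0 \<Longrightarrow> \<exists>K. \<forall>m\<ge>K. \<forall>k\<ge>K. \<forall>x\<in>W. norm (F m x - F k x) \<le> e"
    and "\<And>x. x \<in> W \<Longrightarrow> (\<lambda>k. F k x) \<longlonglongrightarrow> lim (\<lambda>k. F k x)"
    and "\<And>x k. x \<in> W \<Longrightarrow> norm (lim (\<lambda>k. F k x) - F k x) \<le> c * q^k / (1 - q)"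
proof -
  have ga: "norm (F m x - F k x) \<le> c * q^k / (1 - q)" if "x \<in> W" "k \<le> m" for x k m
    using geo_aux[where F=F and W=W and c=c and q=q and x=x and k=k and j="m - k"] st c q that by simp
  have t0: "(\<lambda>k. 2 * (c * q^k / (1 - q))) \<longlonglongrightarrow> 0"
  proof -
    have "(\<lambda>k. 2 * (c * q^k / (1 - q))) \<longlonglongrightarrow> 2 * (c * 0 / (1 - q))"
      by (intro tendsto_intros LIMSEQ_power_zero) (use q in auto)
    then show ?thesis by simp
  qed
  show uc: "\<exists>K. \<forall>m\<ge>K. \<forall>k\<ge>K. \<forall>x\<in>W. norm (F m x - F k x) \<le> e" if e: "e > 0" for e
  proof -
    obtain K where K: "\<forall>k\<ge>K. 2 * (c * q^k / (1 - q)) < e"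
      using order_tendstoD(2)[OF t0 e] unfolding eventually_sequentially by blast
    show ?thesis
    proof (intro exI[of _ K] allI impI ballI)
      fix m k x assume m: "K \<le> m" and k: "K \<le> k" and x: "x \<in> W"
      have "norm (F m x - F k x) \<le> norm (F m x - F K x) + norm (F K x - F k x)"
        using norm_triangle_ineq[of "F m x - F K x" "F K x - F k x"] by simp
      also have "\<dots> \<le> c * q^K / (1 - q) + c * q^K / (1 - q)"
        using ga[OF x m] ga[OF x k] by (simp add: norm_minus_commute add_mono)
      also have "\<dots> < e" using K by auto
      finally show "norm (F m x - F k x) \<le> e" by simp
    qed
  qed
  show conv: "(\<lambda>k. F k x) \<longlonglongrightarrow> lim (\<lambda>k. F k x)" if x: "x \<in> W" for x
  proof -
    have "Cauchy (\<lambda>k. F k x)"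
      unfolding Cauchy_def
    proof (intro allI impI)
      fix e :: real assume "e > 0"
      then obtain K where "\<forall>m\<ge>K. \<forall>k\<ge>K. \<forall>x\<in>W. norm (F m x - F k x) \<le> e / 2" using uc[of "e/2"] by auto
      then show "\<exists>M. \<forall>m\<ge>M. \<forall>n\<ge>M. dist (F m x) (F n x) < e"
      proof (intro exI[of _ K] allI impI)
        fix m n assume "\<forall>m\<ge>K. \<forall>k\<ge>K. \<forall>x\<in>W. norm (F m x - F k x) \<le> e / 2" "K \<le> m" "K \<le> n"
        then have "norm (F m x - F n x) \<le> e / 2" using x by blast
        then show "dist (F m x) (F n x) < e" using \<open>e > 0\<close> by (simp add: dist_norm)
      qed
    qed
    then show ?thesis using Cauchy_convergent convergent_LIMSEQ_iff by blast
  qed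
  show "norm (lim (\<lambda>k. F k x) - F k x) \<le> c * q^k / (1 - q)" if x: "x \<in> W" for x k
  proof -
    have "(\<lambda>m. F m x - F k x) \<longlonglongrightarrow> lim (\<lambda>k. F k x) - F k x" by (intro tendsto_intros conv x)
    then show ?thesis
      by (rule LIMSEQ_le_const2[OF tendsto_norm]) (use ga[OF x] in auto)
  qed
qed

context cm_data begin

definition "stepX X = (case X of (r, t, u, s) \<Rightarrow> (stepR r u s, stepT r t, stepU r u s, stepS t u s))"
definition "itX k = (stepX ^^ k) ((\<lambda>x. 0), (\<lambda>x. 0), (\<lambda>x. 0), (\<lambda>x. 0))"
definition "Rk k = fst (itX k)"
definition "Tk k = fst (snd (itX k))"
definition "Uk k = fst (snd (snd (itX k)))"
definition "Sk k = snd (snd (snd (itX k)))"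

lemma it_0: "Rk 0 = (\<lambda>x. 0)" "Tk 0 = (\<lambda>x. 0)" "Uk 0 = (\<lambda>x. 0)" "Sk 0 = (\<lambda>x. 0)"
  by (simp_all add: Rk_def Tk_def Uk_def Sk_def itX_def)

lemma it_Suc: "Rk (Suc k) = stepR (Rk k) (Uk k) (Sk k)" "Tk (Suc k) = stepT (Rk k) (Tk k)"
  "Uk (Suc k) = stepU (Rk k) (Uk k) (Sk k)" "Sk (Suc k) = stepS (Tk k) (Uk k) (Sk k)"
proof -
  have e: "itX k = (Rk k, Tk k, Uk k, Sk k)" by (simp add: Rk_def Tk_def Uk_def Sk_def)
  have "itX (Suc k) = stepX (itX k)" by (simp add: itX_def)
  then have "itX (Suc k) = (stepR (Rk k) (Uk k) (Sk k), stepT (Rk k) (Tk k), stepU (Rk k) (Uk k) (Sk k), stepS (Tk k) (Uk k) (Sk k))"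
    unfolding e stepX_def by simp
  then show "Rk (Suc k) = stepR (Rk k) (Uk k) (Sk k)" "Tk (Suc k) = stepT (Rk k) (Tk k)"
    "Uk (Suc k) = stepU (Rk k) (Uk k) (Sk k)" "Sk (Suc k) = stepS (Tk k) (Uk k) (Sk k)"
    by (simp_all add: Rk_def Tk_def Uk_def Sk_def)
qed

lemma it_Good: "Good (Rk k) (Tk k) (Uk k) (Sk k)"
  by (induction k) (simp_all add: it_0 it_Suc Good_0 Good_step)

definition "d0 = max Br (max Bu Bs)"

lemma it_close:
  assumes QW: "QW q wt"
  shows "close wt (q^k * d0) (Rk k) (Tk k) (Uk k) (Sk k) (Rk (Suc k)) (Tk (Suc k)) (Uk (Suc k)) (Sk (Suc k))"
proof (induction k)
  case 0
  have wt: "0 \<le> wt" using QW unfolding QW_def by auto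
  have dd: "0 \<le> d0" unfolding d0_def using B_props by (simp add: le_max_iff_disj)
  have G1: "Good (Rk 1) (Tk 1) (Uk 1) (Sk 1)" using it_Good .
  have T1: "Tk 1 x = 0" for x using it_Suc(2)[of 0] it_0 Aci0 by (simp add: stepT_def)
  show ?case unfolding close_def
  proof (intro ballI conjI)
    fix x assume x: "x \<in> Xc"
    have b: "norm (Rk 1 x) \<le> Br" "norm (Uk 1 x) \<le> Bu" "norm (Sk 1 x) \<le> Bs"
      using G1 x unfolding Good_def by auto
    show "norm (Rk 0 x - Rk (Suc 0) x) \<le> q ^ 0 * d0" using b unfolding d0_def it_0 by simp
    show "norm (Tk 0 x - Tk (Suc 0) x) \<le> wt * (q ^ 0 * d0)" using T1 wt dd it_0 by simp
    show "norm (Uk 0 x - Uk (Suc 0) x) \<le> q ^ 0 * d0" using b unfolding d0_def it_0 by simp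
    show "norm (Sk 0 x - Sk (Suc 0) x) \<le> q ^ 0 * d0" using b unfolding d0_def it_0 by simp
  qed
next
  case (Suc k)
  have q: "0 \<le> q" using QW unfolding QW_def by auto
  have dd: "0 \<le> d0" unfolding d0_def using B_props by (simp add: le_max_iff_disj)
  have "close wt (q * (q^k * d0)) (Rk (Suc k)) (Tk (Suc k)) (Uk (Suc k)) (Sk (Suc k)) (Rk (Suc (Suc k))) (Tk (Suc (Suc k))) (Uk (Suc (Suc k))) (Sk (Suc (Suc k)))"
    using contract[OF it_Good[of k] it_Good[of "Suc k"] QW _ Suc] q dd
    unfolding it_Suc[of k, symmetric] it_Suc[of "Suc k", symmetric] by simp
  then show ?case by (simp add: mult.assoc)
qed

end

lemma limit_eq:
  fixes y z :: "'a::real_normed_vector"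
  assumes "\<And>k. norm (y - F (Suc k)) \<le> q * c k" "\<And>k. norm (z - F k) \<le> c k" "c \<longlonglongrightarrow> 0"
  shows "y = z"
proof -
  have b: "norm (y - z) \<le> q * c k + c (Suc k)" for k
  proof -
    have "y - z = (y - F (Suc k)) + (F (Suc k) - z)" by simp
    then have "norm (y - z) \<le> norm (y - F (Suc k)) + norm (F (Suc k) - z)" by (metis norm_triangle_ineq)
    also have "\<dots> \<le> q * c k + c (Suc k)" using assms(1)[of k] assms(2)[of "Suc k"] by (simp add: norm_minus_commute)
    finally show ?thesis .
  qed
  have "(\<lambda>k. q * c k + c (Suc k)) \<longlonglongrightarrow> q * 0 + 0"
    by (intro tendsto_intros assms(3) LIMSEQ_Suc)
  then have "norm (y - z) \<le> q * 0 + 0" by (rule LIMSEQ_le_const) (use b in auto)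
  then show ?thesis by simp
qed

context cm_data begin

lemma main_exists:
  "\<exists>r Dr t Dt u Du s Ds. C11 Xc Xc r Dr Lr mu \<and> C11 Xc Xc t Dt Lt Nt \<and> C11 Xc Xu u Du Lu mu \<and> C11 Xc Xs s Ds Ls mu \<and>
     (\<forall>h\<in>Xc. Dr 0 h = 0 \<and> Dt 0 h = 0 \<and> Du 0 h = 0 \<and> Ds 0 h = 0) \<and>
     r 0 = 0 \<and> t 0 = 0 \<and> u 0 = 0 \<and> s 0 = 0 \<and>
     (\<forall>x\<in>Xc. norm (r x) \<le> Br \<and> norm (t x) \<le> Bt \<and> norm (u x) \<le> Bu \<and> norm (s x) \<le> Bs) \<and>
     (\<forall>x\<in>Xc. stepR r u s x = r x \<and> stepT r t x = t x \<and> stepU r u s x = u x \<and> stepS t u s x = s x)"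
proof -
  obtain q wt where QW: "QW q wt" using QW_exists by blast
  have q: "0 \<le> q" "q < 1" "0 \<le> wt" using QW unfolding QW_def by auto
  have dd: "0 \<le> d0" unfolding d0_def using B_props by (simp add: le_max_iff_disj)
  have cl: "\<And>k x. x \<in> Xc \<Longrightarrow> norm (Rk (Suc k) x - Rk k x) \<le> d0 * q^k \<and> norm (Tk (Suc k) x - Tk k x) \<le> (wt * d0) * q^k \<and>
      norm (Uk (Suc k) x - Uk k x) \<le> d0 * q^k \<and> norm (Sk (Suc k) x - Sk k x) \<le> d0 * q^k"
    using it_close[OF QW] unfolding close_def by (simp add: norm_minus_commute algebra_simps)
  have wd: "0 \<le> wt * d0" using q dd by simp
  have sR: "\<And>k x. x \<in> Xc \<Longrightarrow> norm (Rk (Suc k) x - Rk k x) \<le> d0 * q^k" using cl by blast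
  have sT: "\<And>k x. x \<in> Xc \<Longrightarrow> norm (Tk (Suc k) x - Tk k x) \<le> (wt * d0) * q^k" using cl by blast
  have sU: "\<And>k x. x \<in> Xc \<Longrightarrow> norm (Uk (Suc k) x - Uk k x) \<le> d0 * q^k" using cl by blast
  have sS: "\<And>k x. x \<in> Xc \<Longrightarrow> norm (Sk (Suc k) x - Sk k x) \<le> d0 * q^k" using cl by blast
  have gR1: "\<And>e. e > 0 \<Longrightarrow> \<exists>K. \<forall>m\<ge>K. \<forall>k\<ge>K. \<forall>x\<in>Xc. norm (Rk m x - Rk k x) \<le> e"
    using geo_conv(1)[where F=Rk and W=Xc and c=d0 and q=q, OF sR dd q(1) q(2)] by blast
  have gR2: "\<And>x. x \<in> Xc \<Longrightarrow> (\<lambda>k. Rk k x) \<longlonglongrightarrow> lim (\<lambda>k. Rk k x)"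
    using geo_conv(2)[where F=Rk and W=Xc and c=d0 and q=q, OF sR dd q(1) q(2)] by blast
  have gR3: "\<And>x k. x \<in> Xc \<Longrightarrow> norm (lim (\<lambda>k. Rk k x) - Rk k x) \<le> (d0) * q^k / (1 - q)"
    using geo_conv(3)[where F=Rk and W=Xc and c=d0 and q=q, OF sR dd q(1) q(2)] by blast
  have gT1: "\<And>e. e > 0 \<Longrightarrow> \<exists>K. \<forall>m\<ge>K. \<forall>k\<ge>K. \<forall>x\<in>Xc. norm (Tk m x - Tk k x) \<le> e"
    using geo_conv(1)[where F=Tk and W=Xc and c="wt * d0" and q=q, OF sT wd q(1) q(2)] by blast
  have gT2: "\<And>x. x \<in> Xc \<Longrightarrow> (\<lambda>k. Tk k x) \<longlonglongrightarrow> lim (\<lambda>k. Tk k x)"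
    using geo_conv(2)[where F=Tk and W=Xc and c="wt * d0" and q=q, OF sT wd q(1) q(2)] by blast
  have gT3: "\<And>x k. x \<in> Xc \<Longrightarrow> norm (lim (\<lambda>k. Tk k x) - Tk k x) \<le> (wt * d0) * q^k / (1 - q)"
    using geo_conv(3)[where F=Tk and W=Xc and c="wt * d0" and q=q, OF sT wd q(1) q(2)] by blast
  have gU1: "\<And>e. e > 0 \<Longrightarrow> \<exists>K. \<forall>m\<ge>K. \<forall>k\<ge>K. \<forall>x\<in>Xc. norm (Uk m x - Uk k x) \<le> e"
    using geo_conv(1)[where F=Uk and W=Xc and c=d0 and q=q, OF sU dd q(1) q(2)] by blast
  have gU2: "\<And>x. x \<in> Xc \<Longrightarrow> (\<lambda>k. Uk k x) \<longlonglongrightarrow> lim (\<lambda>k. Uk k x)"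
    using geo_conv(2)[where F=Uk and W=Xc and c=d0 and q=q, OF sU dd q(1) q(2)] by blast
  have gU3: "\<And>x k. x \<in> Xc \<Longrightarrow> norm (lim (\<lambda>k. Uk k x) - Uk k x) \<le> (d0) * q^k / (1 - q)"
    using geo_conv(3)[where F=Uk and W=Xc and c=d0 and q=q, OF sU dd q(1) q(2)] by blast
  have gS1: "\<And>e. e > 0 \<Longrightarrow> \<exists>K. \<forall>m\<ge>K. \<forall>k\<ge>K. \<forall>x\<in>Xc. norm (Sk m x - Sk k x) \<le> e"
    using geo_conv(1)[where F=Sk and W=Xc and c=d0 and q=q, OF sS dd q(1) q(2)] by blast
  have gS2: "\<And>x. x \<in> Xc \<Longrightarrow> (\<lambda>k. Sk k x) \<longlonglongrightarrow> lim (\<lambda>k. Sk k x)"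
    using geo_conv(2)[where F=Sk and W=Xc and c=d0 and q=q, OF sS dd q(1) q(2)] by blast
  have gS3: "\<And>x k. x \<in> Xc \<Longrightarrow> norm (lim (\<lambda>k. Sk k x) - Sk k x) \<le> (d0) * q^k / (1 - q)"
    using geo_conv(3)[where F=Sk and W=Xc and c=d0 and q=q, OF sS dd q(1) q(2)] by blast
  define r where "r x = lim (\<lambda>k. Rk k x)" for x
  define t where "t x = lim (\<lambda>k. Tk k x)" for x
  define u where "u x = lim (\<lambda>k. Uk k x)" for x
  define s where "s x = lim (\<lambda>k. Sk k x)" for x
  have "\<forall>k. \<exists>D. C11 Xc Xc (Rk k) (fst D) Lr mu \<and> C11 Xc Xc (Tk k) (fst (snd D)) Lt Nt \<and>
      C11 Xc Xu (Uk k) (fst (snd (snd D))) Lu mu \<and> C11 Xc Xs (Sk k) (snd (snd (snd D))) Ls mu \<and>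
      (\<forall>h\<in>Xc. fst D 0 h = 0 \<and> fst (snd D) 0 h = 0 \<and> fst (snd (snd D)) 0 h = 0 \<and> snd (snd (snd D)) 0 h = 0)"
  proof
    fix k
    obtain Dr Dt Du Ds where "C11 Xc Xc (Rk k) Dr Lr mu \<and> C11 Xc Xc (Tk k) Dt Lt Nt \<and> C11 Xc Xu (Uk k) Du Lu mu \<and> C11 Xc Xs (Sk k) Ds Ls mu \<and>
       (\<forall>h\<in>Xc. Dr 0 h = 0 \<and> Dt 0 h = 0 \<and> Du 0 h = 0 \<and> Ds 0 h = 0)"
      using it_Good[of k] unfolding Good_def by blast
    then show "\<exists>D. C11 Xc Xc (Rk k) (fst D) Lr mu \<and> C11 Xc Xc (Tk k) (fst (snd D)) Lt Nt \<and>
      C11 Xc Xu (Uk k) (fst (snd (snd D))) Lu mu \<and> C11 Xc Xs (Sk k) (snd (snd (snd D))) Ls mu \<and>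
      (\<forall>h\<in>Xc. fst D 0 h = 0 \<and> fst (snd D) 0 h = 0 \<and> fst (snd (snd D)) 0 h = 0 \<and> snd (snd (snd D)) 0 h = 0)"
      by (intro exI[of _ "(Dr, Dt, Du, Ds)"]) simp
  qed
  then obtain D where D: "\<And>k. C11 Xc Xc (Rk k) (fst (D k)) Lr mu" "\<And>k. C11 Xc Xc (Tk k) (fst (snd (D k))) Lt Nt"
    "\<And>k. C11 Xc Xu (Uk k) (fst (snd (snd (D k)))) Lu mu" "\<And>k. C11 Xc Xs (Sk k) (snd (snd (snd (D k)))) Ls mu"
    "\<And>k h. h \<in> Xc \<Longrightarrow> fst (D k) 0 h = 0 \<and> fst (snd (D k)) 0 h = 0 \<and> fst (snd (snd (D k))) 0 h = 0 \<and> snd (snd (snd (D k))) 0 h = 0"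
    by (metis (no_types, lifting) choice)
  define DR where "DR k = fst (D k)" for k
  define DT where "DT k = fst (snd (D k))" for k
  define DU where "DU k = fst (snd (snd (D k)))" for k
  define DS where "DS k = snd (snd (snd (D k)))" for k
  have cR: "\<And>x h. x \<in> Xc \<Longrightarrow> h \<in> Xc \<Longrightarrow> (\<lambda>k. DR k x h) \<longlonglongrightarrow> lim (\<lambda>k. DR k x h)"
    using deriv_cauchy[OF subc D(1) mu_props(2) gR1] Cauchy_convergent convergent_LIMSEQ_iff
    unfolding DR_def by blast
  have cT: "\<And>x h. x \<in> Xc \<Longrightarrow> h \<in> Xc \<Longrightarrow> (\<lambda>k. DT k x h) \<longlonglongrightarrow> lim (\<lambda>k. DT k x h)"
    using deriv_cauchy[OF subc D(2) Nt0 gT1] Cauchy_convergent convergent_LIMSEQ_iff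
    unfolding DT_def by blast
  have cU: "\<And>x h. x \<in> Xc \<Longrightarrow> h \<in> Xc \<Longrightarrow> (\<lambda>k. DU k x h) \<longlonglongrightarrow> lim (\<lambda>k. DU k x h)"
    using deriv_cauchy[OF subc D(3) mu_props(2) gU1] Cauchy_convergent convergent_LIMSEQ_iff
    unfolding DU_def by blast
  have cS: "\<And>x h. x \<in> Xc \<Longrightarrow> h \<in> Xc \<Longrightarrow> (\<lambda>k. DS k x h) \<longlonglongrightarrow> lim (\<lambda>k. DS k x h)"
    using deriv_cauchy[OF subc D(4) mu_props(2) gS1] Cauchy_convergent convergent_LIMSEQ_iff
    unfolding DS_def by blast
  define Dr where "Dr x h = lim (\<lambda>k. DR k x h)" for x h
  define Dt where "Dt x h = lim (\<lambda>k. DT k x h)" for x h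
  define Du where "Du x h = lim (\<lambda>k. DU k x h)" for x h
  define Ds where "Ds x h = lim (\<lambda>k. DS k x h)" for x h
  have Cr: "C11 Xc Xc r Dr Lr mu"
    using C11_limit[OF subc clc D(1)[folded DR_def] gR2 cR] unfolding r_def[abs_def] Dr_def[abs_def] by blast
  have Ct: "C11 Xc Xc t Dt Lt Nt"
    using C11_limit[OF subc clc D(2)[folded DT_def] gT2 cT] unfolding t_def[abs_def] Dt_def[abs_def] by blast
  have Cu: "C11 Xc Xu u Du Lu mu"
    using C11_limit[OF subc clu D(3)[folded DU_def] gU2 cU] unfolding u_def[abs_def] Du_def[abs_def] by blast
  have Cs: "C11 Xc Xs s Ds Ls mu"
    using C11_limit[OF subc cls D(4)[folded DS_def] gS2 cS] unfolding s_def[abs_def] Ds_def[abs_def] by blast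
  have Gk: "\<And>k. Rk k 0 = 0 \<and> Tk k 0 = 0 \<and> Uk k 0 = 0 \<and> Sk k 0 = 0 \<and>
     (\<forall>x\<in>Xc. norm (Rk k x) \<le> Br \<and> norm (Tk k x) \<le> Bt \<and> norm (Uk k x) \<le> Bu \<and> norm (Sk k x) \<le> Bs)"
    using it_Good unfolding Good_def by blast
  have z: "r 0 = 0" "t 0 = 0" "u 0 = 0" "s 0 = 0"
    using LIMSEQ_unique[OF gR2[OF z_c]] LIMSEQ_unique[OF gT2[OF z_c]]
      LIMSEQ_unique[OF gU2[OF z_c]] LIMSEQ_unique[OF gS2[OF z_c]] Gk
    unfolding r_def t_def u_def s_def by simp_all
  have Dz: "\<forall>h\<in>Xc. Dr 0 h = 0 \<and> Dt 0 h = 0 \<and> Du 0 h = 0 \<and> Ds 0 h = 0"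
  proof
    fix h assume h: "h \<in> Xc"
    show "Dr 0 h = 0 \<and> Dt 0 h = 0 \<and> Du 0 h = 0 \<and> Ds 0 h = 0"
      using LIMSEQ_unique[OF cR[OF z_c h]] LIMSEQ_unique[OF cT[OF z_c h]]
        LIMSEQ_unique[OF cU[OF z_c h]] LIMSEQ_unique[OF cS[OF z_c h]] D(5)[OF h]
      unfolding Dr_def Dt_def Du_def Ds_def DR_def DT_def DU_def DS_def by simp_all
  qed
  have bd: "\<forall>x\<in>Xc. norm (r x) \<le> Br \<and> norm (t x) \<le> Bt \<and> norm (u x) \<le> Bu \<and> norm (s x) \<le> Bs"
  proof
    fix x assume x: "x \<in> Xc"
    show "norm (r x) \<le> Br \<and> norm (t x) \<le> Bt \<and> norm (u x) \<le> Bu \<and> norm (s x) \<le> Bs"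
      using lim_norm_le[OF gR2[OF x]] lim_norm_le[OF gT2[OF x]]
        lim_norm_le[OF gU2[OF x]] lim_norm_le[OF gS2[OF x]] Gk x
      unfolding r_def t_def u_def s_def by blast
  qed
  have Gd: "Good r t u s" unfolding Good_def using Cr Ct Cu Cs Dz z bd by blast
  define ck where "ck k = d0 * q^k / (1 - q)" for k
  have ck0: "0 \<le> ck k" for k unfolding ck_def using dd q by simp
  have ckl: "ck \<longlonglongrightarrow> 0"
  proof -
    have "(\<lambda>k. d0 * q^k / (1 - q)) \<longlonglongrightarrow> d0 * 0 / (1 - q)"
      by (intro tendsto_intros LIMSEQ_power_zero) (use q in auto)
    then show ?thesis unfolding ck_def[abs_def] by simp
  qed
  have dR: "norm (r x - Rk k x) \<le> ck k" "norm (t x - Tk k x) \<le> wt * ck k"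
    "norm (u x - Uk k x) \<le> ck k" "norm (s x - Sk k x) \<le> ck k" if x: "x \<in> Xc" for x k
    using gR3[OF x, of k] gT3[OF x, of k] gU3[OF x, of k] gS3[OF x, of k]
    unfolding r_def t_def u_def s_def ck_def by (simp_all add: algebra_simps)
  have clk: "close wt (ck k) r t u s (Rk k) (Tk k) (Uk k) (Sk k)" for k
    unfolding close_def using dR by blast
  have nx: "close wt (q * ck k) (stepR r u s) (stepT r t) (stepU r u s) (stepS t u s) (Rk (Suc k)) (Tk (Suc k)) (Uk (Suc k)) (Sk (Suc k))" for k
    using contract[OF Gd it_Good[of k] QW ck0 clk] unfolding it_Suc .
  have fp: "\<forall>x\<in>Xc. stepR r u s x = r x \<and> stepT r t x = t x \<and> stepU r u s x = u x \<and> stepS t u s x = s x"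
  proof (intro ballI conjI)
    fix x assume x: "x \<in> Xc"
    show "stepR r u s x = r x"
      by (rule limit_eq[where F="\<lambda>k. Rk k x" and q=q and c=ck]) (use nx x dR ckl in \<open>auto simp: close_def\<close>)
    show "stepU r u s x = u x"
      by (rule limit_eq[where F="\<lambda>k. Uk k x" and q=q and c=ck]) (use nx x dR ckl in \<open>auto simp: close_def\<close>)
    show "stepS t u s x = s x"
      by (rule limit_eq[where F="\<lambda>k. Sk k x" and q=q and c=ck]) (use nx x dR ckl in \<open>auto simp: close_def\<close>)
    have ckl': "(\<lambda>k. wt * ck k) \<longlonglongrightarrow> 0" using tendsto_mult_right_zero[OF ckl] by simp
    show "stepT r t x = t x"
      by (rule limit_eq[where F="\<lambda>k. Tk k x" and q=q and c="\<lambda>k. wt * ck k"])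
         (use nx x dR ckl' in \<open>auto simp: close_def algebra_simps\<close>)
  qed
  show ?thesis using Cr Ct Cu Cs Dz z bd fp by blast
qed

end

context cm_data begin

interpretation A: bounded_linear A by (rule A_lin)

lemma mkD_1: "mkD f Df 1 y [v] = Df y v" by (simp add: mkD_def)

lemma cm_result:
 "\<exists>r Dr ku Dku ks Dks t Dt.
    Ckb 1 Xc Xc r Dr \<and> Ckb 1 Xc Xu ku Dku \<and> Ckb 1 Xc Xs ks Dks \<and> Ckb 1 Xc Xc t Dt \<and>
    (\<forall>x\<in>Xc. A ((x + kc x) + ku x + ks x) + g ((x + kc x) + ku x + ks x) =
        ((A x + r x) + kc (A x + r x)) + ku (A x + r x) + ks (A x + r x)) \<and>
    bij_betw (\<lambda>x. A x + r x) Xc Xc \<and>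
    (\<forall>x\<in>Xc. A (Aci x + t x) + r (Aci x + t x) = x \<and> Aci (A x + r x) + t (A x + r x) = x) \<and>
    r 0 = 0 \<and> t 0 = 0 \<and> ku 0 = 0 \<and> ks 0 = 0 \<and>
    (\<forall>v\<in>Xc. Dr 1 0 [v] = 0 \<and> Dt 1 0 [v] = 0 \<and> Dku 1 0 [v] = 0 \<and> Dks 1 0 [v] = 0) \<and>
    (\<forall>y\<in>Xc. ml_bound Xc 1 (Dr 1 y) Lr \<and> ml_bound Xc 1 (Dt 1 y) Lt \<and>
             ml_bound Xc 1 (Dku 1 y) Lu \<and> ml_bound Xc 1 (Dks 1 y) Ls)"
proof -
  obtain r Dr t Dt u Du s Ds where Cr: "C11 Xc Xc r Dr Lr mu" and Ct: "C11 Xc Xc t Dt Lt Nt"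
    and Cu: "C11 Xc Xu u Du Lu mu" and Cs: "C11 Xc Xs s Ds Ls mu"
    and Dz: "\<forall>h\<in>Xc. Dr 0 h = 0 \<and> Dt 0 h = 0 \<and> Du 0 h = 0 \<and> Ds 0 h = 0"
    and z: "r 0 = 0" "t 0 = 0" "u 0 = 0" "s 0 = 0"
    and bd: "\<forall>x\<in>Xc. norm (r x) \<le> Br \<and> norm (t x) \<le> Bt \<and> norm (u x) \<le> Bu \<and> norm (s x) \<le> Bs"
    and fp: "\<forall>x\<in>Xc. stepR r u s x = r x \<and> stepT r t x = t x \<and> stepU r u s x = u x \<and> stepS t u s x = s x"
    using main_exists by blast
  have Ckr: "Ckb 1 Xc Xc r (mkD r Dr)" using C11_Ckb1[OF subc Cr mu_props(2) Lr_props(1)] bd by blast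
  have Ckt: "Ckb 1 Xc Xc t (mkD t Dt)" using C11_Ckb1[OF subc Ct Nt0 Lt_props(1)] bd by blast
  have Cku: "Ckb 1 Xc Xu u (mkD u Du)" using C11_Ckb1[OF subc Cu mu_props(2) Lu_props(1)] bd by blast
  have Cks: "Ckb 1 Xc Xs s (mkD s Ds)" using C11_Ckb1[OF subc Cs mu_props(2) Ls_props(1)] bd by blast
  have rin: "x \<in> Xc \<Longrightarrow> r x \<in> Xc" for x using C11D(1)[OF Cr] .
  have tin: "x \<in> Xc \<Longrightarrow> t x \<in> Xc" for x using C11D(1)[OF Ct] .
  have uin: "x \<in> Xc \<Longrightarrow> u x \<in> Xu" for x using C11D(1)[OF Cu] .
  have sin: "x \<in> Xc \<Longrightarrow> s x \<in> Xs" for x using C11D(1)[OF Cs] .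
  have yin: "x \<in> Xc \<Longrightarrow> A x + r x \<in> Xc" for x using A_c rin subc by (auto simp: subspace_add)
  have pin: "x \<in> Xc \<Longrightarrow> Aci x + t x \<in> Xc" for x using Aci_props tin subc by (auto simp: subspace_add)
  have rinv: "A (Aci x + t x) + r (Aci x + t x) = x" if x: "x \<in> Xc" for x
  proof -
    have tx: "t x = - Aci (r (Aci x + t x))" using fp x unfolding stepT_def by simp
    have "A (t x) = A (- Aci (r (Aci x + t x)))" using arg_cong[OF tx, of A] .
    also have "\<dots> = - A (Aci (r (Aci x + t x)))" by (rule A.neg)
    also have "\<dots> = - r (Aci x + t x)" using Aci_props(2) rin pin x by simp
    finally have "A (t x) = - r (Aci x + t x)" .
    then show ?thesis using Aci_props(2)[OF x] by (simp add: A.add)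
  qed
  have inj: "a = b" if a: "a \<in> Xc" and b: "b \<in> Xc" and e: "A a + r a = A b + r b" for a b
  proof -
    have ab: "a - b \<in> Xc" using a b subc by (simp add: subspace_diff)
    have "A (a - b) = r b - r a" using e by (simp add: A.diff algebra_simps)
    then have "a - b = Aci (r b - r a)" using Aci_props(3)[OF ab] by simp
    moreover have "r b - r a \<in> Xc" using rin a b subc by (simp add: subspace_diff)
    ultimately have "norm (a - b) \<le> aci * norm (r b - r a)" using Aci_bound(1) by simp
    also have "\<dots> \<le> aci * (Lr * norm (a - b))"
      using C11D(5)[OF Cr a b] consts_basic by (simp add: mult_left_mono norm_minus_commute)
    finally have "norm (a - b) \<le> (aci * Lr) * norm (a - b)" by (simp add: mult.assoc)
    moreover have "aci * Lr < 1" using SN_facts(2) by (simp add: mult.commute)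
    ultimately have "norm (a - b) \<le> 0"
      by (metis mult_le_cancel_right1 norm_ge_zero not_le order_le_less_trans)
    then show ?thesis by simp
  qed
  have linv: "Aci (A x + r x) + t (A x + r x) = x" if x: "x \<in> Xc" for x
    using inj[OF pin[OF yin[OF x]] x rinv[OF yin[OF x]]] .
  have bij: "bij_betw (\<lambda>x. A x + r x) Xc Xc"
    unfolding bij_betw_def
  proof
    show "inj_on (\<lambda>x. A x + r x) Xc" using inj by (auto simp: inj_on_def)
    show "(\<lambda>x. A x + r x) ` Xc = Xc"
    proof
      show "(\<lambda>x. A x + r x) ` Xc \<subseteq> Xc" using yin by auto
      show "Xc \<subseteq> (\<lambda>x. A x + r x) ` Xc"
      proof
        fix x assume x: "x \<in> Xc"
        show "x \<in> (\<lambda>x. A x + r x) ` Xc" by (rule image_eqI[where f="\<lambda>x. A x + r x", OF rinv[OF x, symmetric] pin[OF x]])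
      qed
    qed
  qed
  have conj: "A ((x + kc x) + u x + s x) + g ((x + kc x) + u x + s x) =
        ((A x + r x) + kc (A x + r x)) + u (A x + r x) + s (A x + r x)" if x: "x \<in> Xc" for x
  proof -
    define y where "y = A x + r x"
    define gk where "gk = g (Kf u s x)"
    have K: "Kf u s x = (x + kc x) + u x + s x" by (simp add: Kf_def)
    have fr: "r x = A (kc x) + pc gk - kc y" using fp x unfolding stepR_def gk_def y_def by simp
    have fu: "u x = Aui (u y - pu gk)" using fp x unfolding stepU_def gk_def y_def by simp
    have uy: "u y - pu gk \<in> Xu" using uin[OF yin[OF x]] pu_in subu unfolding y_def by (simp add: subspace_diff)
    have Au: "A (u x) = u y - pu gk" using fu Aui_props(2)[OF uy] by simp
    have py: "Aci y + t y = x" using linv[OF x] unfolding y_def .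
    have "stepS t u s y = s y" using fp yin[OF x] unfolding y_def by blast
    then have fs: "s y = A (s x) + ps gk" unfolding stepS_def py gk_def by simp
    have "A ((x + kc x) + u x + s x) + g ((x + kc x) + u x + s x)
        = A x + A (kc x) + A (u x) + A (s x) + (pc gk + pu gk + ps gk)"
      unfolding p_sum gk_def K by (simp add: A.add)
    also have "\<dots> = A x + A (kc x) + (u y - pu gk) + A (s x) + (pc gk + pu gk + ps gk)" by (simp only: Au)
    also have "\<dots> = (A x + A (kc x) + pc gk) + u y + (A (s x) + ps gk)" by (simp add: algebra_simps)
    also have "\<dots> = (y + kc y) + u y + s y"
    proof -
      have "r x + kc y = A (kc x) + pc gk" using fr by simp
      then have yk: "y + kc y = A x + A (kc x) + pc gk" unfolding y_def by (simp add: algebra_simps)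
      show ?thesis by (simp only: yk fs)
    qed
    finally show ?thesis unfolding y_def .
  qed
  show ?thesis
  proof (intro exI conjI)
    show "Ckb 1 Xc Xc r (mkD r Dr)" "Ckb 1 Xc Xu u (mkD u Du)" "Ckb 1 Xc Xs s (mkD s Ds)" "Ckb 1 Xc Xc t (mkD t Dt)"
      by fact+
    show "\<forall>x\<in>Xc. A ((x + kc x) + u x + s x) + g ((x + kc x) + u x + s x) =
        ((A x + r x) + kc (A x + r x)) + u (A x + r x) + s (A x + r x)" using conj by blast
    show "bij_betw (\<lambda>x. A x + r x) Xc Xc" by fact
    show "\<forall>x\<in>Xc. A (Aci x + t x) + r (Aci x + t x) = x \<and> Aci (A x + r x) + t (A x + r x) = x"
      using rinv linv by blast
    show "r 0 = 0" "t 0 = 0" "u 0 = 0" "s 0 = 0" by fact+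
    show "\<forall>v\<in>Xc. mkD r Dr 1 0 [v] = 0 \<and> mkD t Dt 1 0 [v] = 0 \<and> mkD u Du 1 0 [v] = 0 \<and> mkD s Ds 1 0 [v] = 0"
      using Dz by (simp add: mkD_def)
    show "\<forall>y\<in>Xc. ml_bound Xc 1 (mkD r Dr 1 y) Lr \<and> ml_bound Xc 1 (mkD t Dt 1 y) Lt \<and>
             ml_bound Xc 1 (mkD u Du 1 y) Lu \<and> ml_bound Xc 1 (mkD s Ds 1 y) Ls"
      using C11D(4)[OF Cr] C11D(4)[OF Ct] C11D(4)[OF Cu] C11D(4)[OF Cs] by (simp add: ml_bound_1 mkD_def)
  qed
qed

end

theorem corollary3p10:
  fixes A :: "'a::banach \<Rightarrow> 'a" and Xc Xu Xs :: "'a set"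
    and n :: nat and Lg Lc :: real
  assumes n2: "n \<ge> 2"
    and sub: "subspace Xc" "subspace Xu" "subspace Xs"
    and cl: "closed Xc" "closed Xu" "closed Xs"
    and dsum: "\<forall>x. \<exists>!(c, u, s). c \<in> Xc \<and> u \<in> Xu \<and> s \<in> Xs \<and> x = c + u + s"
    and maxnorm: "\<forall>c\<in>Xc. \<forall>u\<in>Xu. \<forall>s\<in>Xs. norm (c + u + s) = max (norm c) (max (norm u) (norm s))"
    and A_lin: "bounded_linear A"
    and A_inv: "A ` Xc \<subseteq> Xc" "A ` Xu \<subseteq> Xu" "A ` Xs \<subseteq> Xs"
    and Ac_bij: "bij_betw A Xc Xc" and Au_bij: "bij_betw A Xu Xu"
    and spec: "\<forall>m. 1 \<le> m \<and> m \<le> n \<longrightarrow>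
                  (onorm_on Xc (inv_into Xc A))^m * onorm_on Xs A < 1 \<and>
                  onorm_on Xu (inv_into Xu A) * (onorm_on Xc A)^m < 1"
    and L_nonneg: "0 \<le> Lg" "0 \<le> Lc"
    and SN: "SN_cond n (onorm_on Xc A) (onorm_on Xc (inv_into Xc A))
               (onorm_on Xu (inv_into Xu A)) (onorm_on Xs A) Lg Lc"
  shows "\<exists>\<epsilon>0>0. \<forall>\<epsilon> g Dg kc Dkc.
     0 < \<epsilon> \<and> \<epsilon> < \<epsilon>0 \<and>
     Ckb n UNIV UNIV g Dg \<and> g 0 = 0 \<and> (\<forall>v. Dg 1 0 [v] = 0) \<and>
     (\<forall>y. ml_bound UNIV 1 (Dg 1 y) Lg) \<and>
     Ckb n Xc Xc kc Dkc \<and> kc 0 = 0 \<and> (\<forall>v\<in>Xc. Dkc 1 0 [v] = 0) \<and>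
     (\<forall>y\<in>Xc. ml_bound Xc 1 (Dkc 1 y) Lc) \<and>
     (\<forall>y. ml_bound UNIV 2 (Dg 2 y) \<epsilon>) \<and> (\<forall>y\<in>Xc. ml_bound Xc 2 (Dkc 2 y) \<epsilon>)
     \<longrightarrow>
     (let F = (\<lambda>x. A x + g x);
          Aci = inv_into Xc A;
          Lr = cLr (onorm_on Xc A) Lg Lc;
          Lt = cLt (onorm_on Xc (inv_into Xc A)) Lr;
          Lu = cLu (onorm_on Xc A) (onorm_on Xu (inv_into Xu A)) Lr Lg Lc;
          Ls = cLs (onorm_on Xc (inv_into Xc A)) (onorm_on Xs A) Lr Lg Lc
      in \<exists>r Dr ku Dku ks Dks t Dt.
        Ckb 1 Xc Xc r Dr \<and> Ckb 1 Xc Xu ku Dku \<and> Ckb 1 Xc Xs ks Dks \<and> Ckb 1 Xc Xc t Dt \<and>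
        (let K = (\<lambda>x. (x + kc x) + ku x + ks x) in
          (\<forall>x\<in>Xc. F (K x) = K (A x + r x)) \<and>
          bij_betw (\<lambda>x. A x + r x) Xc Xc \<and>
          (\<forall>x\<in>Xc. A (Aci x + t x) + r (Aci x + t x) = x \<and>
                   Aci (A x + r x) + t (A x + r x) = x) \<and>
          r 0 = 0 \<and> t 0 = 0 \<and> ku 0 = 0 \<and> ks 0 = 0 \<and>
          (\<forall>v\<in>Xc. Dr 1 0 [v] = 0 \<and> Dt 1 0 [v] = 0 \<and> Dku 1 0 [v] = 0 \<and> Dks 1 0 [v] = 0) \<and>
          (\<forall>y\<in>Xc. ml_bound Xc 1 (Dr 1 y) Lr \<and> ml_bound Xc 1 (Dt 1 y) Lt \<and>
                   ml_bound Xc 1 (Dku 1 y) Lu \<and> ml_bound Xc 1 (Dks 1 y) Ls) \<and>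
          F ` (K ` Xc) \<subseteq> K ` Xc))"
proof -
  interpret S: cm_setting A Xc Xu Xs n Lg Lc
    by (rule cm_setting.intro[OF n2 sub cl dsum maxnorm A_lin A_inv Ac_bij Au_bij L_nonneg SN])
  show ?thesis
  proof (intro exI[of _ "1::real"] conjI allI impI)
    show "(0::real) < 1" by simp
    fix \<epsilon> :: real and g kc :: "'a \<Rightarrow> 'a" and Dg Dkc :: "nat \<Rightarrow> 'a \<Rightarrow> 'a list \<Rightarrow> 'a"
    assume H: "0 < \<epsilon> \<and> \<epsilon> < 1 \<and>
     Ckb n UNIV UNIV g Dg \<and> g 0 = 0 \<and> (\<forall>v. Dg 1 0 [v] = 0) \<and>
     (\<forall>y. ml_bound UNIV 1 (Dg 1 y) Lg) \<and>
     Ckb n Xc Xc kc Dkc \<and> kc 0 = 0 \<and> (\<forall>v\<in>Xc. Dkc 1 0 [v] = 0) \<and>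
     (\<forall>y\<in>Xc. ml_bound Xc 1 (Dkc 1 y) Lc) \<and>
     (\<forall>y. ml_bound UNIV 2 (Dg 2 y) \<epsilon>) \<and> (\<forall>y\<in>Xc. ml_bound Xc 2 (Dkc 2 y) \<epsilon>)"
    have H1: "0 < \<epsilon>" "Ckb n UNIV UNIV g Dg" "g 0 = 0" "\<forall>v. Dg 1 0 [v] = 0"
      "\<forall>y. ml_bound UNIV 1 (Dg 1 y) Lg" "Ckb n Xc Xc kc Dkc" "kc 0 = 0" "\<forall>v\<in>Xc. Dkc 1 0 [v] = 0"
      "\<forall>y\<in>Xc. ml_bound Xc 1 (Dkc 1 y) Lc" "\<forall>y. ml_bound UNIV 2 (Dg 2 y) \<epsilon>" "\<forall>y\<in>Xc. ml_bound Xc 2 (Dkc 2 y) \<epsilon>"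
      using H by auto
    have e0: "0 \<le> \<epsilon>" using H1(1) by simp
    have gC: "C11 UNIV UNIV g (\<lambda>y h. Dg 1 y [h]) Lg \<epsilon>"
      by (rule Ckb2_to_C11[where P="\<lambda>x. x", OF subspace_UNIV bounded_linear_ident _ _ _ H1(2) n2 _ _ e0 L_nonneg(1)])
         (use H1 in auto)
    have kC: "C11 Xc Xc kc (\<lambda>y h. Dkc 1 y [h]) Lc \<epsilon>"
      by (rule Ckb2_to_C11[where P=S.pc, OF S.subc S.pc_bl S.pc_in S.pc_id S.norm_pc H1(6) n2 _ _ e0 L_nonneg(2)])
         (use H1 in auto)
    obtain Bg where Bg: "\<forall>y\<in>UNIV. norm (g y) \<le> Bg" using Ckb_bound0[OF H1(2)] by blast
    obtain Bk where Bk: "\<forall>y\<in>Xc. norm (kc y) \<le> Bk" using Ckb_bound0[OF H1(6)] by blast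
    interpret D: cm_data A Xc Xu Xs n Lg Lc g "\<lambda>y h. Dg 1 y [h]" kc "\<lambda>y h. Dkc 1 y [h]" \<epsilon> \<epsilon> Bg Bk
      by (rule cm_data.intro[OF S.cm_setting_axioms], rule cm_data_axioms.intro)
         (use gC kC H1 Bg Bk e0 in simp_all)
    obtain r Dr ku Dku ks Dks t Dt where R:
      "Ckb 1 Xc Xc r Dr" "Ckb 1 Xc Xu ku Dku" "Ckb 1 Xc Xs ks Dks" "Ckb 1 Xc Xc t Dt"
      "\<forall>x\<in>Xc. A ((x + kc x) + ku x + ks x) + g ((x + kc x) + ku x + ks x) =
        ((A x + r x) + kc (A x + r x)) + ku (A x + r x) + ks (A x + r x)"
      "bij_betw (\<lambda>x. A x + r x) Xc Xc"
      "\<forall>x\<in>Xc. A (inv_into Xc A x + t x) + r (inv_into Xc A x + t x) = x \<and> inv_into Xc A (A x + r x) + t (A x + r x) = x"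
      "r 0 = 0" "t 0 = 0" "ku 0 = 0" "ks 0 = 0"
      "\<forall>v\<in>Xc. Dr 1 0 [v] = 0 \<and> Dt 1 0 [v] = 0 \<and> Dku 1 0 [v] = 0 \<and> Dks 1 0 [v] = 0"
      "\<forall>y\<in>Xc. ml_bound Xc 1 (Dr 1 y) (cLr (onorm_on Xc A) Lg Lc) \<and>
         ml_bound Xc 1 (Dt 1 y) (cLt (onorm_on Xc (inv_into Xc A)) (cLr (onorm_on Xc A) Lg Lc)) \<and>
         ml_bound Xc 1 (Dku 1 y) (cLu (onorm_on Xc A) (onorm_on Xu (inv_into Xu A)) (cLr (onorm_on Xc A) Lg Lc) Lg Lc) \<and>
         ml_bound Xc 1 (Dks 1 y) (cLs (onorm_on Xc (inv_into Xc A)) (onorm_on Xs A) (cLr (onorm_on Xc A) Lg Lc) Lg Lc)"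
      using D.cm_result unfolding S.Lr_def S.Lt_def S.Lu_def S.Ls_def S.ac_def S.aci_def S.aui_def S.asn_def S.Aci_def S.Aui_def
      by blast
    show "let F = (\<lambda>x. A x + g x);
          Aci = inv_into Xc A;
          Lr = cLr (onorm_on Xc A) Lg Lc;
          Lt = cLt (onorm_on Xc (inv_into Xc A)) Lr;
          Lu = cLu (onorm_on Xc A) (onorm_on Xu (inv_into Xu A)) Lr Lg Lc;
          Ls = cLs (onorm_on Xc (inv_into Xc A)) (onorm_on Xs A) Lr Lg Lc
      in \<exists>r Dr ku Dku ks Dks t Dt.
        Ckb 1 Xc Xc r Dr \<and> Ckb 1 Xc Xu ku Dku \<and> Ckb 1 Xc Xs ks Dks \<and> Ckb 1 Xc Xc t Dt \<and>
        (let K = (\<lambda>x. (x + kc x) + ku x + ks x) in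
          (\<forall>x\<in>Xc. F (K x) = K (A x + r x)) \<and>
          bij_betw (\<lambda>x. A x + r x) Xc Xc \<and>
          (\<forall>x\<in>Xc. A (Aci x + t x) + r (Aci x + t x) = x \<and>
                   Aci (A x + r x) + t (A x + r x) = x) \<and>
          r 0 = 0 \<and> t 0 = 0 \<and> ku 0 = 0 \<and> ks 0 = 0 \<and>
          (\<forall>v\<in>Xc. Dr 1 0 [v] = 0 \<and> Dt 1 0 [v] = 0 \<and> Dku 1 0 [v] = 0 \<and> Dks 1 0 [v] = 0) \<and>
          (\<forall>y\<in>Xc. ml_bound Xc 1 (Dr 1 y) Lr \<and> ml_bound Xc 1 (Dt 1 y) Lt \<and>
                   ml_bound Xc 1 (Dku 1 y) Lu \<and> ml_bound Xc 1 (Dks 1 y) Ls) \<and>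
          F ` (K ` Xc) \<subseteq> K ` Xc)"
      unfolding Let_def
    proof (intro exI conjI)
      show "Ckb 1 Xc Xc r Dr" "Ckb 1 Xc Xu ku Dku" "Ckb 1 Xc Xs ks Dks" "Ckb 1 Xc Xc t Dt" by (fact R)+
      show "\<forall>x\<in>Xc. A (x + kc x + ku x + ks x) + g (x + kc x + ku x + ks x) =
          A x + r x + kc (A x + r x) + ku (A x + r x) + ks (A x + r x)" using R(5) by simp
      show "bij_betw (\<lambda>x. A x + r x) Xc Xc" by (fact R)
      show "\<forall>x\<in>Xc. A (inv_into Xc A x + t x) + r (inv_into Xc A x + t x) = x \<and> inv_into Xc A (A x + r x) + t (A x + r x) = x"
        by (fact R)
      show "r 0 = 0" "t 0 = 0" "ku 0 = 0" "ks 0 = 0" by (fact R)+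
      show "\<forall>v\<in>Xc. Dr 1 0 [v] = 0 \<and> Dt 1 0 [v] = 0 \<and> Dku 1 0 [v] = 0 \<and> Dks 1 0 [v] = 0" by (fact R)
      show "\<forall>y\<in>Xc. ml_bound Xc 1 (Dr 1 y) (cLr (onorm_on Xc A) Lg Lc) \<and>
         ml_bound Xc 1 (Dt 1 y) (cLt (onorm_on Xc (inv_into Xc A)) (cLr (onorm_on Xc A) Lg Lc)) \<and>
         ml_bound Xc 1 (Dku 1 y) (cLu (onorm_on Xc A) (onorm_on Xu (inv_into Xu A)) (cLr (onorm_on Xc A) Lg Lc) Lg Lc) \<and>
         ml_bound Xc 1 (Dks 1 y) (cLs (onorm_on Xc (inv_into Xc A)) (onorm_on Xs A) (cLr (onorm_on Xc A) Lg Lc) Lg Lc)"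
        by (fact R)
      show "(\<lambda>x. A x + g x) ` (\<lambda>x. x + kc x + ku x + ks x) ` Xc \<subseteq> (\<lambda>x. x + kc x + ku x + ks x) ` Xc"
      proof
        fix z assume "z \<in> (\<lambda>x. A x + g x) ` (\<lambda>x. x + kc x + ku x + ks x) ` Xc"
        then obtain x where x: "x \<in> Xc" and z: "z = A (x + kc x + ku x + ks x) + g (x + kc x + ku x + ks x)" by auto
        have "z = (A x + r x) + kc (A x + r x) + ku (A x + r x) + ks (A x + r x)" using R(5) x z by simp
        moreover have "A x + r x \<in> Xc" using R(6) x by (auto simp: bij_betw_def)
        ultimately show "z \<in> (\<lambda>x. x + kc x + ku x + ks x) ` Xc" by blast
      qed
    qed
  qed
qed

end
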